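(* Let $n\in\mathbb{N}$ and $m\in\mathbb{N}$. Then the linear map \[\begin{pmatrix}\iota_{m,1}&V_m\end{pmatrix}:E_{m+1}\oplus E_{m-1}\to E_m\otimes E_1,\qquad(\xi,\eta)\mapsto\iota_{m,1}\xi+V_m\eta,\] is an $SU(2)$-equivariant unitary isomorphism.
   Context: Fix $n\in\mathbb{N}$. Let $f_0,f_1$ be the standard basis of $\mathbb{C}^2$, $L_n\subseteq(\mathbb{C}^2)^{\otimes n}$ the symmetric tensors with projection $p_n$, $\rho_n$ the restriction to $L_n$ of the $n$-fold tensor power of the fundamental representation of $SU(2)$, $e_k=\sqrt{n!/(k!(n-k)!)}\,p_n(f_0^{\otimes k}\otimes f_1^{\otimes(n-k)})$ ($k=0,\dots,n$), and $\delta=(n+1)^{-1/2}\sum_{k=0}^n(-1)^ke_k\otimes e_{n-k}$, which spans the $\rho_n\otimes\rho_n$-invariant vectors in $L_n\otimes L_n$. For $m\ge2$, $E_m=\big(\sum_{i=1}^{m-1}L_n^{\otimes(i-1)}\otimes\mathbb{C}\delta\otimes L_n^{\otimes(m-i-1)}\big)^\perp\subseteq L_n^{\otimes m}$, $E_1=L_n$, $E_0=\mathbb{C}$, with $SU(2)$ acting by $\rho_n^{\otimes m}$; $\iota_{k,m}:E_{k+m}\to E_k\otimes E_m$ are the inclusions induced by $L_n^{\otimes(k+m)}=L_n^{\otimes k}\otimes L_n^{\otimes m}$ (with $E_0\otimes E_m=E_m=E_m\otimes E_0$). Let $d_0=1,d_1=n+1,d_m=d_1d_{m-1}-d_{m-2}$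 and $\mu_m=d_md_{m-1}/d_1$. Define $G_m:E_{m-1}\to L_n^{\otimes(m+1)}$ recursively by $G_1(1)=\delta$ and $G_m(\xi)=(G_{m-1}\otimes1)(\iota_{m-2,1}\xi)+(-1)^{(n+1)(m-1)}d_{m-1}\,\xi\otimes\delta$ for $m\ge2$; it is known that $G_m$ takes values in $E_m\otimes E_1$. Set $V_m=(-1)^{(n+1)(m-1)}\mu_m^{-1/2}G_m:E_{m-1}\to E_m\otimes E_1$. *)

theory Defs
  imports "HOL-Analysis.Analysis"
begin

text \<open>
The ambient space (C^2)^{\<otimes>N} is represented by coefficient
functions v :: nat list \<Rightarrow> complex, w.r.t. the basis f_{w_1} \<otimes> ... \<otimes> f_{w_N},
where the word w has length N and letters in {0,1}; v vanishes off such words.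
The tensor product of v (N = a) and u is concatenation of words.
L_n^{\<otimes>m} \<subseteq> (C^2)^{\<otimes>nm} (first tensor factor = first n letters, etc.).
SU(2) acts on (C^2)^{\<otimes>N} by g^{\<otimes>N}; \<rho>_n^{\<otimes>m} is its restriction.
\<close>

type_synonym tvec = "nat list \<Rightarrow> complex"

definition qwords :: "nat \<Rightarrow> nat list set" where
  "qwords N = {w. length w = N \<and> set w \<subseteq> {0,1}}"

definition qspace :: "nat \<Rightarrow> tvec set" where
  "qspace N = {v. \<forall>w. w \<notin> qwords N \<longrightarrow> v w = 0}"

definition qinner :: "nat \<Rightarrow> tvec \<Rightarrow> tvec \<Rightarrow> complex" where
  "qinner N v u = (\<Sum>w\<in>qwords N. cnj (v w) * u w)"

definition qtprod :: "nat \<Rightarrow> tvec \<Rightarrow> tvec \<Rightarrow> tvec" where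
  "qtprod a v u = (\<lambda>w. v (take a w) * u (drop a w))"

definition qspan :: "tvec set \<Rightarrow> tvec set" where
  "qspan S = {v. \<exists>F c. finite F \<and> F \<subseteq> S \<and> v = (\<lambda>w. \<Sum>u\<in>F. c u * u w)}"

definition qtens :: "nat \<Rightarrow> tvec set \<Rightarrow> tvec set \<Rightarrow> tvec set" where
  "qtens a A B = qspan {qtprod a x y | x y. x \<in> A \<and> y \<in> B}"

text \<open>Basis vector f_w, and the unit 1 \<in> C = (C^2)^{\<otimes>0}.\<close>
definition qbasis :: "nat list \<Rightarrow> tvec" where
  "qbasis u = (\<lambda>w. if w = u then 1 else 0)"

definition qunit :: tvec where
  "qunit = qbasis []"

definition SU2 :: "(nat \<Rightarrow> nat \<Rightarrow> complex) set" where
  "SU2 = {g. (\<forall>i\<in>{0,1}. \<forall>j\<in>{0,1}. (\<Sum>k\<in>{0,1}. cnj (g k i) * g k j) = (if i = j then 1 else 0))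
             \<and> g 0 0 * g 1 1 - g 0 1 * g 1 0 = 1}"

text \<open>g^{\<otimes>N} acting on (C^2)^{\<otimes>N}, where g f_j = \<Sum>_i g i j f_i.\<close>
definition qact :: "nat \<Rightarrow> (nat \<Rightarrow> nat \<Rightarrow> complex) \<Rightarrow> tvec \<Rightarrow> tvec" where
  "qact N g v = (\<lambda>w. if w \<in> qwords N
      then (\<Sum>u\<in>qwords N. (\<Prod>i<N. g (w ! i) (u ! i)) * v u) else 0)"

definition qperm_word :: "(nat \<Rightarrow> nat) \<Rightarrow> nat list \<Rightarrow> nat list" where
  "qperm_word \<sigma> w = map (\<lambda>i. w ! \<sigma> i) [0..<length w]"

definition qL :: "nat \<Rightarrow> tvec set" where
  "qL n = {v \<in> qspace n. \<forall>\<sigma>. \<sigma> permutes {..<n} \<longrightarrow> (\<forall>w. v (qperm_word \<sigma> w) = v w)}"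

definition qp :: "nat \<Rightarrow> tvec \<Rightarrow> tvec" where
  "qp n v = (\<lambda>w. if w \<in> qwords n
      then (\<Sum>\<sigma>\<in>{\<sigma>. \<sigma> permutes {..<n}}. v (qperm_word \<sigma> w)) / of_nat (fact n) else 0)"

definition qe :: "nat \<Rightarrow> nat \<Rightarrow> tvec" where
  "qe n k = (\<lambda>w. complex_of_real (sqrt (fact n / (fact k * fact (n - k))))
              * qp n (qbasis (replicate k 0 @ replicate (n - k) 1)) w)"

definition qdelta :: "nat \<Rightarrow> tvec" where
  "qdelta n = (\<lambda>w. complex_of_real (1 / sqrt (real (n + 1)))
               * (\<Sum>k\<le>n. (-1) ^ k * qtprod n (qe n k) (qe n (n - k)) w))"

fun qLpow :: "nat \<Rightarrow> nat \<Rightarrow> tvec set" where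
  "qLpow n 0 = qspan {qunit}"
| "qLpow n (Suc m) = qtens (n * m) (qLpow n m) (qL n)"

definition qDsum :: "nat \<Rightarrow> nat \<Rightarrow> tvec set" where
  "qDsum n m = qspan (\<Union>i\<in>{1..m-1}.
      qtens (n * (i + 1))
        (qtens (n * (i - 1)) (qLpow n (i - 1)) {(\<lambda>w. c * qdelta n w) | c. True})
        (qLpow n (m - i - 1)))"

definition qE :: "nat \<Rightarrow> nat \<Rightarrow> tvec set" where
  "qE n m = (if m = 0 then qspan {qunit} else if m = 1 then qL n
     else {v \<in> qLpow n m. \<forall>u\<in>qDsum n m. qinner (n * m) u v = 0})"

fun qd :: "nat \<Rightarrow> nat \<Rightarrow> int" where
  "qd n 0 = 1"
| "qd n (Suc 0) = int n + 1"
| "qd n (Suc (Suc k)) = (int n + 1) * qd n (Suc k) - qd n k"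

definition qmu :: "nat \<Rightarrow> nat \<Rightarrow> real" where
  "qmu n m = real_of_int (qd n m * qd n (m - 1)) / real_of_int (qd n 1)"

text \<open>A \<otimes> 1 for a linear map A : (C^2)^{\<otimes>a} \<rightarrow> (C^2)^{\<otimes>b}, acting on
  (C^2)^{\<otimes>a} \<otimes> (C^2)^{\<otimes>n} (slice-wise in the last n letters).\<close>
definition qmap_tens_id :: "nat \<Rightarrow> (tvec \<Rightarrow> tvec) \<Rightarrow> tvec \<Rightarrow> tvec" where
  "qmap_tens_id b A v = (\<lambda>w. A (\<lambda>x. v (x @ drop b w)) (take b w))"

text \<open>G_m : E_{m-1} \<rightarrow> L_n^{\<otimes>(m+1)} (given by its formula, which is linear).\<close>
fun qG :: "nat \<Rightarrow> nat \<Rightarrow> tvec \<Rightarrow> tvec" where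
  "qG n 0 = (\<lambda>\<xi>. (\<lambda>w. 0))"
| "qG n (Suc 0) = (\<lambda>\<xi>. qtprod 0 \<xi> (qdelta n))"
| "qG n (Suc (Suc k)) = (\<lambda>\<xi>. (\<lambda>w.
      qmap_tens_id (n * (Suc k + 1)) (qG n (Suc k)) \<xi> w
      + (-1) ^ ((n + 1) * Suc k) * of_int (qd n (Suc k)) * qtprod (n * Suc k) \<xi> (qdelta n) w))"

definition qV :: "nat \<Rightarrow> nat \<Rightarrow> tvec \<Rightarrow> tvec" where
  "qV n m \<eta> = (\<lambda>w. (-1) ^ ((n + 1) * (m - 1)) * complex_of_real (1 / sqrt (qmu n m)) * qG n m \<eta> w)"

definition qPhi :: "nat \<Rightarrow> nat \<Rightarrow> tvec \<times> tvec \<Rightarrow> tvec" where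
  "qPhi n m p = (\<lambda>w. fst p w + qV n m (snd p) w)"

end

theory Submission
  imports Defs
begin

lemma qperm_word_eq: "qperm_word = permute_list"
  by (auto simp: fun_eq_iff qperm_word_def permute_list_def)

lemma qwords_finite[simp]: "finite (qwords N)"
proof -
  have "qwords N = {xs. set xs \<subseteq> {0,1} \<and> length xs = N}" by (auto simp: qwords_def)
  then show ?thesis using finite_lists_length_eq[of "{0,1::nat}" N] by simp
qed

lemma qwords_length: "w \<in> qwords N \<Longrightarrow> length w = N"
  by (simp add: qwords_def)

lemma qwords_appendI: "x \<in> qwords a \<Longrightarrow> y \<in> qwords b \<Longrightarrow> x @ y \<in> qwords (a+b)"
  by (auto simp: qwords_def)

lemma qwords_append_iff: "length x = a \<Longrightarrow> x @ y \<in> qwords (a+b) \<longleftrightarrow> x \<in> qwords a \<and> y \<in> qwords b"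
  by (auto simp: qwords_def)

lemma qwords_append_iff2: "x @ y \<in> qwords N \<longleftrightarrow> x \<in> qwords (length x) \<and> y \<in> qwords (N - length x) \<and> length x \<le> N"
  by (auto simp: qwords_def)

lemma qwords_take: "w \<in> qwords N \<Longrightarrow> a \<le> N \<Longrightarrow> take a w \<in> qwords a"
  by (auto simp: qwords_def dest: in_set_takeD)

lemma qwords_drop: "w \<in> qwords N \<Longrightarrow> drop a w \<in> qwords (N - a)"
  by (auto simp: qwords_def dest: in_set_dropD)

lemma qwords_split: "qwords (a+b) = (\<lambda>(x,y). x@y) ` (qwords a \<times> qwords b)"
proof
  show "qwords (a + b) \<subseteq> (\<lambda>(x, y). x @ y) ` (qwords a \<times> qwords b)"
  proof
    fix w assume w: "w \<in> qwords (a+b)"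
    have "take a w \<in> qwords a" using w by (rule qwords_take) simp
    moreover have "drop a w \<in> qwords b" using qwords_drop[OF w, of a] by simp
    ultimately have "(take a w, drop a w) \<in> qwords a \<times> qwords b" by simp
    then show "w \<in> (\<lambda>(x, y). x @ y) ` (qwords a \<times> qwords b)"
      by (rule rev_image_eqI) simp
  qed
next
  show "(\<lambda>(x, y). x @ y) ` (qwords a \<times> qwords b) \<subseteq> qwords (a + b)"
    by (auto intro!: qwords_appendI)
qed

lemma sum_qwords_add: "(\<Sum>w\<in>qwords (a+b). f w) = (\<Sum>x\<in>qwords a. \<Sum>y\<in>qwords b. f (x@y))"
proof -
  have inj: "inj_on (\<lambda>(x,y). x@y) (qwords a \<times> qwords b)"
  proof (rule inj_onI)
    fix p q assume "p \<in> qwords a \<times> qwords b" "q \<in> qwords a \<times> qwords b"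
      "(case p of (x, y) \<Rightarrow> x @ y) = (case q of (x, y) \<Rightarrow> x @ y)"
    then show "p = q" by (cases p, cases q) (auto simp: qwords_length)
  qed
  have "(\<Sum>w\<in>qwords (a+b). f w) = (\<Sum>p\<in>qwords a \<times> qwords b. f (fst p @ snd p))"
    unfolding qwords_split by (subst sum.reindex[OF inj]) (simp add: case_prod_beta)
  also have "\<dots> = (\<Sum>x\<in>qwords a. \<Sum>y\<in>qwords b. f (x@y))"
    by (simp add: sum.cartesian_product split_def)
  finally show ?thesis .
qed

lemma sum_qwords_add': "N = a + b \<Longrightarrow> (\<Sum>w\<in>qwords N. f w) = (\<Sum>x\<in>qwords a. \<Sum>y\<in>qwords b. f (x@y))"
  using sum_qwords_add by simp

lemma qwords_0: "qwords 0 = {[]}"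
  by (auto simp: qwords_def)

lemma qwords_Suc: "qwords (Suc N) = (\<lambda>(a,u). a#u) ` ({0,1} \<times> qwords N)"
  by (auto simp: qwords_def image_iff length_Suc_conv)

lemma qspaceD: "v \<in> qspace N \<Longrightarrow> w \<notin> qwords N \<Longrightarrow> v w = 0"
  by (simp add: qspace_def)

lemma qspaceI: "(\<And>w. w \<notin> qwords N \<Longrightarrow> v w = 0) \<Longrightarrow> v \<in> qspace N"
  by (simp add: qspace_def)

lemma qspace_eqI: "u \<in> qspace N \<Longrightarrow> v \<in> qspace N \<Longrightarrow> (\<And>w. w \<in> qwords N \<Longrightarrow> u w = v w) \<Longrightarrow> u = v"
  by (rule ext, case_tac "x \<in> qwords N") (auto simp: qspace_def)

lemma qinner_cnj: "cnj (qinner N u v) = qinner N v u"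
  by (simp add: qinner_def mult.commute)

lemma qinner_self_eq_0:
  assumes "v \<in> qspace N" "qinner N v v = 0" shows "v = (\<lambda>w. 0)"
proof -
  have eq: "qinner N v v = complex_of_real (\<Sum>w\<in>qwords N. (cmod (v w))^2)"
    unfolding qinner_def of_real_sum
    by (rule sum.cong) (simp_all, metis complex_norm_square mult.commute of_real_power)
  then have "(\<Sum>w\<in>qwords N. (cmod (v w))^2) = 0" using assms(2) by (metis of_real_eq_0_iff)
  then have "\<forall>w\<in>qwords N. (cmod (v w))^2 = 0"
    by (subst (asm) sum_nonneg_eq_0_iff) auto
  then have "\<forall>w\<in>qwords N. v w = 0" by simp
  with assms(1) show ?thesis by (auto simp: fun_eq_iff qspace_def)
qed

lemma qinner_add_right: "qinner N u (\<lambda>w. v w + v' w) = qinner N u v + qinner N u v'"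
  by (simp add: qinner_def distrib_left sum.distrib)

lemma qinner_add_left: "qinner N (\<lambda>w. u w + u' w) v = qinner N u v + qinner N u' v"
  by (simp add: qinner_def distrib_right sum.distrib)

lemma qinner_diff_right: "qinner N u (\<lambda>w. v w - v' w) = qinner N u v - qinner N u v'"
  by (simp add: qinner_def right_diff_distrib sum_subtractf)

lemma qinner_diff_left: "qinner N (\<lambda>w. u w - u' w) v = qinner N u v - qinner N u' v"
  by (simp add: qinner_def left_diff_distrib sum_subtractf)

lemma qinner_scale_right: "qinner N u (\<lambda>w. c * v w) = c * qinner N u v"
  by (simp add: qinner_def sum_distrib_left ac_simps)

lemma qinner_scale_left: "qinner N (\<lambda>w. c * u w) v = cnj c * qinner N u v"
  by (simp add: qinner_def sum_distrib_left ac_simps)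

lemma qinner_sum_right: "qinner N u (\<lambda>w. \<Sum>j\<in>J. f j w) = (\<Sum>j\<in>J. qinner N u (f j))"
  unfolding qinner_def sum_distrib_left by (rule sum.swap)

lemma qinner_sum_left: "qinner N (\<lambda>w. \<Sum>j\<in>J. f j w) v = (\<Sum>j\<in>J. qinner N (f j) v)"
  unfolding qinner_def cnj_sum sum_distrib_right by (rule sum.swap)

lemma qinner_zero_left[simp]: "qinner N (\<lambda>w. 0) v = 0"
  by (simp add: qinner_def)

lemma qinner_zero_right[simp]: "qinner N v (\<lambda>w. 0) = 0"
  by (simp add: qinner_def)

lemma qinner_tprod:
  "qinner (a+b) (qtprod a x y) (qtprod a x' y') = qinner a x x' * qinner b y y'"
proof -
  have "qinner (a+b) (qtprod a x y) (qtprod a x' y')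
      = (\<Sum>s\<in>qwords a. \<Sum>t\<in>qwords b. (cnj (x s) * x' s) * (cnj (y t) * y' t))"
    unfolding qinner_def sum_qwords_add
    by (intro sum.cong refl) (auto simp: qtprod_def qwords_length)
  also have "\<dots> = qinner a x x' * qinner b y y'"
    by (simp add: qinner_def sum_product)
  finally show ?thesis .
qed

definition lsub :: "tvec set \<Rightarrow> bool" where
  "lsub A \<longleftrightarrow> (\<forall>F c. finite F \<longrightarrow> F \<subseteq> A \<longrightarrow> (\<lambda>w. \<Sum>u\<in>F. c u * u w) \<in> A)"

lemma qspan_sub:
  assumes "S \<subseteq> A" "lsub A" shows "qspan S \<subseteq> A"
proof
  fix v assume "v \<in> qspan S"
  then obtain F c where F: "finite F" "F \<subseteq> S" "v = (\<lambda>w. \<Sum>u\<in>F. c u * u w)"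
    by (auto simp: qspan_def)
  have "F \<subseteq> A" using F(2) assms(1) by (rule order_trans)
  from assms(2)[unfolded lsub_def, rule_format, OF F(1) this, of c] F(3) show "v \<in> A" by simp
qed

lemma qspan_base: "x \<in> S \<Longrightarrow> x \<in> qspan S"
  unfolding qspan_def by (rule CollectI, rule exI[of _ "{x}"], rule exI[of _ "\<lambda>_. 1"]) auto

lemma lsub_qspan: "lsub (qspan S)"
  unfolding lsub_def
proof (intro allI impI)
  fix F :: "tvec set" and c assume F: "finite F" "F \<subseteq> qspan S"
  have "\<forall>u\<in>F. \<exists>G. \<exists>d. finite G \<and> G \<subseteq> S \<and> u = (\<lambda>w. \<Sum>x\<in>G. d x * x w)"
    using F(2) by (auto simp: qspan_def)
  from bchoice[OF this] obtain G where "\<forall>u\<in>F. \<exists>d. finite (G u) \<and> G u \<subseteq> S \<and> u = (\<lambda>w. \<Sum>x\<in>G u. d x * x w)" ..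
  from bchoice[OF this] obtain d where G: "\<And>u. u \<in> F \<Longrightarrow> finite (G u) \<and> G u \<subseteq> S \<and> u = (\<lambda>w. \<Sum>x\<in>G u. d u x * x w)" by blast
  define U where "U = (\<Union>u\<in>F. G u)"
  have U: "finite U" "U \<subseteq> S" using G F(1) by (auto simp: U_def)
  define e where "e x = (\<Sum>u\<in>F. c u * (if x \<in> G u then d u x else 0))" for x
  have "(\<lambda>w. \<Sum>u\<in>F. c u * u w) = (\<lambda>w. \<Sum>x\<in>U. e x * x w)"
  proof
    fix w
    have "(\<Sum>u\<in>F. c u * u w) = (\<Sum>u\<in>F. c u * (\<Sum>x\<in>U. (if x \<in> G u then d u x else 0) * x w))"
    proof (rule sum.cong[OF refl])
      fix u assume u: "u \<in> F"
      have sub: "G u \<subseteq> U" using u by (auto simp: U_def)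
      have "u = (\<lambda>w. \<Sum>x\<in>G u. d u x * x w)" using G[OF u] by simp
      then have "u w = (\<Sum>x\<in>G u. d u x * x w)" by (rule fun_cong)
      also have "\<dots> = (\<Sum>x\<in>U. (if x \<in> G u then d u x else 0) * x w)"
        using sum.mono_neutral_cong_left[OF U(1) sub, of "\<lambda>x. (if x \<in> G u then d u x else 0) * x w" "\<lambda>x. d u x * x w"]
        by auto
      finally show "c u * u w = c u * (\<Sum>x\<in>U. (if x \<in> G u then d u x else 0) * x w)" by simp
    qed
    also have "\<dots> = (\<Sum>x\<in>U. e x * x w)"
      unfolding e_def sum_distrib_left sum_distrib_right by (subst sum.swap) (simp add: ac_simps)
    finally show "(\<Sum>u\<in>F. c u * u w) = (\<Sum>x\<in>U. e x * x w)" .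
  qed
  then show "(\<lambda>w. \<Sum>u\<in>F. c u * u w) \<in> qspan S"
    unfolding qspan_def apply (rule_tac CollectI) apply (rule exI[of _ U]) apply (rule exI[of _ e])
    using U by simp
qed

lemma lsub_sum:
  assumes "lsub A" "finite J" "\<And>j. j \<in> J \<Longrightarrow> f j \<in> A"
  shows "(\<lambda>w. \<Sum>j\<in>J. c j * f j w) \<in> A"
proof -
  define c' where "c' u = (\<Sum>j\<in>{j\<in>J. f j = u}. c j)" for u
  have "(\<lambda>w. \<Sum>u\<in>f ` J. c' u * u w) \<in> A"
    using assms unfolding lsub_def by auto
  moreover have "(\<lambda>w. \<Sum>u\<in>f ` J. c' u * u w) = (\<lambda>w. \<Sum>j\<in>J. c j * f j w)"
  proof
    fix w
    have "(\<Sum>j\<in>J. c j * f j w) = (\<Sum>u\<in>f ` J. \<Sum>j\<in>{j\<in>J. f j = u}. c j * f j w)"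
      using sum.image_gen[OF assms(2), of "\<lambda>j. c j * f j w" f] by simp
    also have "\<dots> = (\<Sum>u\<in>f ` J. c' u * u w)"
      unfolding c'_def sum_distrib_right by (intro sum.cong refl) auto
    finally show "(\<Sum>u\<in>f ` J. c' u * u w) = (\<Sum>j\<in>J. c j * f j w)" by simp
  qed
  ultimately show ?thesis by simp
qed

lemma lsub_sum1:
  assumes "lsub A" "finite J" "\<And>j. j \<in> J \<Longrightarrow> f j \<in> A"
  shows "(\<lambda>w. \<Sum>j\<in>J. f j w) \<in> A"
  using lsub_sum[OF assms, where c="\<lambda>_. 1"] by simp

lemma lsub_add:
  assumes "lsub A" "u \<in> A" "v \<in> A" shows "(\<lambda>w. u w + v w) \<in> A"
  using lsub_sum[OF assms(1), of "{0::nat,1}" "\<lambda>j. if j = 0 then u else v" "\<lambda>_. 1"] assms by simp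

lemma lsub_scale:
  assumes "lsub A" "u \<in> A" shows "(\<lambda>w. c * u w) \<in> A"
  using lsub_sum[OF assms(1), of "{0::nat}" "\<lambda>j. u" "\<lambda>_. c"] assms by simp

lemma lsub_zero:
  assumes "lsub A" shows "(\<lambda>w. 0) \<in> A"
  using assms[unfolded lsub_def, rule_format, of "{}"] by simp

lemma lsub_diff:
  assumes "lsub A" "u \<in> A" "v \<in> A" shows "(\<lambda>w. u w - v w) \<in> A"
proof -
  have "(\<lambda>w. u w + (-1) * v w) \<in> A" by (rule lsub_add[OF assms(1) assms(2) lsub_scale[OF assms(1) assms(3)]])
  then show ?thesis by simp
qed

lemma lsub_Int: assumes "lsub A" "lsub B" shows "lsub (A \<inter> B)"
  unfolding lsub_def
proof (intro allI impI)
  fix F :: "tvec set" and c assume F: "finite F" "F \<subseteq> A \<inter> B"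
  then have "F \<subseteq> A" "F \<subseteq> B" by auto
  with F(1) assms show "(\<lambda>w. \<Sum>u\<in>F. c u * u w) \<in> A \<inter> B"
    unfolding lsub_def by simp
qed

lemma lsub_qspace: "lsub (qspace N)"
  unfolding lsub_def qspace_def by (auto intro!: sum.neutral)

lemma qspan_orth:
  assumes "\<And>u. u \<in> S \<Longrightarrow> qinner N u v = 0" "u \<in> qspan S"
  shows "qinner N u v = 0"
proof -
  obtain F c where F: "finite F" "F \<subseteq> S" "u = (\<lambda>w. \<Sum>x\<in>F. c x * x w)"
    using assms(2) by (auto simp: qspan_def)
  show ?thesis unfolding F(3) qinner_sum_left qinner_scale_left
    using assms(1) F(2) by (auto intro!: sum.neutral)
qed

section \<open>Counting zeros\<close>

definition wc :: "nat list \<Rightarrow> nat" where "wc w = count (mset w) 0"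

lemma wc_Nil[simp]: "wc [] = 0" by (simp add: wc_def)
lemma wc_Cons: "wc (a # w) = (if a = 0 then Suc (wc w) else wc w)" by (simp add: wc_def)
lemma wc_append: "wc (x @ y) = wc x + wc y" by (simp add: wc_def)
lemma wc_le: "wc w \<le> length w" by (induction w) (auto simp: wc_Cons)

lemma qperm_qwords: "\<sigma> permutes {..<n} \<Longrightarrow> w \<in> qwords n \<Longrightarrow> qperm_word \<sigma> w \<in> qwords n"
  by (auto simp: qperm_word_eq qwords_def set_permute_list)

lemma qperm_wc: "\<sigma> permutes {..<n} \<Longrightarrow> w \<in> qwords n \<Longrightarrow> wc (qperm_word \<sigma> w) = wc w"
  by (simp add: qperm_word_eq wc_def mset_permute_list qwords_length)

lemma qperm_compose:
  assumes "\<sigma> permutes {..<n}" "\<tau> permutes {..<n}" "w \<in> qwords n"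
  shows "qperm_word \<sigma> (qperm_word \<tau> w) = qperm_word (\<tau> \<circ> \<sigma>) w"
  using assms by (simp add: qperm_word_eq permute_list_compose qwords_length)

lemma qperm_inv:
  assumes "\<sigma> permutes {..<n}" "w \<in> qwords n"
  shows "qperm_word (inv \<sigma>) (qperm_word \<sigma> w) = w"
proof -
  have "inv \<sigma> permutes {..<n}" using assms(1) by (rule permutes_inv)
  then have "qperm_word (inv \<sigma>) (qperm_word \<sigma> w) = qperm_word (\<sigma> \<circ> inv \<sigma>) w"
    using assms by (simp add: qperm_compose)
  also have "\<sigma> \<circ> inv \<sigma> = id" using assms(1) by (rule permutes_inv_o)
  finally show ?thesis by (simp add: qperm_word_eq)
qed

lemma qperm_inv2:
  assumes "\<sigma> permutes {..<n}" "w \<in> qwords n"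
  shows "qperm_word \<sigma> (qperm_word (inv \<sigma>) w) = w"
proof -
  have "inv \<sigma> permutes {..<n}" using assms(1) by (rule permutes_inv)
  then have "qperm_word \<sigma> (qperm_word (inv \<sigma>) w) = qperm_word (inv \<sigma> \<circ> \<sigma>) w"
    using assms by (simp add: qperm_compose)
  also have "inv \<sigma> \<circ> \<sigma> = id" using assms(1) by (rule permutes_inv_o)
  finally show ?thesis by (simp add: qperm_word_eq)
qed

lemma qperm_bij: assumes "\<sigma> permutes {..<n}" shows "bij_betw (qperm_word \<sigma>) (qwords n) (qwords n)"
proof (rule bij_betw_byWitness[where f'="qperm_word (inv \<sigma>)"])
  have i: "inv \<sigma> permutes {..<n}" using assms by (rule permutes_inv)
  show "\<forall>a\<in>qwords n. qperm_word (inv \<sigma>) (qperm_word \<sigma> a) = a" using qperm_inv[OF assms] by simp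
  show "\<forall>a\<in>qwords n. qperm_word \<sigma> (qperm_word (inv \<sigma>) a) = a" using qperm_inv2[OF assms] by simp
  show "qperm_word \<sigma> ` qwords n \<subseteq> qwords n" using qperm_qwords[OF assms] by auto
  show "qperm_word (inv \<sigma>) ` qwords n \<subseteq> qwords n" using qperm_qwords[OF i] by auto
qed

lemma sum_qperm: assumes "\<sigma> permutes {..<n}" shows "(\<Sum>w\<in>qwords n. f (qperm_word \<sigma> w)) = (\<Sum>w\<in>qwords n. f w)"
  by (rule sum.reindex_bij_betw[OF qperm_bij[OF assms]])

lemma count1_qwords: "set w \<subseteq> {0,1} \<Longrightarrow> count (mset w) (Suc 0) = length w - wc w"
proof (induction w)
  case Nil then show ?case by simp
next
  case (Cons a w)
  then have "a = 0 \<or> a = 1" by auto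
  with Cons show ?case using wc_le[of w] by (auto simp: wc_Cons Suc_diff_le)
qed

lemma count_notin: "a \<notin> set w \<Longrightarrow> count (mset w) a = 0"
  by (induction w) auto

lemma wc_mset_eq:
  assumes "w \<in> qwords n" "w' \<in> qwords n" "wc w = wc w'"
  shows "mset w = mset w'"
proof (rule multiset_eqI)
  fix a
  show "count (mset w) a = count (mset w') a"
  proof (cases "a = 0 \<or> a = 1")
    case True
    then show ?thesis using assms count1_qwords[of w] count1_qwords[of w']
      by (auto simp: qwords_def wc_def)
  next
    case False
    then have "a \<notin> set w" "a \<notin> set w'" using assms by (auto simp: qwords_def)
    then show ?thesis by (simp add: count_notin)
  qed
qed

lemma wc_perm_exists:
  assumes "w \<in> qwords n" "w' \<in> qwords n" "wc w = wc w'"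
  obtains \<sigma> where "\<sigma> permutes {..<n}" "qperm_word \<sigma> w = w'"
proof -
  have "mset w' = mset w" using wc_mset_eq[OF assms] by simp
  then obtain p where "p permutes {..<length w}" "permute_list p w = w'"
    by (rule mset_eq_permutation)
  moreover have "length w = n" using assms(1) by (rule qwords_length)
  ultimately show ?thesis by (intro that) (simp_all add: qperm_word_eq)
qed

definition CD :: "nat \<Rightarrow> tvec set" where
  "CD n = {v \<in> qspace n. \<forall>w\<in>qwords n. \<forall>w'\<in>qwords n. wc w = wc w' \<longrightarrow> v w = v w'}"

lemma CD_qspace: "v \<in> CD n \<Longrightarrow> v \<in> qspace n"
  unfolding CD_def by blast

lemma CD_eq: "v \<in> CD n \<Longrightarrow> w \<in> qwords n \<Longrightarrow> w' \<in> qwords n \<Longrightarrow> wc w = wc w' \<Longrightarrow> v w = v w'"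
  unfolding CD_def by blast

lemma qL_CD: "qL n = CD n"
proof
  show "qL n \<subseteq> CD n"
  proof
    fix v assume v: "v \<in> qL n"
    show "v \<in> CD n" unfolding CD_def
    proof (intro CollectI conjI ballI impI)
      show "v \<in> qspace n" using v by (simp add: qL_def)
      fix w w' assume w: "w \<in> qwords n" "w' \<in> qwords n" "wc w = wc w'"
      obtain \<sigma> where s: "\<sigma> permutes {..<n}" "qperm_word \<sigma> w = w'" using wc_perm_exists[OF w] .
      have "\<forall>\<sigma>. \<sigma> permutes {..<n} \<longrightarrow> (\<forall>w. v (qperm_word \<sigma> w) = v w)" using v by (simp add: qL_def)
      then have "v (qperm_word \<sigma> w) = v w" using s(1) by blast
      then show "v w = v w'" using s(2) by simp
    qed
  qed
next
  show "CD n \<subseteq> qL n"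
  proof
    fix v assume v: "v \<in> CD n"
    show "v \<in> qL n" unfolding qL_def
    proof (intro CollectI conjI allI impI)
      show "v \<in> qspace n" using v by (rule CD_qspace)
      fix \<sigma> w assume s: "\<sigma> permutes {..<n}"
      show "v (qperm_word \<sigma> w) = v w"
      proof (cases "w \<in> qwords n")
        case True
        from CD_eq[OF v qperm_qwords[OF s True] True qperm_wc[OF s True]] show ?thesis .
      next
        case False
        have "qperm_word \<sigma> w \<notin> qwords n"
        proof
          assume "qperm_word \<sigma> w \<in> qwords n"
          then have "length w = n" "set (qperm_word \<sigma> w) \<subseteq> {0,1}"
            by (auto simp: qwords_def qperm_word_eq)
          then have "w \<in> qwords n" using s by (simp add: qwords_def qperm_word_eq set_permute_list)
          with False show False by simp
        qed
        moreover have "v \<in> qspace n" using v by (rule CD_qspace)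
        ultimately show ?thesis using False by (simp add: qspaceD)
      qed
    qed
  qed
qed

lemma qwords_Suc_split:
  "{w \<in> qwords (Suc n). P w} = (\<lambda>u. 0 # u) ` {u \<in> qwords n. P (0 # u)} \<union> (\<lambda>u. 1 # u) ` {u \<in> qwords n. P (1 # u)}"
proof (rule set_eqI)
  fix w
  show "w \<in> {w \<in> qwords (Suc n). P w} \<longleftrightarrow> w \<in> (\<lambda>u. 0 # u) ` {u \<in> qwords n. P (0 # u)} \<union> (\<lambda>u. 1 # u) ` {u \<in> qwords n. P (1 # u)}"
  proof (cases w)
    case Nil then show ?thesis by (auto simp: qwords_def)
  next
    case (Cons a u)
    then show ?thesis by (auto simp: qwords_def)
  qed
qed

lemma card_wc_class: "card {w \<in> qwords n. wc w = k} = n choose k"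
proof (induction n arbitrary: k)
  case 0
  have "{w \<in> qwords 0. wc w = k} = (if k = 0 then {[]} else {})" by (auto simp: qwords_0)
  then show ?case by simp
next
  case (Suc n)
  let ?A = "(\<lambda>u. 0 # u) ` {u \<in> qwords n. wc (0 # u) = k}"
  let ?B = "(\<lambda>u. 1 # u) ` {u \<in> qwords n. wc (1 # u) = k}"
  have fin: "finite ?A" "finite ?B" by auto
  have disj: "?A \<inter> ?B = {}" by auto
  have cA: "card ?A = card {u \<in> qwords n. wc (0 # u) = k}" by (rule card_image) (simp add: inj_on_def)
  have cB: "card ?B = card {u \<in> qwords n. wc (1 # u) = k}" by (rule card_image) (simp add: inj_on_def)
  have "card {w \<in> qwords (Suc n). wc w = k} = card ?A + card ?B"
    unfolding qwords_Suc_split by (rule card_Un_disjoint[OF fin disj])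
  also have "\<dots> = Suc n choose k"
  proof (cases k)
    case 0
    have "{u \<in> qwords n. wc (0 # u) = k} = {}" using 0 by (auto simp: wc_Cons)
    moreover have "{u \<in> qwords n. wc (1 # u) = k} = {u \<in> qwords n. wc u = 0}" using 0 by (auto simp: wc_Cons)
    ultimately show ?thesis using cA cB Suc.IH[of 0] 0 by simp
  next
    case (Suc j)
    have "{u \<in> qwords n. wc (0 # u) = k} = {u \<in> qwords n. wc u = j}" using Suc by (auto simp: wc_Cons)
    moreover have "{u \<in> qwords n. wc (1 # u) = k} = {u \<in> qwords n. wc u = k}" by (auto simp: wc_Cons)
    ultimately show ?thesis using cA cB Suc.IH[of j] Suc.IH[of k] Suc by simp
  qed
  finally show ?case .
qed

lemma sum_by_wc:
  "(\<Sum>x\<in>qwords n. h x) = (\<Sum>k\<le>n. \<Sum>x\<in>{x \<in> qwords n. wc x = k}. h x)"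
proof -
  have "(\<Sum>x\<in>qwords n. h x) = (\<Sum>x\<in>qwords n. \<Sum>k\<le>n. if wc x = k then h x else 0)"
  proof (rule sum.cong[OF refl])
    fix x assume "x \<in> qwords n"
    then have "wc x \<le> n" using wc_le[of x] by (simp add: qwords_length)
    then show "h x = (\<Sum>k\<le>n. if wc x = k then h x else 0)" by (simp add: sum.delta)
  qed
  also have "\<dots> = (\<Sum>k\<le>n. \<Sum>x\<in>qwords n. if wc x = k then h x else 0)" by (rule sum.swap)
  also have "\<dots> = (\<Sum>k\<le>n. \<Sum>x\<in>{x \<in> qwords n. wc x = k}. h x)"
    by (rule sum.cong[OF refl], rule sum.inter_filter[symmetric], simp)
  finally show ?thesis .
qed

lemma sum_wc_class_const:
  "(\<Sum>x\<in>{x \<in> qwords n. wc x = k}. (c::'a::comm_ring_1)) = of_nat (n choose k) * c"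
  by (simp add: card_wc_class)

lemma qp_qspace: "qp n f \<in> qspace n"
  by (simp add: qp_def qspace_def)

lemma qp_perm:
  assumes "\<tau> permutes {..<n}" "w \<in> qwords n"
  shows "qp n f (qperm_word \<tau> w) = qp n f w"
proof -
  have "(\<Sum>\<sigma>\<in>{\<sigma>. \<sigma> permutes {..<n}}. f (qperm_word \<sigma> (qperm_word \<tau> w)))
      = (\<Sum>\<sigma>\<in>{\<sigma>. \<sigma> permutes {..<n}}. f (qperm_word (\<tau> \<circ> \<sigma>) w))"
    by (intro sum.cong refl) (simp add: qperm_compose assms)
  also have "\<dots> = (\<Sum>\<sigma>\<in>{\<sigma>. \<sigma> permutes {..<n}}. f (qperm_word \<sigma> w))"
    using setum_permutations_compose_left[OF assms(1), of "\<lambda>\<sigma>. f (qperm_word \<sigma> w)"] by simp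
  finally show ?thesis using assms qperm_qwords by (simp add: qp_def)
qed

lemma qp_CD: "qp n f \<in> CD n"
  unfolding CD_def
proof (intro CollectI conjI ballI impI)
  show "qp n f \<in> qspace n" by (rule qp_qspace)
  fix w w' assume w: "w \<in> qwords n" "w' \<in> qwords n" "wc w = wc w'"
  obtain \<sigma> where "\<sigma> permutes {..<n}" "qperm_word \<sigma> w = w'" using wc_perm_exists[OF w] .
  then show "qp n f w = qp n f w'" using qp_perm[of \<sigma> n w f] w(1) by simp
qed

lemma qp_sum: "(\<Sum>w\<in>qwords n. qp n f w) = (\<Sum>w\<in>qwords n. f w)"
proof -
  have "(\<Sum>w\<in>qwords n. qp n f w) = (\<Sum>w\<in>qwords n. (\<Sum>\<sigma>\<in>{\<sigma>. \<sigma> permutes {..<n}}. f (qperm_word \<sigma> w)) / of_nat (fact n))"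
    by (simp add: qp_def)
  also have "\<dots> = (\<Sum>\<sigma>\<in>{\<sigma>. \<sigma> permutes {..<n}}. \<Sum>w\<in>qwords n. f (qperm_word \<sigma> w)) / of_nat (fact n)"
    by (simp add: sum_divide_distrib[symmetric]) (rule sum.swap)
  also have "\<dots> = (\<Sum>\<sigma>\<in>{\<sigma>. \<sigma> permutes {..<n}}. \<Sum>w\<in>qwords n. f w) / of_nat (fact n)"
    by (simp add: sum_qperm)
  also have "\<dots> = (\<Sum>w\<in>qwords n. f w)"
    by (simp add: card_permutations[of "{..<n}" n])
  finally show ?thesis .
qed

lemma qp_basis:
  assumes u: "u \<in> qwords n" and w: "w \<in> qwords n"
  shows "qp n (qbasis u) w = (if wc w = wc u then 1 / of_nat (n choose wc u) else 0)"
proof -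
  define k where "k = wc u"
  define \<alpha> where "\<alpha> = qp n (qbasis u) u"
  have cd: "qp n (qbasis u) \<in> CD n" by (rule qp_CD)
  have zero: "qp n (qbasis u) x = 0" if x: "x \<in> qwords n" "wc x \<noteq> k" for x
  proof -
    have "qbasis u (qperm_word \<sigma> x) = 0" if s: "\<sigma> permutes {..<n}" for \<sigma>
      using qperm_wc[OF s x(1)] x(2) by (auto simp: qbasis_def k_def)
    then show ?thesis by (simp add: qp_def)
  qed
  have const: "qp n (qbasis u) x = \<alpha>" if x: "x \<in> qwords n" "wc x = k" for x
    unfolding \<alpha>_def using CD_eq[OF cd x(1) u] x(2) by (simp add: k_def)
  have "1 = (\<Sum>x\<in>qwords n. qbasis u x)"
    using u by (simp add: qbasis_def)
  also have "\<dots> = (\<Sum>x\<in>qwords n. qp n (qbasis u) x)" by (rule qp_sum[symmetric])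
  also have "\<dots> = (\<Sum>j\<le>n. \<Sum>x\<in>{x \<in> qwords n. wc x = j}. qp n (qbasis u) x)" by (rule sum_by_wc)
  also have "\<dots> = (\<Sum>j\<le>n. if j = k then of_nat (n choose k) * \<alpha> else 0)"
  proof (rule sum.cong[OF refl])
    fix j assume "j \<in> {..n}"
    show "(\<Sum>x\<in>{x \<in> qwords n. wc x = j}. qp n (qbasis u) x) = (if j = k then of_nat (n choose k) * \<alpha> else 0)"
    proof (cases "j = k")
      case True
      then have "(\<Sum>x\<in>{x \<in> qwords n. wc x = j}. qp n (qbasis u) x) = (\<Sum>x\<in>{x \<in> qwords n. wc x = k}. \<alpha>)"
        using const by (intro sum.cong) auto
      then show ?thesis using True by (simp add: card_wc_class)
    next
      case False
      then show ?thesis using zero by (auto intro!: sum.neutral)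
    qed
  qed
  also have "\<dots> = of_nat (n choose k) * \<alpha>"
  proof -
    have "k \<le> n" using wc_le[of u] u by (simp add: k_def qwords_length)
    then show ?thesis by (simp add: sum.delta')
  qed
  finally have h: "1 = of_nat (n choose k) * \<alpha>" .
  have nz: "of_nat (n choose k) \<noteq> (0::complex)"
    using wc_le[of u] u by (simp add: k_def qwords_length)
  have a: "\<alpha> = 1 / of_nat (n choose k)"
    using h nz by (simp add: field_simps)
  show ?thesis
  proof (cases "wc w = k")
    case True then show ?thesis using const[OF w] a by (simp add: k_def)
  next
    case False then show ?thesis using zero[OF w] by (simp add: k_def)
  qed
qed

section \<open>The basis e_k\<close>

definition ek :: "nat \<Rightarrow> nat \<Rightarrow> tvec" where
  "ek n k w = (if w \<in> qwords n \<and> wc w = k then complex_of_real (1 / sqrt (real (n choose k))) else 0)"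

lemma qe_eq: assumes "k \<le> n" shows "qe n k = ek n k"
proof
  fix w
  let ?u = "replicate k 0 @ replicate (n - k) (1::nat)"
  have u: "?u \<in> qwords n" using assms by (auto simp: qwords_def)
  have wcu: "wc ?u = k" by (simp add: wc_def)
  have C: "real (n choose k) = fact n / (fact k * fact (n - k))" using binomial_fact[OF assms] by simp
  have pos: "real (n choose k) > 0" using assms by simp
  show "qe n k w = ek n k w"
  proof (cases "w \<in> qwords n")
    case True
    have "qe n k w = complex_of_real (sqrt (real (n choose k))) * qp n (qbasis ?u) w"
      unfolding qe_def C by simp
    also have "\<dots> = complex_of_real (sqrt (real (n choose k))) * (if wc w = k then 1 / of_nat (n choose k) else 0)"
      using qp_basis[OF u True] wcu by simp
    also have "\<dots> = ek n k w"
    proof -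
      define c where "c = real (n choose k)"
      have cpos: "c > 0" using pos by (simp add: c_def)
      have cc: "sqrt c * sqrt c = c" using cpos by simp
      have "sqrt c * (1 / c) = 1 / sqrt c"
        using cpos cc by (simp add: field_simps)
      then have "complex_of_real (sqrt c) * (1 / complex_of_real c) = complex_of_real (1 / sqrt c)"
        by (simp flip: of_real_mult of_real_divide)
      then have "complex_of_real (sqrt (real (n choose k))) * (1 / of_nat (n choose k))
          = complex_of_real (1 / sqrt (real (n choose k)))" by (simp add: c_def)
      then show ?thesis using True by (simp add: ek_def)
    qed
    finally show ?thesis .
  next
    case False
    then show ?thesis by (simp add: qe_def qp_def ek_def)
  qed
qed

lemma ek_real: "cnj (ek n k w) = ek n k w"
  by (simp add: ek_def)

lemma ek_qspace: "ek n k \<in> qspace n"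
  by (simp add: ek_def qspace_def)

lemma ek_CD: "ek n k \<in> CD n"
  by (auto simp: CD_def ek_qspace ek_def)

lemma ek_orth:
  assumes "j \<le> n" "k \<le> n"
  shows "qinner n (ek n j) (ek n k) = (if j = k then 1 else 0)"
proof -
  have "qinner n (ek n j) (ek n k) = (\<Sum>x\<in>qwords n. if wc x = j \<and> wc x = k then complex_of_real (1 / sqrt (real (n choose j)) * (1 / sqrt (real (n choose k)))) else 0)"
    unfolding qinner_def by (intro sum.cong refl) (auto simp: ek_def)
  also have "\<dots> = (if j = k then 1 else 0)"
  proof (cases "j = k")
    case True
    have pos: "real (n choose k) > 0" using assms by simp
    have "(\<Sum>x\<in>qwords n. if wc x = j \<and> wc x = k then complex_of_real (1 / sqrt (real (n choose j)) * (1 / sqrt (real (n choose k)))) else 0)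
        = (\<Sum>x\<in>{x\<in>qwords n. wc x = k}. complex_of_real (1 / real (n choose k)))"
      using True pos by (simp add: sum.inter_filter[symmetric])
    also have "\<dots> = 1" using pos by (simp add: card_wc_class)
    finally show ?thesis using True by simp
  next
    case False then show ?thesis by (auto intro!: sum.neutral)
  qed
  finally show ?thesis .
qed

lemma inv_sqrt_sq: "c \<ge> 0 \<Longrightarrow> complex_of_real (1 / sqrt c) * complex_of_real (1 / sqrt c) = complex_of_real (1 / c)"
proof -
  assume c: "c \<ge> 0"
  have "(1 / sqrt c) * (1 / sqrt c) = 1 / c" using c by (simp add: real_sqrt_mult_self)
  then show ?thesis by (metis of_real_mult)
qed

lemma sqrt_sq_nat: "complex_of_real (sqrt (real c)) * complex_of_real (sqrt (real c)) = of_nat c"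
proof -
  have "sqrt (real c) * sqrt (real c) = real c" by simp
  then have "complex_of_real (sqrt (real c) * sqrt (real c)) = complex_of_real (real c)" by simp
  then show ?thesis by (simp only: of_real_mult of_real_of_nat_eq)
qed

definition Kf :: "nat \<Rightarrow> nat list \<Rightarrow> nat list \<Rightarrow> complex" where
  "Kf n z a = (if wc z = wc a then 1 / of_nat (n choose wc a) else 0)"

lemma ek_kernel:
  assumes "z \<in> qwords n" "a \<in> qwords n"
  shows "(\<Sum>k\<le>n. ek n k z * ek n k a) = Kf n z a"
proof -
  have le: "wc a \<le> n" using wc_le[of a] assms by (simp add: qwords_length)
  have "(\<Sum>k\<le>n. ek n k z * ek n k a) = (\<Sum>k\<le>n. if k = wc a then (if wc z = wc a then complex_of_real (1 / real (n choose wc a)) else 0) else 0)"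
    using assms by (intro sum.cong refl) (auto simp: ek_def inv_sqrt_sq sqrt_sq_nat)
  also have "\<dots> = Kf n z a" using le by (simp add: sum.delta Kf_def)
  finally show ?thesis .
qed

lemma Kf_reproduce:
  assumes "a \<in> qwords n" "\<And>z. z \<in> qwords n \<Longrightarrow> wc z = wc a \<Longrightarrow> f z = f a"
  shows "(\<Sum>z\<in>qwords n. Kf n z a * f z) = f a"
proof -
  have le: "wc a \<le> n" using wc_le[of a] assms by (simp add: qwords_length)
  have pos: "(n choose wc a) > 0" using le by simp
  have "(\<Sum>z\<in>qwords n. Kf n z a * f z) = (\<Sum>z\<in>qwords n. if wc z = wc a then f a / of_nat (n choose wc a) else 0)"
    by (rule sum.cong[OF refl]) (simp add: Kf_def assms(2))
  also have "\<dots> = (\<Sum>z\<in>{z\<in>qwords n. wc z = wc a}. f a / of_nat (n choose wc a))"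
    by (rule sum.inter_filter[symmetric]) simp
  also have "\<dots> = f a" using pos by (simp add: card_wc_class)
  finally show ?thesis .
qed

section \<open>The vector delta\<close>

definition dval :: "nat \<Rightarrow> nat \<Rightarrow> real" where
  "dval n k = (-1)^k / (sqrt (real (n+1)) * real (n choose k))"

lemma qtprod_app: "length x = a \<Longrightarrow> qtprod a f g (x @ y) = f x * g y"
  by (simp add: qtprod_def)

lemma qdelta_app:
  assumes lx: "length x = n"
  shows "qdelta n (x @ y) = (if x \<in> qwords n \<and> y \<in> qwords n \<and> wc x + wc y = n
            then complex_of_real (dval n (wc x)) else 0)"
proof -
  have "qdelta n (x @ y) = complex_of_real (1 / sqrt (real (n + 1))) *
      (\<Sum>k\<le>n. (-1) ^ k * (ek n k x * ek n (n - k) y))"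
    unfolding qdelta_def using lx by (simp add: qtprod_app qe_eq)
  also have "\<dots> = (if x \<in> qwords n \<and> y \<in> qwords n \<and> wc x + wc y = n
            then complex_of_real (dval n (wc x)) else 0)"
  proof (cases "x \<in> qwords n")
    case False
    then show ?thesis by (simp add: ek_def)
  next
    case True
    have le: "wc x \<le> n" using wc_le[of x] lx by simp
    have "(\<Sum>k\<le>n. (-1) ^ k * (ek n k x * ek n (n - k) y))
        = (\<Sum>k\<le>n. if k = wc x then (-1) ^ wc x * (complex_of_real (1 / sqrt (real (n choose wc x))) * ek n (n - wc x) y) else 0)"
      using True by (intro sum.cong refl) (auto simp: ek_def)
    also have "\<dots> = (-1) ^ wc x * (complex_of_real (1 / sqrt (real (n choose wc x))) * ek n (n - wc x) y)"
      using le by (simp add: sum.delta)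
    finally have s: "(\<Sum>k\<le>n. (-1) ^ k * (ek n k x * ek n (n - k) y)) = \<dots>" .
    show ?thesis
    proof (cases "y \<in> qwords n \<and> wc x + wc y = n")
      case False
      then have "ek n (n - wc x) y = 0" using le by (auto simp: ek_def)
      then show ?thesis using s False by auto
    next
      case True2: True
      have sym: "n choose (n - wc x) = n choose wc x" using le by (simp add: binomial_symmetric[symmetric])
      have "ek n (n - wc x) y = complex_of_real (1 / sqrt (real (n choose wc x)))"
        using True2 sym by (auto simp: ek_def)
      then have "complex_of_real (1 / sqrt (real (n + 1))) * (\<Sum>k\<le>n. (-1) ^ k * (ek n k x * ek n (n - k) y))
          = complex_of_real (1 / sqrt (real (n + 1))) * ((-1) ^ wc x * complex_of_real (1 / real (n choose wc x)))"
        using s by (simp add: inv_sqrt_sq sqrt_sq_nat)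
      also have "\<dots> = complex_of_real (dval n (wc x))"
        by (simp add: dval_def)
      finally show ?thesis using True True2 by simp
    qed
  qed
  finally show ?thesis .
qed

lemma qdelta_qspace: "qdelta n \<in> qspace (2*n)"
proof (rule qspaceI)
  fix w assume w: "w \<notin> qwords (2*n)"
  show "qdelta n w = 0"
  proof (cases "length w \<ge> n")
    case True
    have "w = take n w @ drop n w" by simp
    moreover have "\<not> (take n w \<in> qwords n \<and> drop n w \<in> qwords n)"
    proof
      assume "take n w \<in> qwords n \<and> drop n w \<in> qwords n"
      then have "take n w @ drop n w \<in> qwords (n + n)" by (blast intro: qwords_appendI)
      then show False using w by (simp add: mult_2)
    qed
    ultimately show ?thesis using qdelta_app[of "take n w" n "drop n w"] True by (metis length_take min_absorb2)
  next
    case False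
    then have "take n w \<notin> qwords n" by (simp add: qwords_def)
    then show ?thesis by (simp add: qdelta_def qtprod_def qe_eq ek_def)
  qed
qed

lemma qdelta_real_ex: "\<exists>r. qdelta n w = complex_of_real r"
proof (cases "length w \<ge> n")
  case True
  have "w = take n w @ drop n w" by simp
  then have "qdelta n w = (if take n w \<in> qwords n \<and> drop n w \<in> qwords n \<and> wc (take n w) + wc (drop n w) = n
            then complex_of_real (dval n (wc (take n w))) else 0)"
    using qdelta_app[of "take n w" n "drop n w"] True by (metis length_take min_absorb2)
  then show ?thesis by (metis of_real_0)
next
  case False
  then have "w \<notin> qwords (2*n)" by (auto simp: qwords_def)
  then have "qdelta n w = 0" using qdelta_qspace qspaceD by blast
  then show ?thesis by (metis of_real_0)
qed

lemma qdelta_real[simp]: "cnj (qdelta n w) = qdelta n w"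
  using qdelta_real_ex[of n w] by auto

lemma sum_class_const_real:
  "(\<Sum>x\<in>{x \<in> qwords n. wc x = k}. (c::real)) = real (n choose k) * c"
  by (simp add: card_wc_class)

lemma aux_cancel: "C > 0 \<Longrightarrow> N' > 0 \<Longrightarrow> C * (1 / (N' * C^2)) = 1 / (N' * (C::real))"
  by (simp add: field_simps power2_eq_square)

lemma aux_cancel2: "C > 0 \<Longrightarrow> N' > 0 \<Longrightarrow> C * (s / (N' * C^2)) = s / N' * (1 / (C::real))"
  by (simp add: field_simps power2_eq_square)

lemma dval_sq: "k \<le> n \<Longrightarrow> real (n choose k) * (dval n k)^2 = 1 / (real (n+1) * real (n choose k))"
proof -
  assume k: "k \<le> n"
  have pos: "real (n choose k) > 0" using k by simp
  have m: "((-1::real)^k)^2 = 1"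
    by (simp add: power_mult[symmetric])
  have "(dval n k)^2 = 1 / (real (n+1) * (real (n choose k))^2)"
    unfolding dval_def power_divide power_mult_distrib m by simp
  then show ?thesis using aux_cancel[OF pos, of "real (n+1)"] by simp
qed

lemma qdelta_norm: "qinner (2*n) (qdelta n) (qdelta n) = 1"
proof -
  have inner: "(\<Sum>y\<in>qwords n. cnj (qdelta n (x @ y)) * qdelta n (x @ y)) = complex_of_real (1 / (real (n+1) * real (n choose wc x)))"
    if x: "x \<in> qwords n" for x
  proof -
    have lx: "length x = n" using x by (simp add: qwords_length)
    have le: "wc x \<le> n" using wc_le[of x] lx by simp
    have "(\<Sum>y\<in>qwords n. cnj (qdelta n (x @ y)) * qdelta n (x @ y))
        = (\<Sum>y\<in>qwords n. if wc y = n - wc x then complex_of_real ((dval n (wc x))^2) else 0)"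
      using x le lx by (intro sum.cong refl) (auto simp: qdelta_app power2_eq_square)
    also have "\<dots> = (\<Sum>y\<in>{y\<in>qwords n. wc y = n - wc x}. complex_of_real ((dval n (wc x))^2))"
      by (rule sum.inter_filter[symmetric]) simp
    also have "\<dots> = complex_of_real (real (n choose (n - wc x)) * (dval n (wc x))^2)"
      by (simp add: card_wc_class)
    also have "\<dots> = complex_of_real (1 / (real (n+1) * real (n choose wc x)))"
      using le dval_sq[OF le] by (simp add: binomial_symmetric[symmetric])
    finally show ?thesis .
  qed
  have "qinner (2*n) (qdelta n) (qdelta n) = (\<Sum>x\<in>qwords n. \<Sum>y\<in>qwords n. cnj (qdelta n (x @ y)) * qdelta n (x @ y))"
    unfolding qinner_def by (rule sum_qwords_add') simp
  also have "\<dots> = (\<Sum>x\<in>qwords n. complex_of_real (1 / (real (n+1) * real (n choose wc x))))"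
    using inner by (rule sum.cong[OF refl])
  also have "\<dots> = (\<Sum>k\<le>n. \<Sum>x\<in>{x \<in> qwords n. wc x = k}. complex_of_real (1 / (real (n+1) * real (n choose wc x))))"
    by (rule sum_by_wc)
  also have "\<dots> = (\<Sum>k\<le>n. complex_of_real (1 / real (n+1)))"
  proof (rule sum.cong[OF refl])
    fix k assume k: "k \<in> {..n}"
    have pos: "real (n choose k) > 0" using k by simp
    have "(\<Sum>x\<in>{x \<in> qwords n. wc x = k}. complex_of_real (1 / (real (n+1) * real (n choose wc x))))
        = (\<Sum>x\<in>{x \<in> qwords n. wc x = k}. complex_of_real (1 / (real (n+1) * real (n choose k))))"
      by (rule sum.cong) auto
    also have "\<dots> = complex_of_real (real (n choose k) * (1 / (real (n+1) * real (n choose k))))"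
      by (simp add: card_wc_class)
    also have "\<dots> = complex_of_real (1 / real (n+1))" using pos by simp
    finally show "(\<Sum>x\<in>{x \<in> qwords n. wc x = k}. complex_of_real (1 / (real (n+1) * real (n choose wc x)))) = complex_of_real (1 / real (n+1))" .
  qed
  also have "\<dots> = 1"
  proof -
    have "complex_of_nat (Suc n) \<noteq> 0" by (rule of_nat_neq_0)
    then show ?thesis by simp
  qed
  finally show ?thesis .
qed

lemma qdelta_snake:
  assumes a: "a \<in> qwords n" and b: "b \<in> qwords n"
  shows "(\<Sum>z\<in>qwords n. qdelta n (a @ z) * qdelta n (z @ b)) = complex_of_real ((-1)^n / real (n+1)) * Kf n a b"
proof -
  have la: "length a = n" using a by (simp add: qwords_length)
  have le: "wc a \<le> n" using wc_le[of a] la by simp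
  have pos: "real (n choose wc a) > 0" using le by simp
  have tm: "qdelta n (a @ z) * qdelta n (z @ b) =
     (if wc z = n - wc a then (if wc b = wc a then complex_of_real ((-1)^n / (real (n+1) * (real (n choose wc a))^2)) else 0) else 0)"
    if z: "z \<in> qwords n" for z
  proof -
    have lz: "length z = n" using z by (simp add: qwords_length)
    show ?thesis
    proof (cases "wc z = n - wc a \<and> wc b = wc a")
      case True
      have "(-1::real)^(wc a) * (-1)^(wc z) = (-1)^n" using True le by (simp flip: power_add)
      moreover have "n choose wc z = n choose wc a" using True le by (simp add: binomial_symmetric[symmetric])
      moreover have "dval n (wc a) * dval n (wc z) = (-1)^(wc a) * (-1)^(wc z) / (real (n+1) * (real (n choose wc a)) * real (n choose wc z))"
        by (simp add: dval_def)
      ultimately have "dval n (wc a) * dval n (wc z) = (-1)^n / (real (n+1) * (real (n choose wc a))^2)"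
        by (simp add: power2_eq_square)
      then show ?thesis using True a b z la lz le by (simp add: qdelta_app flip: of_real_mult)
    next
      case False
      then show ?thesis using a b z la lz le by (auto simp: qdelta_app)
    qed
  qed
  have "(\<Sum>z\<in>qwords n. qdelta n (a @ z) * qdelta n (z @ b))
     = (\<Sum>z\<in>qwords n. if wc z = n - wc a then (if wc b = wc a then complex_of_real ((-1)^n / (real (n+1) * (real (n choose wc a))^2)) else 0) else 0)"
    using tm by (rule sum.cong[OF refl])
  also have "\<dots> = (\<Sum>z\<in>{z\<in>qwords n. wc z = n - wc a}. (if wc b = wc a then complex_of_real ((-1)^n / (real (n+1) * (real (n choose wc a))^2)) else 0))"
    by (rule sum.inter_filter[symmetric]) simp
  also have "\<dots> = of_nat (n choose (n - wc a)) * (if wc b = wc a then complex_of_real ((-1)^n / (real (n+1) * (real (n choose wc a))^2)) else 0)"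
    by (simp add: card_wc_class)
  also have "\<dots> = complex_of_real ((-1)^n / real (n+1)) * Kf n a b"
  proof (cases "wc b = wc a")
    case True
    have "real (n choose wc a) * ((-1)^n / (real (n+1) * (real (n choose wc a))^2)) = (-1)^n / real (n+1) * (1 / real (n choose wc a))"
      by (rule aux_cancel2[OF pos]) simp
    then have "complex_of_real (real (n choose wc a)) * complex_of_real ((-1)^n / (real (n+1) * (real (n choose wc a))^2))
        = complex_of_real ((-1)^n / real (n+1)) * complex_of_real (1 / real (n choose wc a))"
      by (simp only: of_real_mult[symmetric])
    moreover have "of_nat (n choose (n - wc a)) = complex_of_real (real (n choose wc a))"
      using le by (simp add: binomial_symmetric[symmetric])
    moreover have "Kf n a b = complex_of_real (1 / real (n choose wc a))"
      using True by (simp add: Kf_def)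
    ultimately show ?thesis using True by simp
  next
    case False
    then show ?thesis by (simp add: Kf_def)
  qed
  finally show ?thesis .
qed

section \<open>Blockwise count-dependent vectors\<close>

definition bcs :: "nat \<Rightarrow> nat \<Rightarrow> nat list \<Rightarrow> nat list" where
  "bcs n k w = map (\<lambda>b. wc (take n (drop (n*b) w))) [0..<k]"

lemma length_bcs[simp]: "length (bcs n k w) = k"
  by (simp add: bcs_def)

lemma upt_shift: "[a..<a+b] = map (\<lambda>j. a + j) [0..<b]"
  by (induction b) auto

lemma bcs_append:
  assumes lx: "length x = n * a"
  shows "bcs n (a + b) (x @ y) = bcs n a x @ bcs n b y"
proof -
  define f where "f j = wc (take n (drop (n*j) (x @ y)))" for j
  have "bcs n (a + b) (x @ y) = map f [0..<a+b]" by (simp add: bcs_def f_def)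
  also have "[0..<a+b] = [0..<a] @ map (\<lambda>j. a + j) [0..<b]"
    using upt_add_eq_append[of 0 a b] upt_shift[of a b] by simp
  also have "map f ([0..<a] @ map (\<lambda>j. a + j) [0..<b]) = map f [0..<a] @ map (\<lambda>j. f (a + j)) [0..<b]"
    by simp
  also have "map f [0..<a] = bcs n a x"
    unfolding bcs_def
  proof (rule map_cong[OF refl])
    fix j assume "j \<in> set [0..<a]"
    then have "j < a" by simp
    then have "n * Suc j \<le> n * a" by (intro mult_le_mono2) simp
    then have le: "n * j + n \<le> length x" using lx by simp
    have "drop (n*j) (x @ y) = drop (n*j) x @ y" using le by simp
    moreover have "length (drop (n*j) x) \<ge> n" using le by simp
    ultimately show "f j = wc (take n (drop (n * j) x))" by (simp add: f_def)
  qed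
  also have "map (\<lambda>j. f (a + j)) [0..<b] = bcs n b y"
    unfolding bcs_def
  proof (rule map_cong[OF refl])
    fix j
    have "drop (n * (a + j)) (x @ y) = drop (n*j) y" using lx by (simp add: distrib_left)
    then show "f (a + j) = wc (take n (drop (n * j) y))" by (simp add: f_def)
  qed
  finally show ?thesis .
qed

lemma bcs_0[simp]: "bcs n 0 w = []" by (simp add: bcs_def)

lemma bcs_1: "length w = n \<Longrightarrow> bcs n 1 w = [wc w]" by (simp add: bcs_def)
lemma bcs_Suc0: "length w = n \<Longrightarrow> bcs n (Suc 0) w = [wc w]" by (simp add: bcs_def)

definition BS :: "nat \<Rightarrow> nat \<Rightarrow> tvec set" where
  "BS n k = {v \<in> qspace (n*k). \<forall>w\<in>qwords (n*k). \<forall>w'\<in>qwords (n*k). bcs n k w = bcs n k w' \<longrightarrow> v w = v w'}"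

lemma BS_qspace: "v \<in> BS n k \<Longrightarrow> v \<in> qspace (n*k)"
  unfolding BS_def by blast

lemma BS_eq: "v \<in> BS n k \<Longrightarrow> w \<in> qwords (n*k) \<Longrightarrow> w' \<in> qwords (n*k) \<Longrightarrow> bcs n k w = bcs n k w' \<Longrightarrow> v w = v w'"
  unfolding BS_def by blast

lemma BSI: "v \<in> qspace (n*k) \<Longrightarrow> (\<And>w w'. w \<in> qwords (n*k) \<Longrightarrow> w' \<in> qwords (n*k) \<Longrightarrow> bcs n k w = bcs n k w' \<Longrightarrow> v w = v w') \<Longrightarrow> v \<in> BS n k"
  unfolding BS_def by blast

lemma lsub_BS: "lsub (BS n k)"
  unfolding lsub_def
proof (intro allI impI)
  fix F :: "tvec set" and c assume F: "finite F" "F \<subseteq> BS n k"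
  show "(\<lambda>w. \<Sum>u\<in>F. c u * u w) \<in> BS n k"
  proof (rule BSI)
    show "(\<lambda>w. \<Sum>u\<in>F. c u * u w) \<in> qspace (n*k)"
    proof (rule qspaceI)
      fix w assume w: "w \<notin> qwords (n*k)"
      have "u w = 0" if "u \<in> F" for u
        using qspaceD[OF BS_qspace[OF subsetD[OF F(2) that]] w] .
      then show "(\<Sum>u\<in>F. c u * u w) = 0" by (auto intro!: sum.neutral)
    qed
    fix w w' assume ww: "w \<in> qwords (n*k)" "w' \<in> qwords (n*k)" "bcs n k w = bcs n k w'"
    have uw: "u w = u w'" if "u \<in> F" for u
      using BS_eq[OF subsetD[OF F(2) that] ww] .
    show "(\<Sum>u\<in>F. c u * u w) = (\<Sum>u\<in>F. c u * u w')" by (rule sum.cong[OF refl]) (simp add: uw)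
  qed
qed

lemma BS_1: "BS n 1 = CD n"
proof
  show "BS n 1 \<subseteq> CD n"
  proof
    fix v assume v: "v \<in> BS n 1"
    show "v \<in> CD n" unfolding CD_def
    proof (intro CollectI conjI ballI impI)
      show "v \<in> qspace n" using BS_qspace[OF v] by simp
      fix w w' assume "w \<in> qwords n" "w' \<in> qwords n" "wc w = wc w'"
      then show "v w = v w'" using BS_eq[OF v, of w w'] by (simp add: bcs_1 bcs_Suc0 qwords_length)
    qed
  qed
next
  show "CD n \<subseteq> BS n 1"
  proof
    fix v assume v: "v \<in> CD n"
    show "v \<in> BS n 1"
    proof (rule BSI)
      show "v \<in> qspace (n*1)" using CD_qspace[OF v] by simp
      fix w w' assume "w \<in> qwords (n*1)" "w' \<in> qwords (n*1)" "bcs n 1 w = bcs n 1 w'"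
      then show "v w = v w'" using CD_eq[OF v, of w w'] by (simp add: bcs_1 bcs_Suc0 qwords_length)
    qed
  qed
qed

lemma BS_0: "BS n 0 = qspace 0"
  by (auto simp: BS_def qwords_0)

lemma qdelta_BS: "qdelta n \<in> BS n 2"
proof (rule BSI)
  show "qdelta n \<in> qspace (n*2)" using qdelta_qspace by (simp add: mult.commute)
  fix w w' assume w: "w \<in> qwords (n*2)" "w' \<in> qwords (n*2)" "bcs n 2 w = bcs n 2 w'"
  have lw: "length w = n + n" "length w' = n + n" using w by (auto simp: qwords_length)
  have d: "w = take n w @ drop n w" "w' = take n w' @ drop n w'" by simp_all
  have b: "bcs n (1+1) w = bcs n 1 (take n w) @ bcs n 1 (drop n w)"
    using bcs_append[of "take n w" n 1 1 "drop n w"] lw by simp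
  have b': "bcs n (1+1) w' = bcs n 1 (take n w') @ bcs n 1 (drop n w')"
    using bcs_append[of "take n w'" n 1 1 "drop n w'"] lw by simp
  have "wc (take n w) = wc (take n w')" "wc (drop n w) = wc (drop n w')"
    using w(3) b b' lw by (simp_all add: bcs_1 bcs_Suc0 numeral_2_eq_2)
  moreover have "take n w \<in> qwords n" "drop n w \<in> qwords n" "take n w' \<in> qwords n" "drop n w' \<in> qwords n"
    using w by (auto simp: qwords_def dest: in_set_takeD in_set_dropD)
  moreover have "qdelta n w = (if take n w \<in> qwords n \<and> drop n w \<in> qwords n \<and> wc (take n w) + wc (drop n w) = n
            then complex_of_real (dval n (wc (take n w))) else 0)"
    using qdelta_app[of "take n w" n "drop n w"] lw by simp
  moreover have "qdelta n w' = (if take n w' \<in> qwords n \<and> drop n w' \<in> qwords n \<and> wc (take n w') + wc (drop n w') = n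
            then complex_of_real (dval n (wc (take n w'))) else 0)"
    using qdelta_app[of "take n w'" n "drop n w'"] lw by simp
  ultimately show "qdelta n w = qdelta n w'" by simp
qed

lemma split2:
  assumes "w \<in> qwords (a + b)"
  obtains A B where "A \<in> qwords a" "B \<in> qwords b" "w = A @ B"
proof -
  have "take a w \<in> qwords a" using assms by (rule qwords_take) simp
  moreover have "drop a w \<in> qwords b" using qwords_drop[OF assms, of a] by simp
  ultimately show ?thesis using that[of "take a w" "drop a w"] by simp
qed

lemma split3:
  assumes "w \<in> qwords (a + b + c)"
  obtains A Z B where "A \<in> qwords a" "Z \<in> qwords b" "B \<in> qwords c" "w = A @ Z @ B"
proof -
  obtain A R where AR: "A \<in> qwords a" "R \<in> qwords (b + c)" "w = A @ R"
    using split2[of w a "b + c"] assms by (metis add.assoc)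
  obtain Z B where "Z \<in> qwords b" "B \<in> qwords c" "R = Z @ B"
    using split2[OF AR(2)] by blast
  then show ?thesis using that AR by blast
qed

lemma qwords_app3: "A \<in> qwords a \<Longrightarrow> Z \<in> qwords b \<Longrightarrow> B \<in> qwords c \<Longrightarrow> A @ Z @ B \<in> qwords (a + b + c)"
  by (auto simp: qwords_def)

lemma qwords_app3_iff:
  "length A = a \<Longrightarrow> length Z = b \<Longrightarrow> A @ Z @ B \<in> qwords (a + b + c) \<longleftrightarrow> A \<in> qwords a \<and> Z \<in> qwords b \<and> B \<in> qwords c"
  by (auto simp: qwords_def)

lemma sum_qwords3:
  "(\<Sum>w\<in>qwords (a + b + c). f w) = (\<Sum>A\<in>qwords a. \<Sum>Z\<in>qwords b. \<Sum>B\<in>qwords c. f (A @ Z @ B))"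
proof -
  have "(\<Sum>w\<in>qwords (a + (b + c)). f w) = (\<Sum>A\<in>qwords a. \<Sum>R\<in>qwords (b + c). f (A @ R))"
    by (rule sum_qwords_add)
  also have "\<dots> = (\<Sum>A\<in>qwords a. \<Sum>Z\<in>qwords b. \<Sum>B\<in>qwords c. f (A @ Z @ B))"
    by (simp add: sum_qwords_add)
  finally show ?thesis by (simp add: add.assoc)
qed

lemma bcs3:
  assumes "length A = n * a" "length Z = n * b"
  shows "bcs n (a + b + c) (A @ Z @ B) = bcs n a A @ bcs n b Z @ bcs n c B"
  using assms bcs_append[of A n a "b + c" "Z @ B"] bcs_append[of Z n b c B]
  by (simp add: add.assoc)

lemma bcs_app_eq:
  assumes "length A = n * a" "length A' = n * a"
  shows "bcs n (a + c) (A @ B) = bcs n (a + c) (A' @ B') \<longleftrightarrow> bcs n a A = bcs n a A' \<and> bcs n c B = bcs n c B'"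
  using assms by (simp add: bcs_append)

lemma bcs3_eq:
  assumes "length A = n * a" "length Z = n * b" "length A' = n * a" "length Z' = n * b"
  shows "bcs n (a + b + c) (A @ Z @ B) = bcs n (a + b + c) (A' @ Z' @ B') \<longleftrightarrow>
         bcs n a A = bcs n a A' \<and> bcs n b Z = bcs n b Z' \<and> bcs n c B = bcs n c B'"
  using assms by (simp add: bcs3)

definition Pc :: "nat \<Rightarrow> nat \<Rightarrow> tvec \<Rightarrow> tvec" where
  "Pc n p v = (\<lambda>x. \<Sum>z\<in>qwords (2*n). qdelta n z * v (take (n*p) x @ z @ drop (n*p) x))"

definition Ins :: "nat \<Rightarrow> nat \<Rightarrow> tvec \<Rightarrow> tvec" where
  "Ins n p v = (\<lambda>w. qdelta n (take (2*n) (drop (n*p) w)) * v (take (n*p) w @ drop (n*p + 2*n) w))"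

definition Cr :: "nat \<Rightarrow> tvec \<Rightarrow> tvec \<Rightarrow> tvec" where
  "Cr n u v = (\<lambda>x. \<Sum>z\<in>qwords n. cnj (u z) * v (x @ z))"

lemma Pc_app: "length A = n * p \<Longrightarrow> Pc n p v (A @ B) = (\<Sum>z\<in>qwords (2*n). qdelta n z * v (A @ z @ B))"
  by (simp add: Pc_def)

lemma Ins_app: "length A = n * p \<Longrightarrow> length Z = 2 * n \<Longrightarrow> Ins n p v (A @ Z @ B) = qdelta n Z * v (A @ B)"
  by (simp add: Ins_def)

lemma Cr_app: "Cr n u v x = (\<Sum>z\<in>qwords n. cnj (u z) * v (x @ z))"
  by (simp add: Cr_def)

lemma Pc_qspace:
  assumes v: "v \<in> qspace (n * (K + 2))"
  shows "Pc n p v \<in> qspace (n * K)"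
proof (rule qspaceI)
  fix x assume x: "x \<notin> qwords (n*K)"
  have "v (take (n*p) x @ z @ drop (n*p) x) = 0" if z: "z \<in> qwords (2*n)" for z
  proof -
    have "take (n*p) x @ z @ drop (n*p) x \<notin> qwords (n * (K + 2))"
    proof
      assume a: "take (n*p) x @ z @ drop (n*p) x \<in> qwords (n * (K + 2))"
      then have "length x = n * K" using z by (auto simp: qwords_def algebra_simps)
      moreover have "set x \<subseteq> {0,1}"
      proof -
        have "set (take (n*p) x) \<subseteq> {0,1}" "set (drop (n*p) x) \<subseteq> {0,1}" using a by (auto simp: qwords_def)
        then show ?thesis using set_append[of "take (n*p) x" "drop (n*p) x"] by simp
      qed
      ultimately show False using x by (simp add: qwords_def)
    qed
    then show ?thesis using v by (rule qspaceD[rotated])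
  qed
  then show "Pc n p v x = 0" by (simp add: Pc_def)
qed

lemma Ins_qspace:
  assumes v: "v \<in> qspace (n * (p + r))"
  shows "Ins n p v \<in> qspace (n * (p + r + 2))"
proof (rule qspaceI)
  fix w assume w: "w \<notin> qwords (n * (p + r + 2))"
  show "Ins n p v w = 0"
  proof (cases "take (2*n) (drop (n*p) w) \<in> qwords (2*n)")
    case False
    then have "qdelta n (take (2*n) (drop (n*p) w)) = 0" using qdelta_qspace qspaceD by blast
    then show ?thesis by (simp add: Ins_def)
  next
    case True
    then have "length (take (2*n) (drop (n*p) w)) = 2*n" by (rule qwords_length)
    then have lw: "length w \<ge> n*p + 2*n" by (cases "n = 0") (auto simp: min_def split: if_splits)
    have "take (n*p) w @ drop (n*p + 2*n) w \<notin> qwords (n * (p + r))"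
    proof
      assume a: "take (n*p) w @ drop (n*p + 2*n) w \<in> qwords (n * (p + r))"
      have "w = take (n*p) w @ take (2*n) (drop (n*p) w) @ drop (n*p + 2*n) w"
        by (metis append.assoc append_take_drop_id drop_drop add.commute)
      moreover have "take (n*p) w @ take (2*n) (drop (n*p) w) @ drop (n*p + 2*n) w \<in> qwords (n * (p + r + 2))"
        using a True lw by (auto simp: qwords_def algebra_simps)
      ultimately show False using w by simp
    qed
    then show ?thesis using v by (simp add: Ins_def qspaceD)
  qed
qed

lemma Cr_qspace:
  assumes v: "v \<in> qspace (n * (K + 1))"
  shows "Cr n u v \<in> qspace (n * K)"
proof (rule qspaceI)
  fix x assume x: "x \<notin> qwords (n*K)"
  have "x @ z \<notin> qwords (n * (K + 1))" if "z \<in> qwords n" for z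
    using x that by (auto simp: qwords_def algebra_simps)
  then show "Cr n u v x = 0" using v by (simp add: Cr_def qspaceD)
qed

lemma tprod_BS:
  assumes x: "x \<in> BS n a" and y: "y \<in> BS n b"
  shows "qtprod (n*a) x y \<in> BS n (a + b)"
proof (rule BSI)
  show "qtprod (n*a) x y \<in> qspace (n * (a + b))"
  proof (rule qspaceI)
    fix w assume w: "w \<notin> qwords (n * (a + b))"
    show "qtprod (n*a) x y w = 0"
    proof (cases "take (n*a) w \<in> qwords (n*a)")
      case False then show ?thesis using BS_qspace[OF x] by (simp add: qtprod_def qspaceD)
    next
      case True
      have "drop (n*a) w \<notin> qwords (n*b)"
      proof
        assume "drop (n*a) w \<in> qwords (n*b)"
        from qwords_appendI[OF True this] have "take (n*a) w @ drop (n*a) w \<in> qwords (n*a + n*b)" .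
        then show False using w by (simp add: distrib_left)
      qed
      then show ?thesis using BS_qspace[OF y] by (simp add: qtprod_def qspaceD)
    qed
  qed
  fix w w' assume w: "w \<in> qwords (n * (a + b))" "w' \<in> qwords (n * (a + b))" "bcs n (a + b) w = bcs n (a + b) w'"
  have "w \<in> qwords (n*a + n*b)" using w(1) by (simp add: distrib_left)
  then obtain A B where AB: "A \<in> qwords (n*a)" "B \<in> qwords (n*b)" "w = A @ B"
    using split2 by blast
  have "w' \<in> qwords (n*a + n*b)" using w(2) by (simp add: distrib_left)
  then obtain A' B' where AB': "A' \<in> qwords (n*a)" "B' \<in> qwords (n*b)" "w' = A' @ B'"
    using split2 by blast
  have l: "length A = n*a" "length A' = n*a" using AB AB' by (simp_all add: qwords_length)
  have "bcs n a A = bcs n a A'" "bcs n b B = bcs n b B'"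
    using w(3) bcs_app_eq[OF l, of b B B'] AB(3) AB'(3) by simp_all
  then have "x A = x A'" "y B = y B'"
    using BS_eq[OF x AB(1) AB'(1)] BS_eq[OF y AB(2) AB'(2)] by simp_all
  then show "qtprod (n*a) x y w = qtprod (n*a) x y w'"
    using AB(3) AB'(3) l by (simp add: qtprod_app)
qed

lemma Pc_BS:
  assumes v: "v \<in> BS n (p + 2 + r)"
  shows "Pc n p v \<in> BS n (p + r)"
proof (rule BSI)
  show "Pc n p v \<in> qspace (n * (p + r))"
    using Pc_qspace[of v n "p + r" p] BS_qspace[OF v] by (simp add: algebra_simps)
  fix x x' assume x: "x \<in> qwords (n * (p + r))" "x' \<in> qwords (n * (p + r))" "bcs n (p + r) x = bcs n (p + r) x'"
  have "x \<in> qwords (n*p + n*r)" using x(1) by (simp add: distrib_left)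
  then obtain A B where AB: "A \<in> qwords (n*p)" "B \<in> qwords (n*r)" "x = A @ B"
    using split2 by blast
  have "x' \<in> qwords (n*p + n*r)" using x(2) by (simp add: distrib_left)
  then obtain A' B' where AB': "A' \<in> qwords (n*p)" "B' \<in> qwords (n*r)" "x' = A' @ B'"
    using split2 by blast
  have l: "length A = n*p" "length A' = n*p" using AB AB' by (simp_all add: qwords_length)
  have e: "bcs n p A = bcs n p A'" "bcs n r B = bcs n r B'"
    using x(3) bcs_app_eq[OF l, of r B B'] AB(3) AB'(3) by simp_all
  have "v (A @ z @ B) = v (A' @ z @ B')" if z: "z \<in> qwords (2*n)" for z
  proof (rule BS_eq[OF v])
    have lz: "length z = n * 2" using z by (simp add: qwords_length)
    have q: "n * (p + 2 + r) = n*p + n*2 + n*r" by (simp add: algebra_simps)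
    show "A @ z @ B \<in> qwords (n * (p + 2 + r))" unfolding q
      using AB z by (intro qwords_app3) (simp_all add: mult.commute)
    show "A' @ z @ B' \<in> qwords (n * (p + 2 + r))" unfolding q
      using AB' z by (intro qwords_app3) (simp_all add: mult.commute)
    show "bcs n (p + 2 + r) (A @ z @ B) = bcs n (p + 2 + r) (A' @ z @ B')"
      using bcs3_eq[of A n p z 2 A' z r B B'] l lz e by simp
  qed
  then show "Pc n p v x = Pc n p v x'"
    using AB(3) AB'(3) l by (simp add: Pc_app)
qed

lemma Ins_BS:
  assumes v: "v \<in> BS n (p + r)"
  shows "Ins n p v \<in> BS n (p + 2 + r)"
proof (rule BSI)
  show "Ins n p v \<in> qspace (n * (p + 2 + r))"
    using Ins_qspace[of v n p r] BS_qspace[OF v] by (simp add: algebra_simps)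
  have q: "n * (p + 2 + r) = n*p + n*2 + n*r" by (simp add: algebra_simps)
  fix w w' assume w: "w \<in> qwords (n * (p + 2 + r))" "w' \<in> qwords (n * (p + 2 + r))" "bcs n (p + 2 + r) w = bcs n (p + 2 + r) w'"
  obtain A Z B where AZB: "A \<in> qwords (n*p)" "Z \<in> qwords (n*2)" "B \<in> qwords (n*r)" "w = A @ Z @ B"
    using split3[of w "n*p" "n*2" "n*r"] w(1) unfolding q by blast
  obtain A' Z' B' where AZB': "A' \<in> qwords (n*p)" "Z' \<in> qwords (n*2)" "B' \<in> qwords (n*r)" "w' = A' @ Z' @ B'"
    using split3[of w' "n*p" "n*2" "n*r"] w(2) unfolding q by blast
  have l: "length A = n*p" "length A' = n*p" "length Z = n*2" "length Z' = n*2"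
    using AZB AZB' by (simp_all add: qwords_length)
  have e: "bcs n p A = bcs n p A'" "bcs n 2 Z = bcs n 2 Z'" "bcs n r B = bcs n r B'"
    using w(3) bcs3_eq[of A n p Z 2 A' Z' r B B'] l AZB(4) AZB'(4) by simp_all
  have "qdelta n Z = qdelta n Z'"
    using BS_eq[OF qdelta_BS AZB(2) AZB'(2) e(2)] .
  moreover have "v (A @ B) = v (A' @ B')"
  proof (rule BS_eq[OF v])
    show "A @ B \<in> qwords (n * (p + r))" using AZB by (simp add: distrib_left qwords_appendI)
    show "A' @ B' \<in> qwords (n * (p + r))" using AZB' by (simp add: distrib_left qwords_appendI)
    show "bcs n (p + r) (A @ B) = bcs n (p + r) (A' @ B')" using bcs_app_eq[of A n p A' r B B'] l e by simp
  qed
  ultimately show "Ins n p v w = Ins n p v w'"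
    using AZB(4) AZB'(4) l by (simp add: Ins_app mult.commute)
qed

lemma Cr_BS:
  assumes v: "v \<in> BS n (K + 1)"
  shows "Cr n u v \<in> BS n K"
proof (rule BSI)
  show "Cr n u v \<in> qspace (n * K)" using Cr_qspace BS_qspace[OF v] by blast
  fix x x' assume x: "x \<in> qwords (n * K)" "x' \<in> qwords (n * K)" "bcs n K x = bcs n K x'"
  have l: "length x = n * K" "length x' = n * K" using x by (simp_all add: qwords_length)
  have "v (x @ z) = v (x' @ z)" if z: "z \<in> qwords n" for z
  proof (rule BS_eq[OF v])
    show "x @ z \<in> qwords (n * (K + 1))" using x z qwords_appendI[of x "n*K" z n] by (simp add: algebra_simps)
    show "x' @ z \<in> qwords (n * (K + 1))" using x z qwords_appendI[of x' "n*K" z n] by (simp add: algebra_simps)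
    show "bcs n (K + 1) (x @ z) = bcs n (K + 1) (x' @ z)" using bcs_append[OF l(1), of 1 z] bcs_append[OF l(2), of 1 z] x(3) by simp
  qed
  then show "Cr n u v x = Cr n u v x'" by (simp add: Cr_def)
qed

lemma qdelta_sq_sum: "(\<Sum>z\<in>qwords (2*n). qdelta n z * qdelta n z) = 1"
  using qdelta_norm[of n] by (simp add: qinner_def)

lemma Ins_adj:
  "qinner (n*(p+2+r)) (Ins n p u) v = qinner (n*(p+r)) u (Pc n p v)"
proof -
  have q1: "n*(p+2+r) = n*p + 2*n + n*r" by (simp add: algebra_simps)
  have q2: "n*(p+r) = n*p + n*r" by (simp add: algebra_simps)
  have "qinner (n*(p+2+r)) (Ins n p u) v
      = (\<Sum>A\<in>qwords (n*p). \<Sum>Z\<in>qwords (2*n). \<Sum>B\<in>qwords (n*r). cnj (Ins n p u (A @ Z @ B)) * v (A @ Z @ B))"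
    unfolding qinner_def q1 by (rule sum_qwords3)
  also have "\<dots> = (\<Sum>A\<in>qwords (n*p). \<Sum>Z\<in>qwords (2*n). \<Sum>B\<in>qwords (n*r). cnj (u (A @ B)) * (qdelta n Z * v (A @ Z @ B)))"
    by (intro sum.cong[OF refl]) (simp add: Ins_app qwords_length)
  also have "\<dots> = (\<Sum>A\<in>qwords (n*p). \<Sum>B\<in>qwords (n*r). \<Sum>Z\<in>qwords (2*n). cnj (u (A @ B)) * (qdelta n Z * v (A @ Z @ B)))"
    by (rule sum.cong[OF refl], rule sum.swap)
  also have "\<dots> = (\<Sum>A\<in>qwords (n*p). \<Sum>B\<in>qwords (n*r). cnj (u (A @ B)) * Pc n p v (A @ B))"
    by (intro sum.cong[OF refl]) (simp add: Pc_app qwords_length sum_distrib_left)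
  also have "\<dots> = qinner (n*(p+r)) u (Pc n p v)"
    unfolding qinner_def q2 by (rule sum_qwords_add[symmetric])
  finally show ?thesis .
qed

lemma Ins_adj':
  "qinner (n*(p+2+r)) v (Ins n p u) = qinner (n*(p+r)) (Pc n p v) u"
  using Ins_adj[of n p r u v] by (metis qinner_cnj)

lemma Pc_Ins_same:
  assumes x: "x \<in> qwords (n*(p+r))"
  shows "Pc n p (Ins n p v) x = v x"
proof -
  have e: "n*(p+r) = n*p + n*r" by (simp add: algebra_simps)
  from x have "x \<in> qwords (n*p + n*r)" by (simp only: e)
  then obtain A B where AB: "A \<in> qwords (n*p)" "B \<in> qwords (n*r)" "x = A @ B"
    by (rule split2)
  have lA: "length A = n*p" using AB by (simp add: qwords_length)
  have "Pc n p (Ins n p v) x = (\<Sum>z\<in>qwords (2*n). qdelta n z * Ins n p v (A @ z @ B))"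
    using AB Pc_app[OF lA] by simp
  also have "\<dots> = (\<Sum>z\<in>qwords (2*n). qdelta n z * qdelta n z * v (A @ B))"
  proof (rule sum.cong[OF refl])
    fix z assume z: "z \<in> qwords (2*n)"
    then have "length z = 2*n" by (rule qwords_length)
    from Ins_app[OF lA this, of v B] show "qdelta n z * Ins n p v (A @ z @ B) = qdelta n z * qdelta n z * v (A @ B)"
      by simp
  qed
  also have "\<dots> = (\<Sum>z\<in>qwords (2*n). qdelta n z * qdelta n z) * v (A @ B)"
    by (rule sum_distrib_right[symmetric])
  also have "\<dots> = v x" using AB by (simp add: qdelta_sq_sum)
  finally show ?thesis .
qed

lemma split4:
  assumes "w \<in> qwords (a + b + c + d)"
  obtains A Y Z B where "A \<in> qwords a" "Y \<in> qwords b" "Z \<in> qwords c" "B \<in> qwords d" "w = A @ Y @ Z @ B"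
proof -
  obtain A R where AR: "A \<in> qwords a" "R \<in> qwords (b + c + d)" "w = A @ R"
    using split2[of w a "b + c + d"] assms by (metis add.assoc)
  obtain Y Z B where "Y \<in> qwords b" "Z \<in> qwords c" "B \<in> qwords d" "R = Y @ Z @ B"
    using split3[OF AR(2)] by blast
  then show ?thesis using that AR by blast
qed

lemma Pc_Ins_far1:
  assumes x: "x \<in> qwords (n*(p+t+2+r))"
  shows "Pc n p (Ins n (p+2+t) v) x = Ins n (p+t) (Pc n p v) x"
proof -
  have e: "n*(p+t+2+r) = n*p + n*t + 2*n + n*r" by (simp add: algebra_simps)
  from x have "x \<in> qwords (n*p + n*t + 2*n + n*r)" by (simp only: e)
  then obtain A Y Z B where w: "A \<in> qwords (n*p)" "Y \<in> qwords (n*t)" "Z \<in> qwords (2*n)" "B \<in> qwords (n*r)" "x = A @ Y @ Z @ B"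
    by (rule split4)
  have l: "length A = n*p" "length Y = n*t" "length Z = 2*n" using w by (simp_all add: qwords_length)
  have "Pc n p (Ins n (p+2+t) v) x = (\<Sum>z\<in>qwords (2*n). qdelta n z * Ins n (p+2+t) v ((A @ z @ Y) @ Z @ B))"
    using w l Pc_app[of A n p "Ins n (p+2+t) v" "Y @ Z @ B"] by simp
  also have "\<dots> = (\<Sum>z\<in>qwords (2*n). qdelta n z * (qdelta n Z * v (A @ z @ Y @ B)))"
  proof (rule sum.cong[OF refl])
    fix z assume z: "z \<in> qwords (2*n)"
    have "length (A @ z @ Y) = n*(p+2+t)" using l z by (simp add: qwords_length algebra_simps)
    from Ins_app[OF this l(3), of v B] show "qdelta n z * Ins n (p+2+t) v ((A @ z @ Y) @ Z @ B) = qdelta n z * (qdelta n Z * v (A @ z @ Y @ B))"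
      by simp
  qed
  also have "\<dots> = qdelta n Z * (\<Sum>z\<in>qwords (2*n). qdelta n z * v (A @ z @ Y @ B))"
    by (simp add: sum_distrib_left ac_simps)
  also have "\<dots> = qdelta n Z * Pc n p v (A @ Y @ B)"
    using l Pc_app[of A n p v "Y @ B"] by simp
  also have "\<dots> = Ins n (p+t) (Pc n p v) ((A @ Y) @ Z @ B)"
  proof -
    have "length (A @ Y) = n*(p+t)" using l by (simp add: algebra_simps)
    from Ins_app[OF this l(3), of "Pc n p v" B] show ?thesis by simp
  qed
  finally show ?thesis using w by simp
qed

lemma Pc_Ins_far2:
  assumes x: "x \<in> qwords (n*(j+2+t+r))"
  shows "Pc n (j+2+t) (Ins n j v) x = Ins n j (Pc n (j+t) v) x"
proof -
  have e: "n*(j+2+t+r) = n*j + 2*n + n*t + n*r" by (simp add: algebra_simps)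
  from x have "x \<in> qwords (n*j + 2*n + n*t + n*r)" by (simp only: e)
  then obtain A Z Y B where w: "A \<in> qwords (n*j)" "Z \<in> qwords (2*n)" "Y \<in> qwords (n*t)" "B \<in> qwords (n*r)" "x = A @ Z @ Y @ B"
    by (rule split4)
  have l: "length A = n*j" "length Y = n*t" "length Z = 2*n" using w by (simp_all add: qwords_length)
  have l2: "length (A @ Z @ Y) = n*(j+2+t)" using l by (simp add: algebra_simps)
  have "Pc n (j+2+t) (Ins n j v) x = (\<Sum>z\<in>qwords (2*n). qdelta n z * Ins n j v ((A @ Z @ Y) @ z @ B))"
    using w Pc_app[OF l2, of "Ins n j v" B] by simp
  also have "\<dots> = (\<Sum>z\<in>qwords (2*n). qdelta n z * (qdelta n Z * v (A @ Y @ z @ B)))"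
  proof (rule sum.cong[OF refl])
    fix z assume z: "z \<in> qwords (2*n)"
    from Ins_app[OF l(1) l(3), of v "Y @ z @ B"] show "qdelta n z * Ins n j v ((A @ Z @ Y) @ z @ B) = qdelta n z * (qdelta n Z * v (A @ Y @ z @ B))"
      by simp
  qed
  also have "\<dots> = qdelta n Z * (\<Sum>z\<in>qwords (2*n). qdelta n z * v (A @ Y @ z @ B))"
    by (simp add: sum_distrib_left ac_simps)
  also have "\<dots> = qdelta n Z * Pc n (j+t) v (A @ Y @ B)"
  proof -
    have "length (A @ Y) = n*(j+t)" using l by (simp add: algebra_simps)
    from Pc_app[OF this, of v B] show ?thesis by simp
  qed
  also have "\<dots> = Ins n j (Pc n (j+t) v) (A @ Z @ Y @ B)"
    using Ins_app[OF l(1) l(3), of "Pc n (j+t) v" "Y @ B"] by simp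
  finally show ?thesis using w by simp
qed

lemma Kf_sym: "Kf n a b = Kf n b a"
  by (simp add: Kf_def)

lemma BS_block_cd:
  assumes v: "v \<in> BS n (p + 1 + r)" and A: "A \<in> qwords (n*p)" and B: "B \<in> qwords (n*r)"
    and z: "z \<in> qwords n" and a: "a \<in> qwords n" and e: "wc z = wc a"
  shows "v (A @ z @ B) = v (A @ a @ B)"
proof (rule BS_eq[OF v])
  have q: "n*(p+1+r) = n*p + n + n*r" by (simp add: algebra_simps)
  show "A @ z @ B \<in> qwords (n*(p+1+r))" unfolding q using A z B by (rule qwords_app3)
  show "A @ a @ B \<in> qwords (n*(p+1+r))" unfolding q using A a B by (rule qwords_app3)
  have l: "length A = n*p" "length z = n*1" "length a = n*1" using A z a by (simp_all add: qwords_length)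
  show "bcs n (p+1+r) (A @ z @ B) = bcs n (p+1+r) (A @ a @ B)"
    using bcs3[OF l(1) l(2), of r B] bcs3[OF l(1) l(3), of r B] l e by (simp add: bcs_1 bcs_Suc0)
qed

lemma Pc_Ins_adj1:
  assumes v: "v \<in> BS n (p + 1 + r)" and x: "x \<in> qwords (n*(p+1+r))"
  shows "Pc n p (Ins n (p+1) v) x = complex_of_real ((-1)^n / real (n+1)) * v x"
proof -
  have e: "n*(p+1+r) = n*p + n + n*r" by (simp add: algebra_simps)
  from x have "x \<in> qwords (n*p + n + n*r)" by (simp only: e)
  then obtain A a B where w: "A \<in> qwords (n*p)" "a \<in> qwords n" "B \<in> qwords (n*r)" "x = A @ a @ B"
    by (rule split3)
  have l: "length A = n*p" "length a = n" using w by (simp_all add: qwords_length)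
  have "Pc n p (Ins n (p+1) v) x = (\<Sum>z\<in>qwords (n + n). qdelta n z * Ins n (p+1) v (A @ z @ a @ B))"
    using w Pc_app[OF l(1), of "Ins n (p+1) v" "a @ B"] by (simp add: mult_2)
  also have "\<dots> = (\<Sum>z1\<in>qwords n. \<Sum>z2\<in>qwords n. qdelta n (z1 @ z2) * Ins n (p+1) v (A @ (z1 @ z2) @ a @ B))"
    by (rule sum_qwords_add)
  also have "\<dots> = (\<Sum>z1\<in>qwords n. \<Sum>z2\<in>qwords n. qdelta n (z1 @ z2) * (qdelta n (z2 @ a) * v (A @ z1 @ B)))"
  proof (rule sum.cong[OF refl], rule sum.cong[OF refl])
    fix z1 z2 assume z: "z1 \<in> qwords n" "z2 \<in> qwords n"
    have l1: "length (A @ z1) = n*(p+1)" using l z by (simp add: qwords_length)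
    have l2: "length (z2 @ a) = 2*n" using l z by (simp add: qwords_length)
    from Ins_app[OF l1 l2, of v B] show "qdelta n (z1 @ z2) * Ins n (p+1) v (A @ (z1 @ z2) @ a @ B) = qdelta n (z1 @ z2) * (qdelta n (z2 @ a) * v (A @ z1 @ B))"
      by simp
  qed
  also have "\<dots> = (\<Sum>z1\<in>qwords n. (\<Sum>z2\<in>qwords n. qdelta n (z1 @ z2) * qdelta n (z2 @ a)) * v (A @ z1 @ B))"
    by (rule sum.cong[OF refl]) (simp only: sum_distrib_right mult.assoc)
  also have "\<dots> = (\<Sum>z1\<in>qwords n. complex_of_real ((-1)^n / real (n+1)) * (Kf n z1 a * v (A @ z1 @ B)))"
    using w by (intro sum.cong[OF refl]) (simp add: qdelta_snake)
  also have "\<dots> = complex_of_real ((-1)^n / real (n+1)) * (\<Sum>z1\<in>qwords n. Kf n z1 a * v (A @ z1 @ B))"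
    by (simp add: sum_distrib_left)
  also have "(\<Sum>z1\<in>qwords n. Kf n z1 a * v (A @ z1 @ B)) = v (A @ a @ B)"
    using Kf_reproduce[OF w(2), of "\<lambda>z. v (A @ z @ B)"] BS_block_cd[OF v w(1) w(3) _ w(2)] by simp
  finally show ?thesis using w by simp
qed

lemma Pc_Ins_adj2:
  assumes v: "v \<in> BS n (p + 1 + r)" and x: "x \<in> qwords (n*(p+1+r))"
  shows "Pc n (p+1) (Ins n p v) x = complex_of_real ((-1)^n / real (n+1)) * v x"
proof -
  have e: "n*(p+1+r) = n*p + n + n*r" by (simp add: algebra_simps)
  from x have "x \<in> qwords (n*p + n + n*r)" by (simp only: e)
  then obtain A a B where w: "A \<in> qwords (n*p)" "a \<in> qwords n" "B \<in> qwords (n*r)" "x = A @ a @ B"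
    by (rule split3)
  have l: "length A = n*p" "length a = n" using w by (simp_all add: qwords_length)
  have l0: "length (A @ a) = n*(p+1)" using l by simp
  have "Pc n (p+1) (Ins n p v) x = (\<Sum>z\<in>qwords (n + n). qdelta n z * Ins n p v ((A @ a) @ z @ B))"
    using w Pc_app[OF l0, of "Ins n p v" B] by (simp add: mult_2)
  also have "\<dots> = (\<Sum>z1\<in>qwords n. \<Sum>z2\<in>qwords n. qdelta n (z1 @ z2) * Ins n p v ((A @ a) @ (z1 @ z2) @ B))"
    by (rule sum_qwords_add)
  also have "\<dots> = (\<Sum>z1\<in>qwords n. \<Sum>z2\<in>qwords n. qdelta n (z1 @ z2) * (qdelta n (a @ z1) * v (A @ z2 @ B)))"
  proof (rule sum.cong[OF refl], rule sum.cong[OF refl])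
    fix z1 z2 assume z: "z1 \<in> qwords n" "z2 \<in> qwords n"
    have l2: "length (a @ z1) = 2*n" using l z by (simp add: qwords_length)
    from Ins_app[OF l(1) l2, of v "z2 @ B"] show "qdelta n (z1 @ z2) * Ins n p v ((A @ a) @ (z1 @ z2) @ B) = qdelta n (z1 @ z2) * (qdelta n (a @ z1) * v (A @ z2 @ B))"
      by simp
  qed
  also have "\<dots> = (\<Sum>z2\<in>qwords n. \<Sum>z1\<in>qwords n. qdelta n (a @ z1) * qdelta n (z1 @ z2) * v (A @ z2 @ B))"
    by (subst sum.swap) (simp add: ac_simps)
  also have "\<dots> = (\<Sum>z2\<in>qwords n. (\<Sum>z1\<in>qwords n. qdelta n (a @ z1) * qdelta n (z1 @ z2)) * v (A @ z2 @ B))"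
    by (rule sum.cong[OF refl]) (simp only: sum_distrib_right)
  also have "\<dots> = (\<Sum>z2\<in>qwords n. complex_of_real ((-1)^n / real (n+1)) * (Kf n z2 a * v (A @ z2 @ B)))"
    using w by (intro sum.cong[OF refl]) (simp add: qdelta_snake Kf_sym)
  also have "\<dots> = complex_of_real ((-1)^n / real (n+1)) * (\<Sum>z2\<in>qwords n. Kf n z2 a * v (A @ z2 @ B))"
    by (simp add: sum_distrib_left)
  also have "(\<Sum>z2\<in>qwords n. Kf n z2 a * v (A @ z2 @ B)) = v (A @ a @ B)"
    using Kf_reproduce[OF w(2), of "\<lambda>z. v (A @ z @ B)"] BS_block_cd[OF v w(1) w(3) _ w(2)] by simp
  finally show ?thesis using w by simp
qed

lemma Pc_tprod:
  assumes A: "length A = n*p" and B: "length B = n*r"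
  shows "Pc n p (qtprod (n*(p+2+r)) f l) (A @ B @ c) = Pc n p f (A @ B) * l c"
proof -
  have "Pc n p (qtprod (n*(p+2+r)) f l) (A @ B @ c) = (\<Sum>z\<in>qwords (2*n). qdelta n z * qtprod (n*(p+2+r)) f l ((A @ z @ B) @ c))"
    using Pc_app[OF A, of "qtprod (n*(p+2+r)) f l" "B @ c"] by simp
  also have "\<dots> = (\<Sum>z\<in>qwords (2*n). qdelta n z * f (A @ z @ B) * l c)"
  proof (rule sum.cong[OF refl])
    fix z assume z: "z \<in> qwords (2*n)"
    have "length (A @ z @ B) = n*(p+2+r)" using A B z by (simp add: qwords_length algebra_simps)
    from qtprod_app[OF this, of f l c] show "qdelta n z * qtprod (n*(p+2+r)) f l ((A @ z @ B) @ c) = qdelta n z * f (A @ z @ B) * l c"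
      by simp
  qed
  also have "\<dots> = (\<Sum>z\<in>qwords (2*n). qdelta n z * f (A @ z @ B)) * l c"
    by (rule sum_distrib_right[symmetric])
  also have "\<dots> = Pc n p f (A @ B) * l c"
    using Pc_app[OF A, of f B] by simp
  finally show ?thesis .
qed

lemma Pc_Cr:
  assumes A: "length A = n*p"
  shows "Pc n p (Cr n u v) (A @ B) = Cr n u (Pc n p v) (A @ B)"
proof -
  have "Pc n p (Cr n u v) (A @ B) = (\<Sum>z\<in>qwords (2*n). \<Sum>z'\<in>qwords n. qdelta n z * (cnj (u z') * v (A @ z @ B @ z')))"
    using A by (simp add: Pc_app Cr_def sum_distrib_left)
  also have "\<dots> = (\<Sum>z'\<in>qwords n. \<Sum>z\<in>qwords (2*n). qdelta n z * (cnj (u z') * v (A @ z @ B @ z')))"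
    by (rule sum.swap)
  also have "\<dots> = Cr n u (Pc n p v) (A @ B)"
    using A Pc_app[of A n p v] by (simp add: Cr_def sum_distrib_left ac_simps)
  finally show ?thesis .
qed

lemma Pc_Pc:
  assumes A: "length A = n*p" and Y: "length Y = n*t"
  shows "Pc n p (Pc n (p+2+t) v) (A @ Y @ B) = Pc n (p+t) (Pc n p v) (A @ Y @ B)"
proof -
  have "Pc n p (Pc n (p+2+t) v) (A @ Y @ B) = (\<Sum>z\<in>qwords (2*n). qdelta n z * Pc n (p+2+t) v ((A @ z @ Y) @ B))"
    using Pc_app[OF A, of "Pc n (p+2+t) v" "Y @ B"] by simp
  also have "\<dots> = (\<Sum>z\<in>qwords (2*n). \<Sum>z'\<in>qwords (2*n). qdelta n z * (qdelta n z' * v (A @ z @ Y @ z' @ B)))"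
  proof (rule sum.cong[OF refl])
    fix z assume z: "z \<in> qwords (2*n)"
    have "length (A @ z @ Y) = n*(p+2+t)" using A Y z by (simp add: qwords_length algebra_simps)
    from Pc_app[OF this, of v B] show "qdelta n z * Pc n (p+2+t) v ((A @ z @ Y) @ B) = (\<Sum>z'\<in>qwords (2*n). qdelta n z * (qdelta n z' * v (A @ z @ Y @ z' @ B)))"
      by (simp add: sum_distrib_left)
  qed
  also have "\<dots> = (\<Sum>z'\<in>qwords (2*n). \<Sum>z\<in>qwords (2*n). qdelta n z' * (qdelta n z * v (A @ z @ Y @ z' @ B)))"
    by (subst sum.swap) (simp add: ac_simps)
  also have "\<dots> = (\<Sum>z'\<in>qwords (2*n). qdelta n z' * Pc n p v (A @ Y @ z' @ B))"
    using Pc_app[OF A, of v] by (simp add: sum_distrib_left)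
  also have "\<dots> = Pc n (p+t) (Pc n p v) ((A @ Y) @ B)"
  proof -
    have "length (A @ Y) = n*(p+t)" using A Y by (simp add: algebra_simps)
    from Pc_app[OF this, of "Pc n p v" B] show ?thesis by simp
  qed
  finally show ?thesis by simp
qed

lemma Cr_adj:
  "qinner (n*K + n) (qtprod (n*K) f u) v = qinner (n*K) f (Cr n u v)"
proof -
  have "qinner (n*K + n) (qtprod (n*K) f u) v = (\<Sum>x\<in>qwords (n*K). \<Sum>z\<in>qwords n. cnj (f x * u z) * v (x @ z))"
    unfolding qinner_def sum_qwords_add by (intro sum.cong[OF refl]) (simp add: qtprod_app qwords_length)
  also have "\<dots> = qinner (n*K) f (Cr n u v)"
    by (simp add: qinner_def Cr_def sum_distrib_left ac_simps)
  finally show ?thesis .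
qed

lemma tprod_qspace: "f \<in> qspace a \<Longrightarrow> g \<in> qspace b \<Longrightarrow> qtprod a f g \<in> qspace (a + b)"
proof (rule qspaceI)
  fix w assume f: "f \<in> qspace a" and g: "g \<in> qspace b" and w: "w \<notin> qwords (a + b)"
  show "qtprod a f g w = 0"
  proof (cases "take a w \<in> qwords a")
    case False then show ?thesis using f by (simp add: qtprod_def qspaceD)
  next
    case True
    have "drop a w \<notin> qwords b"
    proof
      assume "drop a w \<in> qwords b"
      from qwords_appendI[OF True this] w show False by simp
    qed
    then show ?thesis using g by (simp add: qtprod_def qspaceD)
  qed
qed

lemma decomp:
  assumes v: "v \<in> BS n (K + 1)"
  shows "v = (\<lambda>w. \<Sum>j\<le>n. qtprod (n*K) (Cr n (ek n j) v) (ek n j) w)"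
proof (rule qspace_eqI[where N="n*K + n"])
  show "v \<in> qspace (n*K + n)" using BS_qspace[OF v] by (simp add: algebra_simps)
  have "(\<lambda>w. \<Sum>j\<le>n. 1 * qtprod (n*K) (Cr n (ek n j) v) (ek n j) w) \<in> qspace (n*K + n)"
  proof (rule lsub_sum[OF lsub_qspace])
    fix j
    have "Cr n (ek n j) v \<in> qspace (n*K)" using Cr_qspace BS_qspace[OF v] by blast
    then show "qtprod (n*K) (Cr n (ek n j) v) (ek n j) \<in> qspace (n*K + n)"
      using ek_qspace by (rule tprod_qspace)
  qed simp
  then show "(\<lambda>w. \<Sum>j\<le>n. qtprod (n*K) (Cr n (ek n j) v) (ek n j) w) \<in> qspace (n*K + n)" by simp
  fix w assume w: "w \<in> qwords (n*K + n)"
  then obtain x a where xa: "x \<in> qwords (n*K)" "a \<in> qwords n" "w = x @ a" by (rule split2)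
  have lx: "length x = n*K" using xa by (simp add: qwords_length)
  have "(\<Sum>j\<le>n. qtprod (n*K) (Cr n (ek n j) v) (ek n j) w) = (\<Sum>j\<le>n. \<Sum>z\<in>qwords n. (ek n j z * ek n j a) * v (x @ z))"
    using xa lx by (simp add: qtprod_app Cr_def ek_real sum_distrib_left sum_distrib_right ac_simps)
  also have "\<dots> = (\<Sum>z\<in>qwords n. \<Sum>j\<le>n. (ek n j z * ek n j a) * v (x @ z))"
    by (rule sum.swap)
  also have "\<dots> = (\<Sum>z\<in>qwords n. (\<Sum>j\<le>n. ek n j z * ek n j a) * v (x @ z))"
    by (rule sum.cong[OF refl]) (rule sum_distrib_right[symmetric])
  also have "\<dots> = (\<Sum>z\<in>qwords n. Kf n z a * v (x @ z))"
    using xa by (intro sum.cong[OF refl]) (simp add: ek_kernel)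
  also have "\<dots> = v (x @ a)"
  proof (rule Kf_reproduce[OF xa(2)])
    fix z assume z: "z \<in> qwords n" "wc z = wc a"
    have "v (x @ z @ []) = v (x @ a @ [])"
      using BS_block_cd[of v n K 0 x "[]" z a] v xa z by (simp add: qwords_0)
    then show "v (x @ z) = v (x @ a)" by simp
  qed
  finally show "v w = (\<Sum>j\<le>n. qtprod (n*K) (Cr n (ek n j) v) (ek n j) w)" using xa by simp
qed

lemma Qgen:
  assumes a: "a \<in> qspace (n*p)"
  shows "qtprod (n*(Suc p + 1)) (qtprod (n*(Suc p - 1)) a (\<lambda>w. c * qdelta n w)) b = (\<lambda>w. c * Ins n p (qtprod (n*p) a b) w)"
proof
  fix w
  show "qtprod (n*(Suc p + 1)) (qtprod (n*(Suc p - 1)) a (\<lambda>w. c * qdelta n w)) b w = c * Ins n p (qtprod (n*p) a b) w"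
  proof (cases "length w \<ge> n*p")
    case False
    then have "take (n*p) w \<notin> qwords (n*p)" "w \<notin> qwords (n*p)" by (auto simp: qwords_def)
    moreover have "take (n*p) (take (n*(p+2)) w) = w" using False by (simp add: min_def)
    ultimately show ?thesis using a False by (simp add: qtprod_def Ins_def qspaceD)
  next
    case True
    define A R where "A = take (n*p) w" "R = drop (n*p) w"
    have w: "w = A @ R" and lA: "length A = n*p" using True by (simp_all add: A_R_def)
    have e: "n * (Suc p + 1) = n*p + 2*n" by (simp add: algebra_simps)
    have t1: "take (n*p + 2*n) (A @ R) = A @ take (2*n) R" using lA by simp
    have t2: "drop (n*p + 2*n) (A @ R) = drop (2*n) R" using lA by simp
    show ?thesis unfolding w e using lA t1 t2 by (simp add: qtprod_def Ins_def)
  qed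
qed

lemma qunit_qspace: "qunit \<in> qspace 0"
  by (auto simp: qunit_def qbasis_def qspace_def qwords_0)

lemma qspan_qunit: "qspan {qunit} = qspace 0"
proof
  show "qspan {qunit} \<subseteq> qspace 0"
    using qunit_qspace by (intro qspan_sub lsub_qspace) auto
  show "qspace 0 \<subseteq> qspan {qunit}"
  proof
    fix v assume v: "v \<in> qspace 0"
    have "v = (\<lambda>w. \<Sum>u\<in>{qunit}. (\<lambda>_. v []) u * u w)"
    proof
      fix w show "v w = (\<Sum>u\<in>{qunit}. (\<lambda>_. v []) u * u w)"
        using qspaceD[OF v, of w] by (cases "w = []") (auto simp: qunit_def qbasis_def qwords_0)
    qed
    then show "v \<in> qspan {qunit}" unfolding qspan_def
      by (intro CollectI exI[of _ "{qunit}"] exI[of _ "\<lambda>_. v []"]) simp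
  qed
qed

lemma qL_BS1: "qL n = BS n 1"
  by (simp only: qL_CD BS_1)

lemma ek_qL: "ek n j \<in> qL n"
  by (simp add: qL_CD ek_CD)

lemma qLpow_BS: "qLpow n k = BS n k"
proof (induction k)
  case 0
  then show ?case by (simp add: qspan_qunit BS_0)
next
  case (Suc k)
  have gen: "{qtprod (n*k) x y | x y. x \<in> BS n k \<and> y \<in> qL n} \<subseteq> BS n (Suc k)"
  proof
    fix u assume "u \<in> {qtprod (n*k) x y | x y. x \<in> BS n k \<and> y \<in> qL n}"
    then obtain x y where u: "u = qtprod (n*k) x y" "x \<in> BS n k" "y \<in> BS n 1" by (auto simp: qL_BS1)
    show "u \<in> BS n (Suc k)" using tprod_BS[OF u(2) u(3)] u(1) by simp
  qed
  show ?case
  proof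
    show "qLpow n (Suc k) \<subseteq> BS n (Suc k)"
      using qspan_sub[OF gen lsub_BS] Suc.IH by (simp add: qtens_def)
    show "BS n (Suc k) \<subseteq> qLpow n (Suc k)"
    proof
      fix v assume v: "v \<in> BS n (Suc k)"
      then have v': "v \<in> BS n (k + 1)" by simp
      have "(\<lambda>w. \<Sum>j\<le>n. qtprod (n*k) (Cr n (ek n j) v) (ek n j) w) \<in> qspan {qtprod (n*k) x y | x y. x \<in> BS n k \<and> y \<in> qL n}"
      proof (rule lsub_sum1[OF lsub_qspan])
        fix j
        show "qtprod (n*k) (Cr n (ek n j) v) (ek n j) \<in> qspan {qtprod (n*k) x y | x y. x \<in> BS n k \<and> y \<in> qL n}"
          by (rule qspan_base, rule CollectI, rule exI[of _ "Cr n (ek n j) v"], rule exI[of _ "ek n j"])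
             (simp add: Cr_BS[OF v'] ek_qL)
      qed simp
      then show "v \<in> qLpow n (Suc k)"
        using decomp[OF v'] Suc.IH by (simp add: qtens_def)
    qed
  qed
qed

section \<open>Characterisation of E\<close>

definition ES :: "nat \<Rightarrow> nat \<Rightarrow> tvec set" where
  "ES n M = {v \<in> BS n M. \<forall>p. p + 2 \<le> M \<longrightarrow> Pc n p v = (\<lambda>x. 0)}"

lemma ES_BS: "v \<in> ES n M \<Longrightarrow> v \<in> BS n M"
  by (simp add: ES_def)

lemma ES_Pc: "v \<in> ES n M \<Longrightarrow> p + 2 \<le> M \<Longrightarrow> Pc n p v = (\<lambda>x. 0)"
  by (simp add: ES_def)

lemma Pc_lin: "Pc n p (\<lambda>w. \<Sum>u\<in>F. c u * u w) = (\<lambda>x. \<Sum>u\<in>F. c u * Pc n p u x)"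
  unfolding Pc_def
proof (rule ext)
  fix x
  show "(\<Sum>z\<in>qwords (2 * n). qdelta n z * (\<Sum>u\<in>F. c u * u (take (n * p) x @ z @ drop (n * p) x))) =
        (\<Sum>u\<in>F. c u * (\<Sum>z\<in>qwords (2 * n). qdelta n z * u (take (n * p) x @ z @ drop (n * p) x)))"
    by (simp only: sum_distrib_left) (subst sum.swap, simp add: ac_simps)
qed

lemma lsub_Pc0: "lsub {v. \<forall>p. p + 2 \<le> M \<longrightarrow> Pc n p v = (\<lambda>x. 0)}"
  unfolding lsub_def
proof (intro allI impI CollectI)
  fix F :: "tvec set" and c p assume F: "finite F" "F \<subseteq> {v. \<forall>p. p + 2 \<le> M \<longrightarrow> Pc n p v = (\<lambda>x. 0)}" "p + 2 \<le> M"
  have "Pc n p u x = 0" if "u \<in> F" for u x using F that by auto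
  then show "Pc n p (\<lambda>w. \<Sum>u\<in>F. c u * u w) = (\<lambda>x. 0)" by (simp add: Pc_lin)
qed

lemma lsub_ES: "lsub (ES n M)"
proof -
  have "ES n M = BS n M \<inter> {v. \<forall>p. p + 2 \<le> M \<longrightarrow> Pc n p v = (\<lambda>x. 0)}" by (auto simp: ES_def)
  then show ?thesis using lsub_Int[OF lsub_BS lsub_Pc0] by simp
qed

lemma tprod_assoc: "qtprod (a + b) (qtprod a f g) h = qtprod a f (qtprod b g h)"
proof (rule ext)
  fix w :: "nat list"
  have 1: "take a (take (a + b) w) = take a w" by (simp add: min_def)
  have 2: "drop a (take (a + b) w) = take b (drop a w)" by (simp add: drop_take)
  have 3: "drop b (drop a w) = drop (a + b) w" by (simp add: add.commute)
  show "qtprod (a + b) (qtprod a f g) h w = qtprod a f (qtprod b g h) w"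
    unfolding qtprod_def 1 2 3 by (simp only: mult.assoc)
qed

lemma tprod_unit: "f \<in> qspace a \<Longrightarrow> qtprod a f qunit = f"
proof
  fix w assume f: "f \<in> qspace a"
  show "qtprod a f qunit w = f w"
  proof (cases "length w = a")
    case True then show ?thesis by (simp add: qtprod_def qunit_def qbasis_def)
  next
    case False
    then have "w \<notin> qwords a" by (auto simp: qwords_def)
    then have "f w = 0" using f by (simp add: qspaceD)
    moreover have "qtprod a f qunit w = 0"
    proof (cases "length w < a")
      case True
      then have "take a w \<notin> qwords a" by (auto simp: qwords_def)
      then show ?thesis using f by (simp add: qtprod_def qspaceD)
    next
      case False2: False
      then have "drop a w \<noteq> []" using False by auto
      then show ?thesis by (simp add: qtprod_def qunit_def qbasis_def)
    qed
    ultimately show ?thesis by simp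
  qed
qed

lemma orth_zero:
  assumes "f \<in> BS n (p + r)"
    and "\<And>a y. a \<in> BS n p \<Longrightarrow> y \<in> BS n r \<Longrightarrow> qinner (n*(p+r)) (qtprod (n*p) a y) f = 0"
  shows "f = (\<lambda>x. 0)"
  using assms
proof (induction r arbitrary: f)
  case 0
  have "qunit \<in> BS n 0" using qunit_qspace by (simp add: BS_0)
  from "0.prems"(2)[OF _ this, of f] "0.prems"(1)
  have "qinner (n*p) f f = 0" using tprod_unit[OF BS_qspace[OF "0.prems"(1)]] by simp
  moreover have fq: "f \<in> qspace (n*p)" using BS_qspace[OF "0.prems"(1)] by simp
  ultimately show ?case using qinner_self_eq_0[OF fq] by simp
next
  case (Suc r)
  have f: "f \<in> BS n ((p + r) + 1)" using Suc.prems(1) by simp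
  have cz: "Cr n (ek n j) f = (\<lambda>x. 0)" for j
  proof (rule Suc.IH)
    show "Cr n (ek n j) f \<in> BS n (p + r)" using Cr_BS[OF f] .
    fix a y assume a: "a \<in> BS n p" and y: "y \<in> BS n r"
    have "qinner (n*(p+r)) (qtprod (n*p) a y) (Cr n (ek n j) f) = qinner (n*(p+r) + n) (qtprod (n*(p+r)) (qtprod (n*p) a y) (ek n j)) f"
      by (rule Cr_adj[symmetric])
    also have "qtprod (n*(p+r)) (qtprod (n*p) a y) (ek n j) = qtprod (n*p) a (qtprod (n*r) y (ek n j))"
      using tprod_assoc[of "n*p" "n*r" a y "ek n j"] by (simp add: algebra_simps)
    also have "qinner (n*(p+r) + n) (qtprod (n*p) a (qtprod (n*r) y (ek n j))) f = 0"
    proof -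
      have "qtprod (n*r) y (ek n j) \<in> BS n (Suc r)"
        using tprod_BS[OF y, of "ek n j" 1] ek_CD BS_1 by simp
      from Suc.prems(2)[OF a this] show ?thesis by (simp add: algebra_simps)
    qed
    finally show "qinner (n*(p+r)) (qtprod (n*p) a y) (Cr n (ek n j) f) = 0" .
  qed
  have "f = (\<lambda>w. \<Sum>j\<le>n. qtprod (n*(p+r)) (Cr n (ek n j) f) (ek n j) w)" by (rule decomp[OF f])
  also have "\<dots> = (\<lambda>w. 0)" by (simp add: cz qtprod_def)
  finally show ?case .
qed

lemma tprod_span_orth:
  assumes "\<And>u. u \<in> S \<Longrightarrow> qinner N (qtprod a u y) v = 0" "x \<in> qspan S"
  shows "qinner N (qtprod a x y) v = 0"
proof -
  obtain F c where F: "finite F" "F \<subseteq> S" "x = (\<lambda>w. \<Sum>u\<in>F. c u * u w)"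
    using assms(2) by (auto simp: qspan_def)
  have "qtprod a x y = (\<lambda>w. \<Sum>u\<in>F. c u * qtprod a u y w)"
    unfolding F(3) by (rule ext) (simp add: qtprod_def sum_distrib_left sum_distrib_right ac_simps)
  then show ?thesis using assms(1) F(2)
    by (auto simp: qinner_sum_left qinner_scale_left intro!: sum.neutral)
qed

lemma E_char: "qE n M = ES n M"
proof (cases "M \<le> 1")
  case True
  then consider "M = 0" | "M = 1" by linarith
  then show ?thesis
  proof cases
    case 1 then show ?thesis by (simp add: qE_def ES_def qspan_qunit BS_0)
  next
    case 2 then show ?thesis by (simp add: qE_def ES_def qL_BS1)
  qed
next
  case False
  then have M2: "M \<ge> 2" by simp
  have qE: "qE n M = {v \<in> BS n M. \<forall>u\<in>qDsum n M. qinner (n * M) u v = 0}"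
    using M2 by (simp add: qE_def qLpow_BS)
  show ?thesis
  proof
    show "qE n M \<subseteq> ES n M"
    proof
      fix v assume v: "v \<in> qE n M"
      have vB: "v \<in> BS n M" and orth: "\<And>u. u \<in> qDsum n M \<Longrightarrow> qinner (n * M) u v = 0"
        using v qE by auto
      show "v \<in> ES n M" unfolding ES_def
      proof (intro CollectI conjI allI impI)
        show "v \<in> BS n M" by (rule vB)
        fix p assume p: "p + 2 \<le> M"
        define r where "r = M - p - 2"
        have M: "M = p + 2 + r" using p by (simp add: r_def)
        show "Pc n p v = (\<lambda>x. 0)"
        proof (rule orth_zero)
          show "Pc n p v \<in> BS n (p + r)" using Pc_BS[of v n p r] vB M by simp
          fix a y assume a: "a \<in> BS n p" and y: "y \<in> BS n r"
          define g where "g = qtprod (n*(Suc p + 1)) (qtprod (n*(Suc p - 1)) a (\<lambda>w. 1 * qdelta n w)) y"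
          have "g \<in> qDsum n M"
          proof -
            have d1: "(\<lambda>w. 1 * qdelta n w) \<in> {(\<lambda>w. c * qdelta n w) | c. True}" by blast
            have a1: "a \<in> qLpow n (Suc p - 1)" using a by (simp add: qLpow_BS)
            have "qtprod (n*(Suc p - 1)) a (\<lambda>w. 1 * qdelta n w) \<in> {qtprod (n * (Suc p - 1)) x y |x y. x \<in> qLpow n (Suc p - 1) \<and> y \<in> {(\<lambda>w. c * qdelta n w) | c. True}}"
              using a1 d1 by blast
            then have "qtprod (n*(Suc p - 1)) a (\<lambda>w. 1 * qdelta n w) \<in> qtens (n * (Suc p - 1)) (qLpow n (Suc p - 1)) {(\<lambda>w. c * qdelta n w) | c. True}"
              unfolding qtens_def by (rule qspan_base)
            moreover have "y \<in> qLpow n (M - Suc p - 1)" using y M by (simp add: qLpow_BS)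
            ultimately have "g \<in> qtens (n * (Suc p + 1)) (qtens (n * (Suc p - 1)) (qLpow n (Suc p - 1)) {(\<lambda>w. c * qdelta n w) | c. True}) (qLpow n (M - Suc p - 1))"
              unfolding g_def qtens_def[of "n * (Suc p + 1)"] by (intro qspan_base) blast
            moreover have "Suc p \<in> {1..M-1}" using p by simp
            ultimately show ?thesis unfolding qDsum_def by (intro qspan_base) blast
          qed
          then have "qinner (n * M) g v = 0" by (rule orth)
          moreover have "g = Ins n p (qtprod (n*p) a y)"
            unfolding g_def using Qgen[OF BS_qspace[OF a], of 1 y] by simp
          ultimately have "qinner (n*(p+2+r)) (Ins n p (qtprod (n*p) a y)) v = 0" using M by simp
          then show "qinner (n*(p+r)) (qtprod (n*p) a y) (Pc n p v) = 0" by (simp only: Ins_adj)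
        qed
      qed
    qed
    show "ES n M \<subseteq> qE n M"
    proof
      fix v assume v: "v \<in> ES n M"
      have vB: "v \<in> BS n M" using v by (rule ES_BS)
      have "qinner (n * M) u v = 0" if u: "u \<in> qDsum n M" for u
        using u unfolding qDsum_def
      proof (rule qspan_orth[rotated])
        fix g assume "g \<in> (\<Union>i\<in>{1..M - 1}. qtens (n * (i + 1)) (qtens (n * (i - 1)) (qLpow n (i - 1)) {\<lambda>w. c * qdelta n w |c. True}) (qLpow n (M - i - 1)))"
        then obtain i where i: "i \<in> {1..M-1}" and g: "g \<in> qtens (n * (i + 1)) (qtens (n * (i - 1)) (qLpow n (i - 1)) {\<lambda>w. c * qdelta n w |c. True}) (qLpow n (M - i - 1))"
          by blast
        obtain p where ip: "i = Suc p" using i by (cases i) auto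
        define r where "r = M - p - 2"
        have M: "M = p + 2 + r" using i ip by (simp add: r_def)
        show "qinner (n * M) g v = 0"
          using g unfolding qtens_def[of "n * (i + 1)"]
        proof (rule qspan_orth[rotated])
          fix g' assume "g' \<in> {qtprod (n * (i + 1)) x y |x y. x \<in> qtens (n * (i - 1)) (qLpow n (i - 1)) {\<lambda>w. c * qdelta n w |c. True} \<and> y \<in> qLpow n (M - i - 1)}"
          then obtain x y where g': "g' = qtprod (n * (i + 1)) x y"
            and x: "x \<in> qtens (n * (i - 1)) (qLpow n (i - 1)) {\<lambda>w. c * qdelta n w |c. True}"
            and y: "y \<in> qLpow n (M - i - 1)" by blast
          show "qinner (n * M) g' v = 0" unfolding g'
            using x unfolding qtens_def
          proof (rule tprod_span_orth[rotated])
            fix u assume "u \<in> {qtprod (n * (i - 1)) x y |x y. x \<in> qLpow n (i - 1) \<and> y \<in> {\<lambda>w. c * qdelta n w |c. True}}"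
            then obtain a c where u: "u = qtprod (n * (i - 1)) a (\<lambda>w. c * qdelta n w)" and a: "a \<in> BS n p"
              using ip by (auto simp: qLpow_BS)
            have yB: "y \<in> BS n r" using y ip M by (simp add: qLpow_BS)
            have "qtprod (n * (i + 1)) u y = (\<lambda>w. c * Ins n p (qtprod (n*p) a y) w)"
              unfolding u ip using Qgen[OF BS_qspace[OF a], of c y] by simp
            then have "qinner (n * M) (qtprod (n * (i + 1)) u y) v = cnj c * qinner (n*(p+2+r)) (Ins n p (qtprod (n*p) a y)) v"
              using M by (simp add: qinner_scale_left)
            also have "\<dots> = cnj c * qinner (n*(p+r)) (qtprod (n*p) a y) (Pc n p v)"
              by (simp only: Ins_adj)
            also have "\<dots> = 0" using ES_Pc[OF v, of p] M by simp
            finally show "qinner (n * M) (qtprod (n * (i + 1)) u y) v = 0" .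
          qed
        qed
      qed
      then show "v \<in> qE n M" using vB qE by simp
    qed
  qed
qed

definition TS :: "nat \<Rightarrow> nat \<Rightarrow> tvec set" where
  "TS n m = {v \<in> BS n (m + 1). \<forall>p. p + 2 \<le> m \<longrightarrow> Pc n p v = (\<lambda>x. 0)}"

lemma lsub_TS: "lsub (TS n m)"
proof -
  have "TS n m = BS n (m + 1) \<inter> {v. \<forall>p. p + 2 \<le> m \<longrightarrow> Pc n p v = (\<lambda>x. 0)}" by (auto simp: TS_def)
  then show ?thesis using lsub_Int[OF lsub_BS lsub_Pc0] by simp
qed

lemma Pc_tprod_zero:
  assumes x: "x \<in> ES n m" and l: "l \<in> BS n 1" and p: "p + 2 \<le> m"
  shows "Pc n p (qtprod (n*m) x l) = (\<lambda>y. 0)"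
proof -
  define r where "r = m - p - 2"
  have m: "m = p + 2 + r" using p by (simp add: r_def)
  have xB: "x \<in> BS n m" using x by (rule ES_BS)
  have tB: "qtprod (n*m) x l \<in> BS n (m + 1)" using tprod_BS[OF xB l] .
  show ?thesis
  proof (rule qspace_eqI[where N="n*(p+r+1)"])
    have "qtprod (n*m) x l \<in> qspace (n * ((p + r + 1) + 2))" using BS_qspace[OF tB] m by (simp add: algebra_simps)
    then show "Pc n p (qtprod (n*m) x l) \<in> qspace (n*(p+r+1))" by (rule Pc_qspace)
    show "(\<lambda>y. 0) \<in> qspace (n*(p+r+1))" by (simp add: qspace_def)
    fix y assume y: "y \<in> qwords (n*(p+r+1))"
    have e: "n*(p+r+1) = n*p + n*r + n" by (simp add: algebra_simps)
    from y have "y \<in> qwords (n*p + n*r + n)" by (simp only: e)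
    then obtain A B c where w: "A \<in> qwords (n*p)" "B \<in> qwords (n*r)" "c \<in> qwords n" "y = A @ B @ c"
      by (rule split3)
    have lA: "length A = n*p" and lB: "length B = n*r" using w by (simp_all add: qwords_length)
    have "Pc n p (qtprod (n*(p+2+r)) x l) (A @ B @ c) = Pc n p x (A @ B) * l c"
      by (rule Pc_tprod[OF lA lB])
    also have "\<dots> = 0" using ES_Pc[OF x p] by simp
    finally show "Pc n p (qtprod (n*m) x l) y = 0" using w m by simp
  qed
qed

lemma tens_char:
  assumes m: "m \<ge> 1"
  shows "qtens (n*m) (qE n m) (qL n) = TS n m"
proof
  show "qtens (n*m) (qE n m) (qL n) \<subseteq> TS n m"
    unfolding qtens_def
  proof (rule qspan_sub[OF _ lsub_TS])
    show "{qtprod (n * m) x y |x y. x \<in> qE n m \<and> y \<in> qL n} \<subseteq> TS n m"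
    proof
      fix u assume "u \<in> {qtprod (n * m) x y |x y. x \<in> qE n m \<and> y \<in> qL n}"
      then obtain x y where u: "u = qtprod (n * m) x y" and x: "x \<in> ES n m" and y: "y \<in> BS n 1"
        by (auto simp: E_char qL_BS1)
      show "u \<in> TS n m" unfolding TS_def u
        using tprod_BS[OF ES_BS[OF x] y] Pc_tprod_zero[OF x y] by simp
    qed
  qed
  show "TS n m \<subseteq> qtens (n*m) (qE n m) (qL n)"
  proof
    fix v assume v: "v \<in> TS n m"
    have vB: "v \<in> BS n (m + 1)" and vP: "\<And>p. p + 2 \<le> m \<Longrightarrow> Pc n p v = (\<lambda>x. 0)"
      using v by (auto simp: TS_def)
    have CrE: "Cr n (ek n j) v \<in> ES n m" for j
      unfolding ES_def
    proof (intro CollectI conjI allI impI)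
      show cB: "Cr n (ek n j) v \<in> BS n m" using Cr_BS[OF vB] .
      fix p assume p: "p + 2 \<le> m"
      define r where "r = m - p - 2"
      have m': "m = p + 2 + r" using p by (simp add: r_def)
      show "Pc n p (Cr n (ek n j) v) = (\<lambda>x. 0)"
      proof (rule qspace_eqI[where N="n*(p+r)"])
        have "Cr n (ek n j) v \<in> qspace (n * ((p + r) + 2))" using BS_qspace[OF cB] m' by (simp add: algebra_simps)
        then show "Pc n p (Cr n (ek n j) v) \<in> qspace (n*(p+r))" by (rule Pc_qspace)
        show "(\<lambda>x. 0) \<in> qspace (n*(p+r))" by (simp add: qspace_def)
        fix x assume x: "x \<in> qwords (n*(p+r))"
        have lx: "length (take (n*p) x) = n*p" using x by (simp add: qwords_length)
        have "Pc n p (Cr n (ek n j) v) (take (n*p) x @ drop (n*p) x) = Cr n (ek n j) (Pc n p v) (take (n*p) x @ drop (n*p) x)"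
          by (rule Pc_Cr[OF lx])
        then show "Pc n p (Cr n (ek n j) v) x = 0" using vP[OF p] by (simp add: Cr_def)
      qed
    qed
    have "(\<lambda>w. \<Sum>j\<le>n. qtprod (n*m) (Cr n (ek n j) v) (ek n j) w) \<in> qtens (n*m) (qE n m) (qL n)"
      unfolding qtens_def
    proof (rule lsub_sum1[OF lsub_qspan])
      fix j
      show "qtprod (n*m) (Cr n (ek n j) v) (ek n j) \<in> qspan {qtprod (n * m) x y |x y. x \<in> qE n m \<and> y \<in> qL n}"
        by (rule qspan_base, rule CollectI, rule exI[of _ "Cr n (ek n j) v"], rule exI[of _ "ek n j"])
           (simp add: CrE E_char ek_qL)
    qed simp
    then show "v \<in> qtens (n*m) (qE n m) (qL n)" using decomp[OF vB] by simp
  qed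
qed

section \<open>Closed form of G\<close>

definition gcoef :: "nat \<Rightarrow> nat \<Rightarrow> complex" where
  "gcoef n j = (-1) ^ ((n + 1) * j) * of_int (qd n j)"

lemma qG_zero: "qG n m (\<lambda>x. 0) = (\<lambda>w. 0)"
proof (induction m rule: qG.induct)
  case (1 n) then show ?case by simp
next
  case (2 n) then show ?case by (simp add: qtprod_def)
next
  case (3 n k) then show ?case by (simp add: qmap_tens_id_def qtprod_def)
qed

lemma drop_take_app: "c \<le> b \<Longrightarrow> drop c (take b w) @ drop b w = drop c w"
proof -
  assume cb: "c \<le> b"
  have 1: "drop c (take b w) = take (b - c) (drop c w)" by (simp add: drop_take)
  have 2: "drop b w = drop (b - c) (drop c w)" using cb by simp
  show ?thesis unfolding 1 2 by (rule append_take_drop_id)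
qed

lemma Ins_take:
  assumes "n*j + 2*n \<le> b"
  shows "Ins n j (\<lambda>x. v (x @ drop b w)) (take b w) = Ins n j v w"
proof -
  have 1: "take (2*n) (drop (n*j) (take b w)) = take (2*n) (drop (n*j) w)"
    using assms by (simp add: drop_take min_def)
  have 2: "take (n*j) (take b w) = take (n*j) w" using assms by (simp add: min_def)
  have 3: "drop (n*j + 2*n) (take b w) @ drop b w = drop (n*j + 2*n) w"
    using assms by (rule drop_take_app)
  show ?thesis unfolding Ins_def 1 2 using 3 by simp
qed

lemma qG_cf:
  assumes "length w = n * (Suc k + 1)"
  shows "qG n (Suc k) v w = (\<Sum>j<Suc k. gcoef n j * Ins n j v w)"
  using assms
proof (induction k arbitrary: v w)
  case 0
  then have lw: "length w = 2*n" by simp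
  then show ?case by (simp add: qtprod_def Ins_def gcoef_def mult.commute)
next
  case (Suc k)
  define b where "b = n * (Suc k + 1)"
  define a where "a = n * Suc k"
  have lw: "length w = b + n" using Suc.prems by (simp add: b_def algebra_simps)
  have lt: "length (take b w) = n * (Suc k + 1)" using lw by (simp add: b_def)
  have t1: "qmap_tens_id b (qG n (Suc k)) v w = (\<Sum>j<Suc k. gcoef n j * Ins n j v w)"
  proof -
    have "qmap_tens_id b (qG n (Suc k)) v w = qG n (Suc k) (\<lambda>x. v (x @ drop b w)) (take b w)"
      by (simp add: qmap_tens_id_def)
    also have "\<dots> = (\<Sum>j<Suc k. gcoef n j * Ins n j (\<lambda>x. v (x @ drop b w)) (take b w))"
      by (rule Suc.IH[OF lt])
    also have "\<dots> = (\<Sum>j<Suc k. gcoef n j * Ins n j v w)"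
    proof (rule sum.cong[OF refl])
      fix j assume "j \<in> {..<Suc k}"
      then have "j + 2 \<le> Suc k + 1" by simp
      then have "n*(j + 2) \<le> n*(Suc k + 1)" by (rule mult_le_mono2)
      then have "n*j + 2*n \<le> b" unfolding b_def by (simp add: algebra_simps)
      then show "gcoef n j * Ins n j (\<lambda>x. v (x @ drop b w)) (take b w) = gcoef n j * Ins n j v w"
        by (simp add: Ins_take)
    qed
    finally show ?thesis .
  qed
  have t2: "qtprod a v (qdelta n) w = Ins n (Suc k) v w"
  proof -
    have la: "length w = a + 2*n" using lw by (simp add: a_def b_def algebra_simps)
    then have "take (2*n) (drop a w) = drop a w" "drop (a + 2*n) w = []" by simp_all
    then show ?thesis by (simp add: qtprod_def Ins_def a_def mult.commute)
  qed
  have "qG n (Suc (Suc k)) v w = qmap_tens_id b (qG n (Suc k)) v w + gcoef n (Suc k) * qtprod a v (qdelta n) w"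
    by (simp add: b_def a_def gcoef_def)
  also have "\<dots> = (\<Sum>j<Suc (Suc k). gcoef n j * Ins n j v w)"
    using t1 t2 by simp
  finally show ?case .
qed

lemma qG_supp:
  assumes n: "n \<ge> 1" and v: "\<And>x. v x \<noteq> 0 \<Longrightarrow> length x = L" and w: "qG n (Suc k) v w \<noteq> 0"
  shows "length w = L + 2*n"
  using v w
proof (induction k arbitrary: v w L)
  case 0
  then have v0: "v [] \<noteq> 0" and d0: "qdelta n w \<noteq> 0" by (auto simp: qtprod_def)
  from "0.prems"(1)[OF v0] have L: "L = 0" by simp
  have "w \<in> qwords (2*n)"
  proof (rule ccontr)
    assume "w \<notin> qwords (2*n)"
    with qspaceD[OF qdelta_qspace] d0 show False by blast
  qed
  then show ?case using L by (simp add: qwords_length)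
next
  case (Suc k)
  define b where "b = n * (Suc k + 1)"
  define a where "a = n * Suc k"
  have split: "qG n (Suc (Suc k)) v w = qG n (Suc k) (\<lambda>x. v (x @ drop b w)) (take b w) + gcoef n (Suc k) * (v (take a w) * qdelta n (drop a w))"
    by (simp add: b_def a_def gcoef_def qmap_tens_id_def qtprod_def)
  show ?case
  proof (cases "qG n (Suc k) (\<lambda>x. v (x @ drop b w)) (take b w) = 0")
    case False
    show ?thesis
    proof (cases "L \<ge> length (drop b w)")
      case True
      have "length (take b w) = (L - length (drop b w)) + 2*n"
      proof (rule Suc.IH[OF _ False])
        fix x assume "v (x @ drop b w) \<noteq> 0"
        then have "length (x @ drop b w) = L" by (rule Suc.prems(1))
        then show "length x = L - length (drop b w)" by simp
      qed
      moreover have "length (take b w) + length (drop b w) = length w" by simp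
      ultimately show ?thesis using True by linarith
    next
      case False2: False
      have "(\<lambda>x. v (x @ drop b w)) = (\<lambda>x. 0)"
      proof
        fix x
        show "v (x @ drop b w) = 0"
        proof (rule ccontr)
          assume "v (x @ drop b w) \<noteq> 0"
          then have "length (x @ drop b w) = L" by (rule Suc.prems(1))
          then show False using False2 by simp
        qed
      qed
      then show ?thesis using False by (simp add: qG_zero)
    qed
  next
    case True
    then have v0: "v (take a w) \<noteq> 0" and d0: "qdelta n (drop a w) \<noteq> 0" using Suc.prems(2) split by auto
    have "drop a w \<in> qwords (2*n)"
    proof (rule ccontr)
      assume "drop a w \<notin> qwords (2*n)"
      with qspaceD[OF qdelta_qspace] d0 show False by blast
    qed
    moreover have "length (take a w) = L" using Suc.prems(1)[OF v0] .
    ultimately have "length (take a w) = L" "length (drop a w) = 2*n" using qwords_length by blast+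
    moreover have "length (take a w) + length (drop a w) = length w" by simp
    ultimately show ?thesis by linarith
  qed
qed

lemma Ins_sum_qspace:
  assumes "v \<in> qspace (n * k)"
  shows "(\<lambda>w. \<Sum>j<Suc k. gcoef n j * Ins n j v w) \<in> qspace (n * (Suc k + 1))"
proof (rule lsub_sum[OF lsub_qspace])
  fix j assume j: "j \<in> {..<Suc k}"
  define r where "r = k - j"
  have k: "k = j + r" using j by (simp add: r_def)
  have "Ins n j v \<in> qspace (n * (j + r + 2))" using Ins_qspace[of v n j r] assms k by simp
  then show "Ins n j v \<in> qspace (n * (Suc k + 1))" using k by (simp add: algebra_simps)
qed simp

lemma qG_closed:
  assumes n: "n \<ge> 1" and v: "v \<in> qspace (n * k)"
  shows "qG n (Suc k) v = (\<lambda>w. \<Sum>j<Suc k. gcoef n j * Ins n j v w)"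
proof
  fix w
  show "qG n (Suc k) v w = (\<Sum>j<Suc k. gcoef n j * Ins n j v w)"
  proof (cases "length w = n * (Suc k + 1)")
    case True then show ?thesis by (rule qG_cf)
  next
    case False
    have "qG n (Suc k) v w = 0"
    proof (rule ccontr)
      assume "qG n (Suc k) v w \<noteq> 0"
      moreover have "\<And>x. v x \<noteq> 0 \<Longrightarrow> length x = n * k"
        using v by (auto simp: qspace_def qwords_def)
      ultimately have "length w = n * k + 2 * n" using qG_supp[OF n] by blast
      then show False using False by (simp add: algebra_simps)
    qed
    moreover have "w \<notin> qwords (n * (Suc k + 1))" using False by (auto simp: qwords_def)
    then have "(\<Sum>j<Suc k. gcoef n j * Ins n j v w) = 0"
      using qspaceD[OF Ins_sum_qspace[OF v]] by simp
    ultimately show ?thesis by simp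
  qed
qed

definition dc :: "nat \<Rightarrow> complex" where
  "dc n = complex_of_real ((-1)^n / real (n+1))"

lemma Pc_sum: "Pc n p (\<lambda>w. \<Sum>j\<in>J. f j w) x = (\<Sum>j\<in>J. Pc n p (f j) x)"
  unfolding Pc_def by (simp only: sum_distrib_left) (rule sum.swap)

lemma Pc_scale: "Pc n p (\<lambda>w. c * f w) x = c * Pc n p f x"
  unfolding Pc_def by (simp add: sum_distrib_left ac_simps)

lemma Ins_zero: "Ins n p (\<lambda>x. 0) w = 0"
  by (simp add: Ins_def)

lemma Pc_Ins_cases:
  assumes eta: "\<eta> \<in> ES n k" and j: "j \<le> k" and p: "p \<le> k" and x: "x \<in> qwords (n*k)"
  shows "Pc n p (Ins n j \<eta>) x = (if j = p then \<eta> x else if j = p + 1 \<or> j + 1 = p then dc n * \<eta> x else 0)"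
proof -
  have eB: "\<eta> \<in> BS n k" using eta by (rule ES_BS)
  consider "j = p" | "j = p + 1" | "j + 1 = p" | "j \<ge> p + 2" | "j + 2 \<le> p" by linarith
  then show ?thesis
  proof cases
    case 1
    define r where "r = k - p"
    have "x \<in> qwords (n*(p+r))" using x p by (simp add: r_def)
    then show ?thesis using 1 Pc_Ins_same by simp
  next
    case 2
    define r where "r = k - p - 1"
    have k: "k = p + 1 + r" using 2 j by (simp add: r_def)
    show ?thesis using 2 Pc_Ins_adj1[of \<eta> n p r x] eB x k by (simp add: dc_def)
  next
    case 3
    define r where "r = k - j - 1"
    have k: "k = j + 1 + r" using 3 p by (simp add: r_def)
    show ?thesis using 3 Pc_Ins_adj2[of \<eta> n j r x] eB x k by (simp add: dc_def)
  next
    case 4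
    define t where "t = j - p - 2"
    define r where "r = k - j"
    have k: "k = p + t + 2 + r" and jj: "j = p + 2 + t" using 4 j by (simp_all add: t_def r_def)
    have "Pc n p (Ins n j \<eta>) x = Ins n (p+t) (Pc n p \<eta>) x"
      using Pc_Ins_far1[of x n p t r \<eta>] x k jj by simp
    also have "Pc n p \<eta> = (\<lambda>x. 0)" using ES_Pc[OF eta] k by simp
    finally show ?thesis using 4 by (simp add: Ins_zero)
  next
    case 5
    define t where "t = p - j - 2"
    define r where "r = k - p"
    have k: "k = j + 2 + t + r" and pp: "p = j + 2 + t" using 5 p by (simp_all add: t_def r_def)
    have "Pc n p (Ins n j \<eta>) x = Ins n j (Pc n (j+t) \<eta>) x"
      using Pc_Ins_far2[of x n j t r \<eta>] x k pp by simp
    also have "Pc n (j+t) \<eta> = (\<lambda>x. 0)" using ES_Pc[OF eta] k by simp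
    finally show ?thesis using 5 by (simp add: Ins_zero)
  qed
qed

definition alpha :: "nat \<Rightarrow> nat \<Rightarrow> nat \<Rightarrow> complex" where
  "alpha n k p = gcoef n p + dc n * ((if p + 1 \<le> k then gcoef n (p+1) else 0) + (if p \<ge> 1 then gcoef n (p-1) else 0))"

lemma sum_three:
  assumes p: "p \<le> k"
  shows "(\<Sum>j<Suc k. g j * (if j = p then a else if j = p + 1 \<or> j + 1 = p then b else 0))
       = g p * a + ((if p + 1 \<le> k then g (p+1) else 0) + (if p \<ge> 1 then g (p-1) else 0)) * (b::complex)"
proof -
  have "(\<Sum>j<Suc k. g j * (if j = p then a else if j = p + 1 \<or> j + 1 = p then b else 0))
      = (\<Sum>j<Suc k. (if j = p then g j * a else 0) + (if j = p + 1 then g j * b else 0) + (if j + 1 = p then g j * b else 0))"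
    by (rule sum.cong[OF refl]) auto
  also have "\<dots> = (\<Sum>j<Suc k. if j = p then g j * a else 0) + (\<Sum>j<Suc k. if j = p + 1 then g j * b else 0) + (\<Sum>j<Suc k. if j + 1 = p then g j * b else 0)"
    by (simp add: sum.distrib)
  also have "(\<Sum>j<Suc k. if j = p then g j * a else 0) = g p * a" using p by (simp add: sum.delta')
  also have "(\<Sum>j<Suc k. if j = p + 1 then g j * b else 0) = (if p + 1 \<le> k then g (p+1) * b else 0)"
    by (simp add: sum.delta')
  also have "(\<Sum>j<Suc k. if j + 1 = p then g j * b else 0) = (if p \<ge> 1 then g (p-1) * b else 0)"
  proof (cases p)
    case 0 then show ?thesis by simp
  next
    case (Suc q)
    have "(\<Sum>j<Suc k. if j + 1 = p then g j * b else 0) = (\<Sum>j<Suc k. if j = q then g j * b else 0)"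
      using Suc by (intro sum.cong) auto
    also have "\<dots> = g q * b" using Suc p by (simp add: sum.delta')
    finally show ?thesis using Suc by simp
  qed
  finally show ?thesis by (simp add: distrib_right)
qed

lemma G_Pc:
  assumes n: "n \<ge> 1" and eta: "\<eta> \<in> ES n k" and p: "p \<le> k" and x: "x \<in> qwords (n*k)"
  shows "Pc n p (qG n (Suc k) \<eta>) x = alpha n k p * \<eta> x"
proof -
  have eq: "qspace (n*k) = qspace (n*k)" ..
  have eS: "\<eta> \<in> qspace (n*k)" using BS_qspace[OF ES_BS[OF eta]] .
  have "Pc n p (qG n (Suc k) \<eta>) x = (\<Sum>j<Suc k. gcoef n j * Pc n p (Ins n j \<eta>) x)"
    unfolding qG_closed[OF n eS] Pc_sum by (simp add: Pc_scale)
  also have "\<dots> = (\<Sum>j<Suc k. gcoef n j * (if j = p then \<eta> x else if j = p + 1 \<or> j + 1 = p then dc n * \<eta> x else 0))"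
    by (rule sum.cong[OF refl]) (simp add: Pc_Ins_cases[OF eta _ p x])
  also have "\<dots> = alpha n k p * \<eta> x"
    unfolding sum_three[OF p] alpha_def by (simp add: algebra_simps)
  finally show ?thesis .
qed

lemma qd_rec: "qd n (Suc k) = (int n + 1) * qd n k - (if k \<ge> 1 then qd n (k - 1) else 0)"
  by (cases k) simp_all

definition eps :: "nat \<Rightarrow> complex" where "eps n = (-1) ^ (n + 1)"

lemma eps_sq: "eps n * eps n = 1"
  by (simp add: eps_def flip: power_add)

lemma gcoef_eps: "gcoef n j = eps n ^ j * of_int (qd n j)"
  by (simp only: gcoef_def eps_def power_mult)

lemma dc_eps: "dc n = - eps n / of_nat (n + 1)"
proof -
  have "complex_of_real ((-1)^n / real (n+1)) = (-1)^n / of_nat (n+1)"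
    by (simp add: of_real_divide)
  moreover have "(-1::complex)^n = - eps n" by (simp add: eps_def)
  ultimately show ?thesis by (simp add: dc_def)
qed

lemma N_nz: "(of_nat (n + 1) :: complex) \<noteq> 0"
  by (simp only: of_nat_eq_0_iff)

lemma alpha_zero:
  assumes "p + 1 \<le> k"
  shows "alpha n k p = 0"
proof -
  let ?e = "eps n" and ?N = "(of_nat (n + 1) :: complex)"
  have e2: "?e * ?e = 1" by (rule eps_sq)
  show ?thesis
  proof (cases p)
    case 0
    have "alpha n k p = 1 + (- ?e / ?N) * (?e * (of_int (int n + 1)))"
      using 0 assms by (simp add: alpha_def gcoef_eps dc_eps)
    also have "\<dots> = 1 - (?e * ?e) * (?N / ?N)" by (simp add: field_simps)
    also have "\<dots> = 0" using e2 N_nz by simp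
    finally show ?thesis .
  next
    case (Suc q)
    define d0 d1 d2 where "d0 = (of_int (qd n q) :: complex)" "d1 = (of_int (qd n (Suc q)) :: complex)"
      "d2 = (of_int (qd n (Suc (Suc q))) :: complex)"
    have rec: "d2 + d0 = ?N * d1" by (simp add: d0_d1_d2_def algebra_simps)
    have p3: "?e * ?e ^ Suc (Suc q) = ?e ^ Suc q"
    proof -
      have "?e * ?e ^ Suc (Suc q) = (?e * ?e) * ?e ^ Suc q" by (simp add: ac_simps)
      then show ?thesis using e2 by simp
    qed
    have p1: "?e * ?e ^ q = ?e ^ Suc q" by simp
    have "alpha n k p = ?e ^ Suc q * d1 + (- ?e / ?N) * (?e ^ Suc (Suc q) * d2 + ?e ^ q * d0)"
      using Suc assms by (simp add: alpha_def gcoef_eps dc_eps d0_d1_d2_def)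
    also have "\<dots> = ?e ^ Suc q * d1 - ((?e * ?e ^ Suc (Suc q)) * d2 + (?e * ?e ^ q) * d0) / ?N"
      by (simp add: field_simps)
    also have "\<dots> = ?e ^ Suc q * (d1 - (d2 + d0) / ?N)"
      unfolding p3 p1 by (simp add: field_simps)
    also have "\<dots> = 0" unfolding rec using N_nz by simp
    finally show ?thesis .
  qed
qed

lemma qd_mono: assumes n: "n \<ge> 1" shows "1 \<le> qd n k \<and> qd n k \<le> qd n (Suc k)"
proof (induction k)
  case 0 then show ?case by simp
next
  case (Suc k)
  have a: "1 \<le> qd n (Suc k)" using Suc by linarith
  have "2 * qd n (Suc k) \<le> (int n + 1) * qd n (Suc k)"
    using n a by (intro mult_right_mono) simp_all
  moreover have "qd n (Suc (Suc k)) = (int n + 1) * qd n (Suc k) - qd n k" by simp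
  ultimately have "qd n (Suc k) \<le> qd n (Suc (Suc k))" using Suc by linarith
  then show ?case using a by simp
qed

lemma qd_pos: "n \<ge> 1 \<Longrightarrow> qd n k \<ge> 1"
  using qd_mono by blast

lemma qmu_pos: assumes "n \<ge> 1" shows "qmu n (Suc k) > 0"
proof -
  have "qd n (Suc k) * qd n k > 0" using qd_pos[OF assms, of "Suc k"] qd_pos[OF assms, of k] by simp
  then have a: "real_of_int (qd n (Suc k) * qd n k) > 0" by (simp only: of_int_0_less_iff)
  have b: "real_of_int (qd n 1) > 0" by simp
  have "qmu n (Suc k) = real_of_int (qd n (Suc k) * qd n k) / real_of_int (qd n 1)" by (simp add: qmu_def)
  then show ?thesis using divide_pos_pos[OF a b] by simp
qed

lemma qinner_cong:
  "(\<And>w. w \<in> qwords N \<Longrightarrow> u w = u' w) \<Longrightarrow> (\<And>w. w \<in> qwords N \<Longrightarrow> v w = v' w) \<Longrightarrow> qinner N u v = qinner N u' v'"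
  unfolding qinner_def by (rule sum.cong) simp_all

lemma gcoef_real: "cnj (gcoef n j) = gcoef n j"
  by (simp add: gcoef_def)

lemma dc_real: "cnj (dc n) = dc n"
  by (simp add: dc_def)

lemma alpha_real: "cnj (alpha n k p) = alpha n k p"
  by (simp add: alpha_def gcoef_real dc_real)

lemma Pc_zero: "Pc n p (\<lambda>x. 0) = (\<lambda>x. 0)"
  by (simp add: Pc_def)

section \<open>Isometry of G\<close>

lemma gcoef_alpha:
  "gcoef n k * alpha n k k = complex_of_real (qmu n (Suc k))"
proof -
  let ?e = "eps n" and ?N = "(of_nat (n + 1) :: complex)"
  have e2: "?e * ?e = 1" by (rule eps_sq)
  have ek2: "?e ^ k * ?e ^ k = 1" using e2 by (simp add: power_mult_distrib[symmetric])
  have mu: "complex_of_real (qmu n (Suc k)) = of_int (qd n (Suc k)) * of_int (qd n k) / ?N"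
    by (simp add: qmu_def of_real_divide)
  show ?thesis
  proof (cases k)
    case 0
    have "gcoef n k * alpha n k k = 1" using 0 by (simp add: alpha_def gcoef_def)
    moreover have "of_int (qd n (Suc k)) * of_int (qd n k) / ?N = 1" using 0 N_nz by simp
    ultimately show ?thesis using mu by simp
  next
    case (Suc q)
    define d0 d1 d2 where "d0 = (of_int (qd n q) :: complex)" "d1 = (of_int (qd n (Suc q)) :: complex)"
      "d2 = (of_int (qd n (Suc (Suc q))) :: complex)"
    have rec: "d2 = ?N * d1 - d0" by (simp add: d0_d1_d2_def algebra_simps)
    have eq1: "?e ^ q * ?e * (?e ^ q * ?e) = 1" using ek2 e2 by (simp add: ac_simps power_mult_distrib[symmetric])
    have eq2: "?e * (?e ^ q * ?e * ?e ^ q) = ?e ^ q * ?e * (?e ^ q * ?e)" by (simp add: ac_simps)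
    have "gcoef n k * alpha n k k = (?e ^ Suc q * d1) * (?e ^ Suc q * d1 + (- ?e / ?N) * (?e ^ q * d0))"
      using Suc by (simp add: alpha_def gcoef_eps dc_eps d0_d1_d2_def)
    also have "\<dots> = (?e ^ q * ?e * (?e ^ q * ?e)) * d1 * d1 - (?e * (?e ^ q * ?e * ?e ^ q)) * d1 * d0 / ?N"
      by (simp add: field_simps)
    also have "\<dots> = d1 * d1 - d1 * d0 / ?N" unfolding eq2 eq1 by simp
    also have "\<dots> = d2 * d1 / ?N" unfolding rec using N_nz by (simp add: field_simps)
    finally show ?thesis using mu Suc by (simp add: d0_d1_d2_def)
  qed
qed

lemma G_iso:
  assumes n: "n \<ge> 1" and eta: "\<eta> \<in> ES n k" and eta': "\<eta>' \<in> ES n k"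
  shows "qinner (n*(Suc k + 1)) (qG n (Suc k) \<eta>) (qG n (Suc k) \<eta>') = complex_of_real (qmu n (Suc k)) * qinner (n*k) \<eta> \<eta>'"
proof -
  have eS': "\<eta>' \<in> qspace (n*k)" using BS_qspace[OF ES_BS[OF eta']] .
  have tm: "qinner (n*(Suc k + 1)) (qG n (Suc k) \<eta>) (Ins n j \<eta>') = (if j = k then alpha n k k * qinner (n*k) \<eta> \<eta>' else 0)"
    if j: "j < Suc k" for j
  proof -
    define r where "r = k - j"
    have k: "k = j + r" using j by (simp add: r_def)
    have "qinner (n*(Suc k + 1)) (qG n (Suc k) \<eta>) (Ins n j \<eta>') = qinner (n*(j+2+r)) (qG n (Suc k) \<eta>) (Ins n j \<eta>')"
      using k by (simp add: algebra_simps)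
    also have "\<dots> = qinner (n*(j+r)) (Pc n j (qG n (Suc k) \<eta>)) \<eta>'" by (rule Ins_adj')
    also have "\<dots> = qinner (n*k) (Pc n j (qG n (Suc k) \<eta>)) \<eta>'" using k by simp
    also have "\<dots> = qinner (n*k) (\<lambda>x. alpha n k j * \<eta> x) \<eta>'"
    proof -
      have jk: "j \<le> k" using k by simp
      show ?thesis by (intro qinner_cong) (simp_all add: G_Pc[OF n eta jk])
    qed
    also have "\<dots> = alpha n k j * qinner (n*k) \<eta> \<eta>'" by (simp add: qinner_scale_left alpha_real)
    also have "\<dots> = (if j = k then alpha n k k * qinner (n*k) \<eta> \<eta>' else 0)"
      using j alpha_zero[of j k n] by auto
    finally show ?thesis .
  qed
  have "qinner (n*(Suc k + 1)) (qG n (Suc k) \<eta>) (qG n (Suc k) \<eta>')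
      = (\<Sum>j<Suc k. gcoef n j * qinner (n*(Suc k + 1)) (qG n (Suc k) \<eta>) (Ins n j \<eta>'))"
    unfolding qG_closed[OF n eS'] qinner_sum_right qinner_scale_right ..
  also have "\<dots> = (\<Sum>j<Suc k. if j = k then gcoef n k * (alpha n k k * qinner (n*k) \<eta> \<eta>') else 0)"
  proof (rule sum.cong[OF refl])
    fix j assume "j \<in> {..<Suc k}"
    then have j: "j < Suc k" by simp
    show "gcoef n j * qinner (n*(Suc k + 1)) (qG n (Suc k) \<eta>) (Ins n j \<eta>') = (if j = k then gcoef n k * (alpha n k k * qinner (n*k) \<eta> \<eta>') else 0)"
      unfolding tm[OF j] by simp
  qed
  also have "\<dots> = gcoef n k * alpha n k k * qinner (n*k) \<eta> \<eta>'" by (simp add: sum.delta')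
  also have "\<dots> = complex_of_real (qmu n (Suc k)) * qinner (n*k) \<eta> \<eta>'" by (simp add: gcoef_alpha)
  finally show ?thesis .
qed

lemma G_qspace:
  assumes n: "n \<ge> 1" and eS: "\<eta> \<in> qspace (n*k)"
  shows "qG n (Suc k) \<eta> \<in> qspace (n*(Suc k + 1))"
  unfolding qG_closed[OF n eS] by (rule Ins_sum_qspace[OF eS])

lemma G_TS:
  assumes n: "n \<ge> 1" and eta: "\<eta> \<in> ES n k"
  shows "qG n (Suc k) \<eta> \<in> TS n (Suc k)"
proof -
  have eB: "\<eta> \<in> BS n k" using eta by (rule ES_BS)
  have eS: "\<eta> \<in> qspace (n*k)" using BS_qspace[OF eB] .
  have GB: "qG n (Suc k) \<eta> \<in> BS n (Suc k + 1)"
    unfolding qG_closed[OF n eS]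
  proof (rule lsub_sum[OF lsub_BS])
    fix j assume j: "j \<in> {..<Suc k}"
    define r where "r = k - j"
    have k: "k = j + r" using j by (simp add: r_def)
    have "Ins n j \<eta> \<in> BS n (j + 2 + r)" using Ins_BS[of \<eta> n j r] eB k by simp
    then show "Ins n j \<eta> \<in> BS n (Suc k + 1)" using k by (simp add: algebra_simps)
  qed simp
  show ?thesis unfolding TS_def
  proof (intro CollectI conjI allI impI)
    show "qG n (Suc k) \<eta> \<in> BS n (Suc k + 1)" by (rule GB)
    fix p assume p: "p + 2 \<le> Suc k"
    show "Pc n p (qG n (Suc k) \<eta>) = (\<lambda>x. 0)"
    proof (rule qspace_eqI[where N="n*k"])
      have "qG n (Suc k) \<eta> \<in> qspace (n*(k + 2))" using BS_qspace[OF GB] by (simp add: algebra_simps)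
      then show "Pc n p (qG n (Suc k) \<eta>) \<in> qspace (n*k)" by (rule Pc_qspace)
      show "(\<lambda>x. 0) \<in> qspace (n*k)" by (simp add: qspace_def)
      fix x assume x: "x \<in> qwords (n*k)"
      show "Pc n p (qG n (Suc k) \<eta>) x = 0"
        using G_Pc[OF n eta _ x, of p] alpha_zero[of p k n] p by simp
    qed
  qed
qed

lemma G_adj_TS:
  assumes n: "n \<ge> 1" and eS: "\<eta> \<in> qspace (n*k)" and y: "y \<in> TS n (Suc k)"
  shows "qinner (n*(Suc k + 1)) (qG n (Suc k) \<eta>) y = gcoef n k * qinner (n*k) \<eta> (Pc n k y)"
proof -
  have yP: "\<And>p. p + 2 \<le> Suc k \<Longrightarrow> Pc n p y = (\<lambda>x. 0)" using y by (simp add: TS_def)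
  have tm: "cnj (gcoef n j) * qinner (n*(Suc k + 1)) (Ins n j \<eta>) y = (if j = k then gcoef n k * qinner (n*k) \<eta> (Pc n k y) else 0)"
    if j: "j < Suc k" for j
  proof -
    define r where "r = k - j"
    have k: "k = j + r" using j by (simp add: r_def)
    have "qinner (n*(Suc k + 1)) (Ins n j \<eta>) y = qinner (n*(j+2+r)) (Ins n j \<eta>) y"
      using k by (simp add: algebra_simps)
    also have "\<dots> = qinner (n*(j+r)) \<eta> (Pc n j y)" by (rule Ins_adj)
    finally have e: "qinner (n*(Suc k + 1)) (Ins n j \<eta>) y = qinner (n*k) \<eta> (Pc n j y)" using k by simp
    show ?thesis
    proof (cases "j = k")
      case True then show ?thesis using e by (simp add: gcoef_real)
    next
      case False
      then have "j + 2 \<le> Suc k" using j by simp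
      then show ?thesis using e False yP by simp
    qed
  qed
  have "qinner (n*(Suc k + 1)) (qG n (Suc k) \<eta>) y = (\<Sum>j<Suc k. cnj (gcoef n j) * qinner (n*(Suc k + 1)) (Ins n j \<eta>) y)"
    unfolding qG_closed[OF n eS] qinner_sum_left qinner_scale_left ..
  also have "\<dots> = (\<Sum>j<Suc k. if j = k then gcoef n k * qinner (n*k) \<eta> (Pc n k y) else 0)"
    by (rule sum.cong[OF refl], rule tm) simp
  also have "\<dots> = gcoef n k * qinner (n*k) \<eta> (Pc n k y)" by (simp add: sum.delta')
  finally show ?thesis .
qed

lemma Pc_TS_ES:
  assumes y: "y \<in> TS n (Suc k)"
  shows "Pc n k y \<in> ES n k"
proof -
  have yB: "y \<in> BS n (k + 2 + 0)" using y by (simp add: TS_def)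
  have yP: "\<And>p. p + 2 \<le> Suc k \<Longrightarrow> Pc n p y = (\<lambda>x. 0)" using y by (simp add: TS_def)
  have PB: "Pc n k y \<in> BS n k" using Pc_BS[OF yB] by simp
  show ?thesis unfolding ES_def
  proof (intro CollectI conjI allI impI)
    show "Pc n k y \<in> BS n k" by (rule PB)
    fix p assume p: "p + 2 \<le> k"
    define t where "t = k - p - 2"
    have k: "k = p + 2 + t" using p by (simp add: t_def)
    show "Pc n p (Pc n k y) = (\<lambda>x. 0)"
    proof (rule qspace_eqI[where N="n*(p+t)"])
      have "Pc n k y \<in> qspace (n*((p+t) + 2))" using BS_qspace[OF PB] k by (simp add: algebra_simps)
      then show "Pc n p (Pc n k y) \<in> qspace (n*(p+t))" by (rule Pc_qspace)
      show "(\<lambda>x. 0) \<in> qspace (n*(p+t))" by (simp add: qspace_def)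
      fix x assume x: "x \<in> qwords (n*(p+t))"
      have lA: "length (take (n*p) x) = n*p" and lY: "length (drop (n*p) x) = n*t"
        using x by (simp_all add: qwords_length algebra_simps)
      have "Pc n p (Pc n (p+2+t) y) (take (n*p) x @ drop (n*p) x @ []) = Pc n (p+t) (Pc n p y) (take (n*p) x @ drop (n*p) x @ [])"
        by (rule Pc_Pc[OF lA lY])
      then show "Pc n p (Pc n k y) x = 0" using yP[of p] p k Pc_zero by simp
    qed
  qed
qed

lemma ES_TS: "\<xi> \<in> ES n (Suc (Suc k)) \<Longrightarrow> \<xi> \<in> TS n (Suc k)"
  by (simp add: ES_def TS_def)

lemma ES_orth_G:
  assumes n: "n \<ge> 1" and xi: "\<xi> \<in> ES n (Suc (Suc k))" and eS: "\<eta> \<in> qspace (n*k)"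
  shows "qinner (n*(Suc k + 1)) \<xi> (qG n (Suc k) \<eta>) = 0"
proof -
  have tm: "gcoef n j * qinner (n*(Suc k + 1)) \<xi> (Ins n j \<eta>) = 0" if j: "j < Suc k" for j
  proof -
    define r where "r = k - j"
    have k: "k = j + r" using j by (simp add: r_def)
    have "qinner (n*(Suc k + 1)) \<xi> (Ins n j \<eta>) = qinner (n*(j+2+r)) \<xi> (Ins n j \<eta>)"
      using k by (simp add: algebra_simps)
    also have "\<dots> = qinner (n*(j+r)) (Pc n j \<xi>) \<eta>" by (rule Ins_adj')
    also have "Pc n j \<xi> = (\<lambda>x. 0)" using ES_Pc[OF xi] j by simp
    finally show ?thesis by simp
  qed
  show ?thesis
    unfolding qG_closed[OF n eS] qinner_sum_right qinner_scale_right
    by (rule sum.neutral, rule ballI, rule tm) simp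
qed

lemma qinner_self_real: "\<exists>r\<ge>0. qinner N v v = complex_of_real r"
proof -
  have "qinner N v v = complex_of_real (\<Sum>w\<in>qwords N. (cmod (v w))^2)"
    unfolding qinner_def of_real_sum
    by (rule sum.cong) (simp_all, metis complex_norm_square mult.commute of_real_power)
  then show ?thesis by (intro exI[of _ "\<Sum>w\<in>qwords N. (cmod (v w))^2"]) (simp add: sum_nonneg)
qed

definition kap :: "nat \<Rightarrow> nat \<Rightarrow> complex" where
  "kap n k = (-1) ^ ((n + 1) * k) * complex_of_real (1 / sqrt (qmu n (Suc k)))"

lemma qV_eq: "qV n (Suc k) \<eta> = (\<lambda>w. kap n k * qG n (Suc k) \<eta> w)"
  by (simp add: qV_def kap_def)

lemma kap_real: "cnj (kap n k) = kap n k"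
  by (simp add: kap_def)

lemma kap_sq:
  assumes n: "n \<ge> 1"
  shows "kap n k * kap n k * complex_of_real (qmu n (Suc k)) = 1"
proof -
  have mu: "qmu n (Suc k) > 0" using qmu_pos[OF n] .
  have s: "((-1::complex) ^ ((n + 1) * k)) * ((-1) ^ ((n + 1) * k)) = 1"
    by (simp flip: power_add)
  have r: "(1 / sqrt (qmu n (Suc k))) * (1 / sqrt (qmu n (Suc k))) * qmu n (Suc k) = 1"
    using mu by (simp add: real_sqrt_mult_self field_simps)
  have "kap n k * kap n k * complex_of_real (qmu n (Suc k))
      = ((-1::complex) ^ ((n + 1) * k) * (-1) ^ ((n + 1) * k)) * complex_of_real ((1 / sqrt (qmu n (Suc k))) * (1 / sqrt (qmu n (Suc k))) * qmu n (Suc k))"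
    unfolding kap_def of_real_mult by (simp only: mult_ac)
  also have "\<dots> = 1" by (simp only: s r of_real_1 mult_1)
  finally show ?thesis .
qed

lemma kap_nz: assumes "n \<ge> 1" shows "kap n k \<noteq> 0"
  using kap_sq[OF assms, of k] by auto

lemma V_iso:
  assumes n: "n \<ge> 1" and eta: "\<eta> \<in> ES n k" and eta': "\<eta>' \<in> ES n k"
  shows "qinner (n*(Suc k + 1)) (qV n (Suc k) \<eta>) (qV n (Suc k) \<eta>') = qinner (n*k) \<eta> \<eta>'"
proof -
  have "qinner (n*(Suc k + 1)) (qV n (Suc k) \<eta>) (qV n (Suc k) \<eta>')
      = cnj (kap n k) * kap n k * qinner (n*(Suc k + 1)) (qG n (Suc k) \<eta>) (qG n (Suc k) \<eta>')"
    unfolding qV_eq qinner_scale_left qinner_scale_right by simp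
  also have "\<dots> = (kap n k * kap n k * complex_of_real (qmu n (Suc k))) * qinner (n*k) \<eta> \<eta>'"
    using G_iso[OF n eta eta'] kap_real by (simp add: ac_simps)
  also have "\<dots> = qinner (n*k) \<eta> \<eta>'" using kap_sq[OF n] by simp
  finally show ?thesis .
qed

lemma V_TS:
  assumes n: "n \<ge> 1" and eta: "\<eta> \<in> ES n k"
  shows "qV n (Suc k) \<eta> \<in> TS n (Suc k)"
  unfolding qV_eq by (rule lsub_scale[OF lsub_TS G_TS[OF n eta]])

lemma V_adj_TS:
  assumes n: "n \<ge> 1" and eS: "\<eta> \<in> qspace (n*k)" and y: "y \<in> TS n (Suc k)"
  shows "qinner (n*(Suc k + 1)) (qV n (Suc k) \<eta>) y = qinner (n*k) \<eta> (\<lambda>x. (kap n k * gcoef n k) * Pc n k y x)"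
  unfolding qV_eq qinner_scale_left qinner_scale_right G_adj_TS[OF n eS y]
  by (simp add: kap_real)

lemma V_orth:
  assumes n: "n \<ge> 1" and xi: "\<xi> \<in> ES n (Suc (Suc k))" and eS: "\<eta> \<in> qspace (n*k)"
  shows "qinner (n*(Suc k + 1)) \<xi> (qV n (Suc k) \<eta>) = 0"
  unfolding qV_eq qinner_scale_right ES_orth_G[OF n xi eS] by simp

lemma Ins_diff: "Ins n j (\<lambda>x. a x - b x) w = Ins n j a w - Ins n j b w"
  by (simp add: Ins_def algebra_simps)

lemma V_diff:
  assumes n: "n \<ge> 1" and a: "a \<in> qspace (n*k)" and b: "b \<in> qspace (n*k)"
  shows "qV n (Suc k) (\<lambda>x. a x - b x) = (\<lambda>w. qV n (Suc k) a w - qV n (Suc k) b w)"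
proof -
  have d: "(\<lambda>x. a x - b x) \<in> qspace (n*k)" by (rule lsub_diff[OF lsub_qspace a b])
  show ?thesis
    unfolding qV_eq qG_closed[OF n d] qG_closed[OF n a] qG_closed[OF n b] Ins_diff
    by (simp add: algebra_simps sum_subtractf)
qed

lemma main_iso:
  assumes n: "n \<ge> 1" and xi: "\<xi> \<in> ES n (Suc (Suc k))" and xi': "\<xi>' \<in> ES n (Suc (Suc k))"
    and eta: "\<eta> \<in> ES n k" and eta': "\<eta>' \<in> ES n k"
  shows "qinner (n*(Suc k + 1)) (qPhi n (Suc k) (\<xi>, \<eta>)) (qPhi n (Suc k) (\<xi>', \<eta>'))
       = qinner (n*(Suc k + 1)) \<xi> \<xi>' + qinner (n*k) \<eta> \<eta>'"
proof -
  have eS: "\<eta> \<in> qspace (n*k)" and eS': "\<eta>' \<in> qspace (n*k)"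
    using BS_qspace[OF ES_BS[OF eta]] BS_qspace[OF ES_BS[OF eta']] by simp_all
  have o1: "qinner (n*(Suc k + 1)) \<xi> (qV n (Suc k) \<eta>') = 0" by (rule V_orth[OF n xi eS'])
  have o2: "qinner (n*(Suc k + 1)) (qV n (Suc k) \<eta>) \<xi>' = 0"
    using V_orth[OF n xi' eS] qinner_cnj[of "n*(Suc k + 1)" "\<xi>'" "qV n (Suc k) \<eta>"] by simp
  show ?thesis
    unfolding qPhi_def fst_conv snd_conv qinner_add_left qinner_add_right
    using o1 o2 V_iso[OF n eta eta'] by simp
qed

lemma main_inj:
  assumes n: "n \<ge> 1"
  shows "inj_on (qPhi n (Suc k)) (ES n (Suc (Suc k)) \<times> ES n k)"
proof (rule inj_onI)
  fix p q assume p: "p \<in> ES n (Suc (Suc k)) \<times> ES n k" and q: "q \<in> ES n (Suc (Suc k)) \<times> ES n k"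
    and eq: "qPhi n (Suc k) p = qPhi n (Suc k) q"
  obtain \<xi> \<eta> where pp: "p = (\<xi>, \<eta>)" by (cases p)
  obtain \<xi>' \<eta>' where qq: "q = (\<xi>', \<eta>')" by (cases q)
  have xi: "\<xi> \<in> ES n (Suc (Suc k))" and eta: "\<eta> \<in> ES n k" using p pp by auto
  have xi': "\<xi>' \<in> ES n (Suc (Suc k))" and eta': "\<eta>' \<in> ES n k" using q qq by auto
  define d\<xi> where "d\<xi> = (\<lambda>w. \<xi> w - \<xi>' w)"
  define d\<eta> where "d\<eta> = (\<lambda>w. \<eta> w - \<eta>' w)"
  have dxi: "d\<xi> \<in> ES n (Suc (Suc k))" unfolding d\<xi>_def by (rule lsub_diff[OF lsub_ES xi xi'])
  have deta: "d\<eta> \<in> ES n k" unfolding d\<eta>_def by (rule lsub_diff[OF lsub_ES eta eta'])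
  have eS: "\<eta> \<in> qspace (n*k)" and eS': "\<eta>' \<in> qspace (n*k)"
    using BS_qspace[OF ES_BS[OF eta]] BS_qspace[OF ES_BS[OF eta']] by simp_all
  have "qPhi n (Suc k) (d\<xi>, d\<eta>) = (\<lambda>w. qPhi n (Suc k) p w - qPhi n (Suc k) q w)"
    unfolding pp qq qPhi_def d\<xi>_def d\<eta>_def fst_conv snd_conv V_diff[OF n eS eS'] by (simp add: algebra_simps)
  also have "\<dots> = (\<lambda>w. 0)" using eq by simp
  finally have z: "qPhi n (Suc k) (d\<xi>, d\<eta>) = (\<lambda>w. 0)" .
  have "qinner (n*(Suc k + 1)) d\<xi> d\<xi> + qinner (n*k) d\<eta> d\<eta> = 0"
    using main_iso[OF n dxi dxi deta deta] z by simp
  moreover obtain r1 where r1: "r1 \<ge> 0" "qinner (n*(Suc k + 1)) d\<xi> d\<xi> = complex_of_real r1"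
    using qinner_self_real by blast
  moreover obtain r2 where r2: "r2 \<ge> 0" "qinner (n*k) d\<eta> d\<eta> = complex_of_real r2"
    using qinner_self_real by blast
  ultimately have "complex_of_real (r1 + r2) = 0" by simp
  then have "r1 + r2 = 0" by (simp only: of_real_eq_0_iff)
  then have "r1 = 0" "r2 = 0" using r1 r2 by linarith+
  then have "d\<xi> = (\<lambda>w. 0)" "d\<eta> = (\<lambda>w. 0)"
    using qinner_self_eq_0[OF BS_qspace[OF ES_BS[OF dxi]]] qinner_self_eq_0[OF BS_qspace[OF ES_BS[OF deta]]] r1 r2
    by simp_all
  then have "\<And>w. \<xi> w - \<xi>' w = 0" "\<And>w. \<eta> w - \<eta>' w = 0" unfolding d\<xi>_def d\<eta>_def by (simp_all add: fun_eq_iff)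
  then have "\<xi> = \<xi>'" "\<eta> = \<eta>'" by (simp_all add: fun_eq_iff)
  then show "p = q" using pp qq by simp
qed

lemma main_image:
  assumes n: "n \<ge> 1"
  shows "qPhi n (Suc k) ` (ES n (Suc (Suc k)) \<times> ES n k) = TS n (Suc k)"
proof
  show "qPhi n (Suc k) ` (ES n (Suc (Suc k)) \<times> ES n k) \<subseteq> TS n (Suc k)"
  proof
    fix y assume "y \<in> qPhi n (Suc k) ` (ES n (Suc (Suc k)) \<times> ES n k)"
    then obtain \<xi> \<eta> where xi: "\<xi> \<in> ES n (Suc (Suc k))" and eta: "\<eta> \<in> ES n k" and y: "y = qPhi n (Suc k) (\<xi>, \<eta>)"
      by auto
    show "y \<in> TS n (Suc k)" unfolding y qPhi_def fst_conv snd_conv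
      by (rule lsub_add[OF lsub_TS ES_TS[OF xi] V_TS[OF n eta]])
  qed
  show "TS n (Suc k) \<subseteq> qPhi n (Suc k) ` (ES n (Suc (Suc k)) \<times> ES n k)"
  proof
    fix y assume y: "y \<in> TS n (Suc k)"
    define c where "c = kap n k * gcoef n k"
    have c_nz: "c \<noteq> 0"
      unfolding c_def using kap_nz[OF n] qd_pos[OF n, of k] by (simp add: gcoef_def)
    define \<eta>0 where "\<eta>0 = (\<lambda>x. c * Pc n k y x)"
    have PE: "Pc n k y \<in> ES n k" by (rule Pc_TS_ES[OF y])
    have eta0: "\<eta>0 \<in> ES n k" unfolding \<eta>0_def by (rule lsub_scale[OF lsub_ES PE])
    have e0S: "\<eta>0 \<in> qspace (n*k)" using BS_qspace[OF ES_BS[OF eta0]] .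
    define y' where "y' = (\<lambda>w. y w - qV n (Suc k) \<eta>0 w)"
    have y'T: "y' \<in> TS n (Suc k)" unfolding y'_def by (rule lsub_diff[OF lsub_TS y V_TS[OF n eta0]])
    have orth: "qinner (n*k) \<eta> (\<lambda>x. c * Pc n k y' x) = 0" if eta: "\<eta> \<in> ES n k" for \<eta>
    proof -
      have eS: "\<eta> \<in> qspace (n*k)" using BS_qspace[OF ES_BS[OF eta]] .
      have "qinner (n*k) \<eta> (\<lambda>x. c * Pc n k y' x) = qinner (n*(Suc k + 1)) (qV n (Suc k) \<eta>) y'"
        using V_adj_TS[OF n eS y'T] by (simp add: c_def)
      also have "\<dots> = qinner (n*(Suc k + 1)) (qV n (Suc k) \<eta>) y - qinner (n*(Suc k + 1)) (qV n (Suc k) \<eta>) (qV n (Suc k) \<eta>0)"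
        unfolding y'_def by (rule qinner_diff_right)
      also have "\<dots> = 0"
        using V_adj_TS[OF n eS y] V_iso[OF n eta eta0] by (simp add: \<eta>0_def c_def)
      finally show ?thesis .
    qed
    have PE': "Pc n k y' \<in> ES n k" by (rule Pc_TS_ES[OF y'T])
    have "qinner (n*k) (Pc n k y') (\<lambda>x. c * Pc n k y' x) = 0" by (rule orth[OF PE'])
    then have "qinner (n*k) (Pc n k y') (Pc n k y') = 0" using c_nz by (simp add: qinner_scale_right)
    then have Pz: "Pc n k y' = (\<lambda>x. 0)" using qinner_self_eq_0[OF BS_qspace[OF ES_BS[OF PE']]] by simp
    have y'E: "y' \<in> ES n (Suc (Suc k))"
      unfolding ES_def
    proof (intro CollectI conjI allI impI)
      show "y' \<in> BS n (Suc (Suc k))" using y'T by (simp add: TS_def)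
      fix p assume p: "p + 2 \<le> Suc (Suc k)"
      show "Pc n p y' = (\<lambda>x. 0)"
      proof (cases "p = k")
        case True then show ?thesis using Pz by simp
      next
        case False
        then have "p + 2 \<le> Suc k" using p by simp
        then show ?thesis using y'T by (simp add: TS_def)
      qed
    qed
    have ph: "qPhi n (Suc k) (y', \<eta>0) = y" unfolding qPhi_def y'_def by simp
    show "y \<in> qPhi n (Suc k) ` (ES n (Suc (Suc k)) \<times> ES n k)"
      by (rule image_eqI[where x="(y', \<eta>0)"]) (simp_all add: ph y'E eta0)
  qed
qed

definition pg :: "(nat \<Rightarrow> nat \<Rightarrow> complex) \<Rightarrow> nat list \<Rightarrow> nat list \<Rightarrow> complex" where
  "pg g w u = (\<Prod>i<length w. g (w ! i) (u ! i))"

lemma pg_Nil[simp]: "pg g [] u = 1" by (simp add: pg_def)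

lemma pg_Cons: "pg g (x # w) (y # u) = g x y * pg g w u"
  unfolding pg_def length_Cons prod.lessThan_Suc_shift by simp

lemma pg_append: "length a = length a' \<Longrightarrow> pg g (a @ b) (a' @ b') = pg g a a' * pg g b b'"
proof (induction a arbitrary: a')
  case Nil then show ?case by simp
next
  case (Cons x as)
  then obtain y as' where a': "a' = y # as'" "length as = length as'" by (cases a') auto
  then show ?case using Cons.IH[of as'] by (simp add: pg_Cons)
qed

lemma qact_app: "w \<in> qwords N \<Longrightarrow> qact N g v w = (\<Sum>u\<in>qwords N. pg g w u * v u)"
  by (simp add: qact_def pg_def qwords_length)

lemma qact_qspace: "qact N g v \<in> qspace N"
  by (simp add: qact_def qspace_def)

lemma qact_split2:
  assumes x: "x \<in> qwords a" and y: "y \<in> qwords b"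
  shows "qact (a + b) g v (x @ y) = (\<Sum>x'\<in>qwords a. \<Sum>y'\<in>qwords b. pg g x x' * pg g y y' * v (x' @ y'))"
proof -
  have "x @ y \<in> qwords (a + b)" using x y by (rule qwords_appendI)
  then have "qact (a + b) g v (x @ y) = (\<Sum>u\<in>qwords (a + b). pg g (x @ y) u * v u)" by (rule qact_app)
  also have "\<dots> = (\<Sum>x'\<in>qwords a. \<Sum>y'\<in>qwords b. pg g (x @ y) (x' @ y') * v (x' @ y'))"
    by (rule sum_qwords_add)
  also have "\<dots> = (\<Sum>x'\<in>qwords a. \<Sum>y'\<in>qwords b. pg g x x' * pg g y y' * v (x' @ y'))"
    using x by (intro sum.cong[OF refl]) (simp add: pg_append qwords_length)
  finally show ?thesis .
qed

lemma qact_add: "qact N g (\<lambda>w. u w + v w) = (\<lambda>w. qact N g u w + qact N g v w)"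
  by (rule ext) (simp add: qact_def distrib_left sum.distrib)

lemma qact_scale: "qact N g (\<lambda>w. c * u w) = (\<lambda>w. c * qact N g u w)"
  by (rule ext) (simp add: qact_def sum_distrib_left ac_simps)

lemma qact_sum: "qact N g (\<lambda>w. \<Sum>j\<in>J. f j w) = (\<lambda>w. \<Sum>j\<in>J. qact N g (f j) w)"
proof (rule ext)
  fix w
  show "qact N g (\<lambda>w. \<Sum>j\<in>J. f j w) w = (\<Sum>j\<in>J. qact N g (f j) w)"
  proof (cases "w \<in> qwords N")
    case True
    then show ?thesis unfolding qact_def by (simp add: sum_distrib_left) (rule sum.swap)
  next
    case False then show ?thesis by (simp add: qact_def)
  qed
qed

section \<open>Invariance of omega\<close>

definition eps2 :: "nat \<Rightarrow> nat \<Rightarrow> complex" where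
  "eps2 a b = (if a = 0 \<and> b = 1 then 1 else if a = 1 \<and> b = 0 then -1 else 0)"

definition om :: "nat \<Rightarrow> tvec" where
  "om n w = (if w \<in> qwords (2*n) then (\<Prod>i<n. eps2 (w ! i) (w ! (n + i))) else 0)"

lemma om_qspace: "om n \<in> qspace (2*n)"
  by (simp add: om_def qspace_def)

lemma om_app:
  assumes "a \<in> qwords n" "b \<in> qwords n"
  shows "om n (a @ b) = (\<Prod>i<n. eps2 (a ! i) (b ! i))"
proof -
  have "a @ b \<in> qwords (2*n)" using qwords_appendI[OF assms] by (simp add: mult_2)
  moreover have "length a = n" using assms by (simp add: qwords_length)
  ultimately show ?thesis by (simp add: om_def nth_append)
qed

lemma sum_qwords_Suc: "(\<Sum>w\<in>qwords (Suc n). F w) = (\<Sum>s\<in>{0,1}. \<Sum>u\<in>qwords n. F (s # u))"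
proof -
  have inj: "inj_on (\<lambda>(a, u). a # u) ({0::nat,1} \<times> qwords n)" by (auto simp: inj_on_def)
  have "(\<Sum>w\<in>qwords (Suc n). F w) = (\<Sum>p\<in>{0::nat,1} \<times> qwords n. F (fst p # snd p))"
    unfolding qwords_Suc by (subst sum.reindex[OF inj]) (simp add: case_prod_beta)
  also have "\<dots> = (\<Sum>s\<in>{0,1}. \<Sum>u\<in>qwords n. F (s # u))"
    by (simp add: sum.cartesian_product split_def)
  finally show ?thesis .
qed

lemma prod_Cons2: "(\<Prod>i<Suc n. h i ((s # u) ! i) ((t # v) ! i)) = h 0 s t * (\<Prod>i<n. h (Suc i) (u ! i) (v ! i))"
  by (simp only: prod.lessThan_Suc_shift) simp

lemma sum_prod_pairs:
  "(\<Sum>a\<in>qwords n. \<Sum>b\<in>qwords n. \<Prod>i<n. h i (a ! i) (b ! i)) = (\<Prod>i<n. \<Sum>s\<in>{0::nat,1}. \<Sum>t\<in>{0::nat,1}. (h i s t :: complex))"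
proof (induction n arbitrary: h)
  case 0 then show ?case by (simp add: qwords_0)
next
  case (Suc n)
  have "(\<Sum>a\<in>qwords (Suc n). \<Sum>b\<in>qwords (Suc n). \<Prod>i<Suc n. h i (a ! i) (b ! i))
      = (\<Sum>s\<in>{0,1}. \<Sum>u\<in>qwords n. \<Sum>t\<in>{0,1}. \<Sum>v\<in>qwords n. h 0 s t * (\<Prod>i<n. h (Suc i) (u ! i) (v ! i)))"
    by (simp only: sum_qwords_Suc prod_Cons2)
  also have "\<dots> = (\<Sum>s\<in>{0,1}. \<Sum>t\<in>{0,1}. h 0 s t * (\<Sum>u\<in>qwords n. \<Sum>v\<in>qwords n. \<Prod>i<n. h (Suc i) (u ! i) (v ! i)))"
    by (rule sum.cong[OF refl], subst sum.swap, simp add: sum_distrib_left)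
  also have "\<dots> = (\<Sum>s\<in>{0,1}. \<Sum>t\<in>{0,1}. h 0 s t) * (\<Prod>i<n. \<Sum>s\<in>{0::nat,1}. \<Sum>t\<in>{0::nat,1}. h (Suc i) s t)"
    unfolding Suc.IH[of "\<lambda>i. h (Suc i)"] by (simp add: sum_distrib_right distrib_right)
  also have "\<dots> = (\<Prod>i<Suc n. \<Sum>s\<in>{0::nat,1}. \<Sum>t\<in>{0::nat,1}. h i s t)"
    by (simp only: prod.lessThan_Suc_shift)
  finally show ?case .
qed

lemma det_eps2:
  assumes g: "g \<in> SU2" and a: "a \<in> {0,1}" and b: "b \<in> {0,1}"
  shows "(\<Sum>s\<in>{0::nat,1}. \<Sum>t\<in>{0::nat,1}. g a s * g b t * eps2 s t) = eps2 a b"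
proof -
  have det: "g 0 0 * g 1 1 - g 0 1 * g 1 0 = 1" using g by (simp add: SU2_def)
  have "(\<Sum>s\<in>{0::nat,1}. \<Sum>t\<in>{0::nat,1}. g a s * g b t * eps2 s t) = g a 0 * g b 1 - g a 1 * g b 0"
    by (simp add: eps2_def)
  also have "\<dots> = eps2 a b"
    using a b det by (auto simp: eps2_def algebra_simps)
  finally show ?thesis .
qed

lemma om_inv:
  assumes g: "g \<in> SU2"
  shows "qact (2*n) g (om n) = om n"
proof (rule qspace_eqI[OF qact_qspace om_qspace])
  fix w assume w: "w \<in> qwords (2*n)"
  then have "w \<in> qwords (n + n)" by (simp add: mult_2)
  then obtain x y where xy: "x \<in> qwords n" "y \<in> qwords n" "w = x @ y" by (rule split2)
  have lx: "length x = n" "length y = n" using xy by (simp_all add: qwords_length)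
  have "qact (2*n) g (om n) w = qact (n + n) g (om n) (x @ y)" using xy by (simp add: mult_2)
  also have "\<dots> = (\<Sum>x'\<in>qwords n. \<Sum>y'\<in>qwords n. pg g x x' * pg g y y' * om n (x' @ y'))"
    by (rule qact_split2[OF xy(1) xy(2)])
  also have "\<dots> = (\<Sum>x'\<in>qwords n. \<Sum>y'\<in>qwords n. \<Prod>i<n. g (x ! i) (x' ! i) * g (y ! i) (y' ! i) * eps2 (x' ! i) (y' ! i))"
    using lx by (intro sum.cong[OF refl]) (simp add: om_app pg_def prod.distrib)
  also have "\<dots> = (\<Prod>i<n. \<Sum>s\<in>{0::nat,1}. \<Sum>t\<in>{0::nat,1}. g (x ! i) s * g (y ! i) t * eps2 s t)"
    by (rule sum_prod_pairs)
  also have "\<dots> = (\<Prod>i<n. eps2 (x ! i) (y ! i))"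
  proof (rule prod.cong[OF refl])
    fix i assume "i \<in> {..<n}"
    then have "x ! i \<in> set x" "y ! i \<in> set y" using lx by simp_all
    moreover have "set x \<subseteq> {0,1}" "set y \<subseteq> {0,1}" using xy by (simp_all add: qwords_def)
    ultimately have "x ! i \<in> {0,1}" "y ! i \<in> {0,1}" by blast+
    then show "(\<Sum>s\<in>{0::nat,1}. \<Sum>t\<in>{0::nat,1}. g (x ! i) s * g (y ! i) t * eps2 s t) = eps2 (x ! i) (y ! i)"
      by (rule det_eps2[OF g])
  qed
  also have "\<dots> = om n w" using xy by (simp add: om_app)
  finally show "qact (2*n) g (om n) w = om n w" .
qed

definition S1 :: "nat \<Rightarrow> tvec \<Rightarrow> tvec" where
  "S1 n f w = (if w \<in> qwords (2*n) then qp n (\<lambda>x'. f (x' @ drop n w)) (take n w) else 0)"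

lemma S1_qspace: "S1 n f \<in> qspace (2*n)"
  by (simp add: S1_def qspace_def)

lemma S1_app: "x \<in> qwords n \<Longrightarrow> y \<in> qwords n \<Longrightarrow> S1 n f (x @ y) = qp n (\<lambda>x'. f (x' @ y)) x"
proof -
  assume x: "x \<in> qwords n" and y: "y \<in> qwords n"
  have "x @ y \<in> qwords (2*n)" using qwords_appendI[OF x y] by (simp add: mult_2)
  moreover have "length x = n" using x by (simp add: qwords_length)
  ultimately show ?thesis by (simp add: S1_def)
qed

lemma qp_cong: "(\<And>x. x \<in> qwords n \<Longrightarrow> f x = f' x) \<Longrightarrow> w \<in> qwords n \<Longrightarrow> qp n f w = qp n f' w"
  unfolding qp_def by (auto intro!: sum.cong qperm_qwords)

lemma qp_scale: "qp n (\<lambda>x. c * f x) w = c * qp n f w"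
  by (simp add: qp_def sum_distrib_left)

definition comp :: "nat list \<Rightarrow> nat list" where
  "comp y = map (\<lambda>a. 1 - a) y"

lemma comp_Cons: "comp (b # y) = (1 - b) # comp y" by (simp add: comp_def)

lemma eps2_prod:
  "length x = length y \<Longrightarrow> set x \<subseteq> {0,1} \<Longrightarrow> set y \<subseteq> {0,1} \<Longrightarrow>
   (\<Prod>i<length x. eps2 (x ! i) (y ! i)) = (if x = comp y then (-1) ^ (wc y) else 0)"
proof (induction x y rule: list_induct2)
  case Nil then show ?case by (simp add: comp_def)
next
  case (Cons a x b y)
  have ab: "a \<in> {0,1}" "b \<in> {0,1}" using Cons.prems by auto
  have IH: "(\<Prod>i<length x. eps2 (x ! i) (y ! i)) = (if x = comp y then (-1) ^ (wc y) else 0)"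
    using Cons.IH Cons.prems by simp
  have "(\<Prod>i<length (a # x). eps2 ((a # x) ! i) ((b # y) ! i)) = eps2 a b * (\<Prod>i<length x. eps2 (x ! i) (y ! i))"
    by (simp only: length_Cons prod.lessThan_Suc_shift) simp
  also have "\<dots> = (if a # x = comp (b # y) then (-1) ^ (wc (b # y)) else 0)"
    unfolding IH comp_Cons using ab by (auto simp: eps2_def wc_Cons)
  finally show ?case .
qed

lemma wc_comp: "set y \<subseteq> {0,1} \<Longrightarrow> wc (comp y) = length y - wc y"
proof (induction y)
  case Nil then show ?case by (simp add: comp_def)
next
  case (Cons b y)
  then have "b = 0 \<or> b = 1" by auto
  with Cons show ?case using wc_le[of y] by (auto simp: comp_Cons wc_Cons Suc_diff_le)
qed

lemma comp_qwords: "y \<in> qwords n \<Longrightarrow> comp y \<in> qwords n"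
  by (auto simp: qwords_def comp_def)

lemma sign_aux:
  assumes "a + b = (n::nat)"
  shows "(-1::real) ^ b = (-1) ^ n * (-1) ^ a"
proof -
  have "(-1::real) ^ n * (-1) ^ a = (-1) ^ (a + b) * (-1) ^ a" using assms by simp
  also have "\<dots> = ((-1) ^ a * (-1) ^ a) * (-1) ^ b" by (simp add: power_add ac_simps)
  also have "(-1::real) ^ a * (-1) ^ a = 1" by (simp flip: power_add)
  finally show ?thesis by simp
qed

lemma S1_om: "S1 n (om n) = (\<lambda>w. complex_of_real ((-1)^n * sqrt (real (n+1))) * qdelta n w)"
proof (rule qspace_eqI[OF S1_qspace])
  show "(\<lambda>w. complex_of_real ((-1)^n * sqrt (real (n+1))) * qdelta n w) \<in> qspace (2*n)"
    by (rule lsub_scale[OF lsub_qspace qdelta_qspace])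
  fix w assume w: "w \<in> qwords (2*n)"
  then have "w \<in> qwords (n + n)" by (simp add: mult_2)
  then obtain x y where xy: "x \<in> qwords n" "y \<in> qwords n" "w = x @ y" by (rule split2)
  have lx: "length x = n" and ly: "length y = n" using xy by (simp_all add: qwords_length)
  have sy: "set y \<subseteq> {0,1}" using xy by (simp add: qwords_def)
  have wy: "wc y \<le> n" using wc_le[of y] ly by simp
  have cy: "comp y \<in> qwords n" using comp_qwords[OF xy(2)] .
  have wcy: "wc (comp y) = n - wc y" using wc_comp[OF sy] ly by simp
  have "S1 n (om n) w = qp n (\<lambda>x'. om n (x' @ y)) x" using xy by (simp add: S1_app)
  also have "\<dots> = qp n (\<lambda>x'. (-1) ^ (wc y) * qbasis (comp y) x') x"
  proof (rule qp_cong[OF _ xy(1)])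
    fix x' assume x': "x' \<in> qwords n"
    have "om n (x' @ y) = (\<Prod>i<length x'. eps2 (x' ! i) (y ! i))"
      using om_app[OF x' xy(2)] x' by (simp add: qwords_length)
    also have "\<dots> = (if x' = comp y then (-1) ^ (wc y) else 0)"
      using eps2_prod[of x' y] x' xy(2) by (simp add: qwords_def)
    finally show "om n (x' @ y) = (-1) ^ (wc y) * qbasis (comp y) x'" by (simp add: qbasis_def)
  qed
  also have "\<dots> = (-1) ^ (wc y) * qp n (qbasis (comp y)) x" by (rule qp_scale)
  also have "\<dots> = (-1) ^ (wc y) * (if wc x + wc y = n then 1 / of_nat (n choose wc x) else 0)"
    using qp_basis[OF cy xy(1)] wcy wy by auto
  also have "\<dots> = complex_of_real ((-1)^n * sqrt (real (n+1))) * qdelta n w"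
  proof (cases "wc x + wc y = n")
    case True
    have sN: "sqrt (real (n+1)) > 0" by simp
    have "(-1::real) ^ (wc y) / real (n choose wc x) = (-1)^n * sqrt (real (n+1)) * dval n (wc x)"
      using sign_aux[OF True] sN by (simp add: dval_def field_simps)
    then have "complex_of_real ((-1) ^ (wc y) / real (n choose wc x)) = complex_of_real ((-1)^n * sqrt (real (n+1)) * dval n (wc x))"
      by simp
    moreover have "qdelta n w = complex_of_real (dval n (wc x))" using True xy lx by (simp add: qdelta_app)
    ultimately show ?thesis using True by (simp add: of_real_divide)
  next
    case False
    then have "qdelta n w = 0" using xy lx by (simp add: qdelta_app)
    then show ?thesis using False by simp
  qed
  finally show "S1 n (om n) w = complex_of_real ((-1)^n * sqrt (real (n+1))) * qdelta n w" .
qed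

lemma pg_perm:
  assumes s: "\<sigma> permutes {..<n}" and x: "x \<in> qwords n" and a: "a \<in> qwords n"
  shows "pg g (qperm_word \<sigma> x) (qperm_word \<sigma> a) = pg g x a"
proof -
  have lx: "length x = n" "length a = n" using x a by (simp_all add: qwords_length)
  have "pg g (qperm_word \<sigma> x) (qperm_word \<sigma> a) = (\<Prod>i<n. g (x ! \<sigma> i) (a ! \<sigma> i))"
  proof -
    have s1: "\<sigma> permutes {..<length x}" and s2: "\<sigma> permutes {..<length a}" using s lx by simp_all
    show ?thesis unfolding pg_def qperm_word_eq using lx
      by (intro prod.cong) (simp_all add: permute_list_nth[OF s1] permute_list_nth[OF s2])
  qed
  also have "\<dots> = (\<Prod>i<n. g (x ! i) (a ! i))"
    using prod.permute[OF s, of "\<lambda>i. g (x ! i) (a ! i)"] by (simp add: comp_def)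
  also have "\<dots> = pg g x a" using lx by (simp add: pg_def)
  finally show ?thesis .
qed

lemma qact_S1: "qact (2*n) g (S1 n f) = S1 n (qact (2*n) g f)"
proof (rule qspace_eqI[OF qact_qspace S1_qspace])
  fix w assume w: "w \<in> qwords (2*n)"
  then have "w \<in> qwords (n + n)" by (simp add: mult_2)
  then obtain x y where xy: "x \<in> qwords n" "y \<in> qwords n" "w = x @ y" by (rule split2)
  define F where "F a = (\<Sum>b\<in>qwords n. pg g y b * f (a @ b))" for a
  define P where "P = {\<sigma>. \<sigma> permutes {..<n}}"
  have per: "(\<Sum>a\<in>qwords n. pg g x a * F (qperm_word \<sigma> a)) = (\<Sum>a\<in>qwords n. pg g (qperm_word \<sigma> x) a * F a)"
    if s: "\<sigma> permutes {..<n}" for \<sigma>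
  proof -
    have "(\<Sum>a\<in>qwords n. pg g x a * F (qperm_word \<sigma> a)) = (\<Sum>a\<in>qwords n. pg g (qperm_word \<sigma> x) (qperm_word \<sigma> a) * F (qperm_word \<sigma> a))"
      by (intro sum.cong[OF refl]) (simp add: pg_perm[OF s xy(1)])
    also have "\<dots> = (\<Sum>a\<in>qwords n. pg g (qperm_word \<sigma> x) a * F a)"
      by (rule sum_qperm[OF s, of "\<lambda>a. pg g (qperm_word \<sigma> x) a * F a"])
    finally show ?thesis .
  qed
  have "qact (2*n) g (S1 n f) w = qact (n + n) g (S1 n f) (x @ y)" using xy by (simp add: mult_2)
  also have "\<dots> = (\<Sum>a\<in>qwords n. \<Sum>b\<in>qwords n. pg g x a * pg g y b * S1 n f (a @ b))"
    by (rule qact_split2[OF xy(1) xy(2)])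
  also have "\<dots> = (\<Sum>a\<in>qwords n. \<Sum>b\<in>qwords n. pg g x a * pg g y b * ((\<Sum>\<sigma>\<in>P. f (qperm_word \<sigma> a @ b)) / of_nat (fact n)))"
    using xy(2) by (intro sum.cong[OF refl]) (simp add: S1_app qp_def P_def)
  also have "\<dots> = (\<Sum>\<sigma>\<in>P. \<Sum>a\<in>qwords n. pg g x a * F (qperm_word \<sigma> a)) / of_nat (fact n)"
    unfolding F_def by (simp add: sum_divide_distrib sum_distrib_left sum_distrib_right ac_simps sum.swap[of _ P])
  also have "\<dots> = (\<Sum>\<sigma>\<in>P. \<Sum>a\<in>qwords n. pg g (qperm_word \<sigma> x) a * F a) / of_nat (fact n)"
    by (simp add: per P_def)
  also have "\<dots> = (\<Sum>\<sigma>\<in>P. qact (n + n) g f (qperm_word \<sigma> x @ y)) / of_nat (fact n)"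
  proof -
    have "(\<Sum>a\<in>qwords n. pg g (qperm_word \<sigma> x) a * F a) = qact (n + n) g f (qperm_word \<sigma> x @ y)"
      if s: "\<sigma> \<in> P" for \<sigma>
    proof -
      have sx: "qperm_word \<sigma> x \<in> qwords n" using qperm_qwords[of \<sigma> n x] s xy(1) by (simp add: P_def)
      show ?thesis unfolding qact_split2[OF sx xy(2)] F_def by (simp add: sum_distrib_left ac_simps)
    qed
    then show ?thesis by simp
  qed
  also have "\<dots> = S1 n (qact (2*n) g f) w"
    using xy by (simp add: S1_app qp_def P_def mult_2)
  finally show "qact (2*n) g (S1 n f) w = S1 n (qact (2*n) g f) w" .
qed

lemma delta_inv:
  assumes g: "g \<in> SU2"
  shows "qact (2*n) g (qdelta n) = qdelta n"
proof -
  define c where "c = complex_of_real ((-1)^n * sqrt (real (n+1)))"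
  have c: "c \<noteq> 0" by (simp add: c_def)
  have "(\<lambda>w. c * qdelta n w) = S1 n (om n)" by (simp add: S1_om c_def)
  also have "\<dots> = S1 n (qact (2*n) g (om n))" by (simp add: om_inv[OF g])
  also have "\<dots> = qact (2*n) g (S1 n (om n))" by (simp add: qact_S1)
  also have "\<dots> = (\<lambda>w. c * qact (2*n) g (qdelta n) w)" by (simp add: S1_om c_def qact_scale)
  finally have E: "(\<lambda>w. c * qdelta n w) = (\<lambda>w. c * qact (2*n) g (qdelta n) w)" .
  show ?thesis
  proof (rule ext)
    fix w
    from fun_cong[OF E, of w] have "c * qdelta n w = c * qact (2*n) g (qdelta n) w" by simp
    then show "qact (2*n) g (qdelta n) w = qdelta n w" using c by simp
  qed
qed

section \<open>Equivariance\<close>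

lemma qact_Ins:
  assumes g: "g \<in> SU2"
  shows "qact (n*(j+2+r)) g (Ins n j v) = Ins n j (qact (n*(j+r)) g v)"
proof (rule qspace_eqI[OF qact_qspace])
  show "Ins n j (qact (n*(j+r)) g v) \<in> qspace (n*(j+2+r))"
    using Ins_qspace[OF qact_qspace, of n j r g v] by (simp add: add_ac)
  have e: "n*(j+2+r) = n*j + 2*n + n*r" by (simp add: algebra_simps)
  fix w assume w: "w \<in> qwords (n*(j+2+r))"
  then have "w \<in> qwords (n*j + 2*n + n*r)" by (simp only: e)
  then obtain A Z B where AZB: "A \<in> qwords (n*j)" "Z \<in> qwords (2*n)" "B \<in> qwords (n*r)" "w = A @ Z @ B"
    by (rule split3)
  have l: "length A = n*j" "length Z = 2*n" using AZB by (simp_all add: qwords_length)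
  have "qact (n*(j+2+r)) g (Ins n j v) w = (\<Sum>u\<in>qwords (n*j + 2*n + n*r). pg g w u * Ins n j v u)"
    using qact_app[OF w] by (simp only: e)
  also have "\<dots> = (\<Sum>A'\<in>qwords (n*j). \<Sum>Z'\<in>qwords (2*n). \<Sum>B'\<in>qwords (n*r). pg g w (A' @ Z' @ B') * Ins n j v (A' @ Z' @ B'))"
    by (rule sum_qwords3)
  also have "\<dots> = (\<Sum>A'\<in>qwords (n*j). \<Sum>Z'\<in>qwords (2*n). \<Sum>B'\<in>qwords (n*r). (pg g Z Z' * qdelta n Z') * (pg g A A' * pg g B B' * v (A' @ B')))"
  proof (intro sum.cong[OF refl])
    fix A' Z' B' assume a: "A' \<in> qwords (n*j)" "Z' \<in> qwords (2*n)" "B' \<in> qwords (n*r)"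
    have l': "length A' = n*j" "length Z' = 2*n" using a by (simp_all add: qwords_length)
    have "pg g w (A' @ Z' @ B') = pg g A A' * (pg g Z Z' * pg g B B')"
      using AZB l l' by (simp add: pg_append)
    moreover have "Ins n j v (A' @ Z' @ B') = qdelta n Z' * v (A' @ B')" using Ins_app[OF l'] .
    ultimately show "pg g w (A' @ Z' @ B') * Ins n j v (A' @ Z' @ B') = (pg g Z Z' * qdelta n Z') * (pg g A A' * pg g B B' * v (A' @ B'))"
      by (simp add: ac_simps)
  qed
  also have "\<dots> = (\<Sum>Z'\<in>qwords (2*n). pg g Z Z' * qdelta n Z') * (\<Sum>A'\<in>qwords (n*j). \<Sum>B'\<in>qwords (n*r). pg g A A' * pg g B B' * v (A' @ B'))"
    by (simp add: sum_distrib_left sum_distrib_right sum.swap[of _ "qwords (2*n)"])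
  also have "(\<Sum>Z'\<in>qwords (2*n). pg g Z Z' * qdelta n Z') = qdelta n Z"
    using qact_app[OF AZB(2), of g "qdelta n"] delta_inv[OF g] by simp
  also have "(\<Sum>A'\<in>qwords (n*j). \<Sum>B'\<in>qwords (n*r). pg g A A' * pg g B B' * v (A' @ B')) = qact (n*j + n*r) g v (A @ B)"
    by (rule qact_split2[OF AZB(1) AZB(3), symmetric])
  also have "qdelta n Z * qact (n*j + n*r) g v (A @ B) = Ins n j (qact (n*(j+r)) g v) w"
    using AZB(4) Ins_app[OF l] by (simp add: distrib_left)
  finally show "qact (n*(j+2+r)) g (Ins n j v) w = Ins n j (qact (n*(j+r)) g v) w" .
qed

lemma G_equiv:
  assumes n: "n \<ge> 1" and g: "g \<in> SU2" and eS: "\<eta> \<in> qspace (n*k)"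
  shows "qG n (Suc k) (qact (n*k) g \<eta>) = qact (n*(Suc k + 1)) g (qG n (Suc k) \<eta>)"
proof -
  have aS: "qact (n*k) g \<eta> \<in> qspace (n*k)" by (rule qact_qspace)
  have "qact (n*(Suc k + 1)) g (Ins n j \<eta>) = Ins n j (qact (n*k) g \<eta>)" if j: "j < Suc k" for j
  proof -
    define r where "r = k - j"
    have k: "k = j + r" using j by (simp add: r_def)
    have "qact (n*(j+2+r)) g (Ins n j \<eta>) = Ins n j (qact (n*(j+r)) g \<eta>)" by (rule qact_Ins[OF g])
    then show ?thesis using k by (simp add: algebra_simps)
  qed
  then show ?thesis
    unfolding qG_closed[OF n eS] qG_closed[OF n aS] qact_sum qact_scale by simp
qed

lemma main_equiv:
  assumes n: "n \<ge> 1" and g: "g \<in> SU2" and eS: "\<eta> \<in> qspace (n*k)"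
  shows "qPhi n (Suc k) (qact (n*(Suc k + 1)) g \<xi>, qact (n*k) g \<eta>) = qact (n*(Suc k + 1)) g (qPhi n (Suc k) (\<xi>, \<eta>))"
  unfolding qPhi_def fst_conv snd_conv qact_add qV_eq qact_scale G_equiv[OF n g eS] ..

theorem proposition3p10:
  fixes n m :: nat
  assumes "n \<ge> 1" and "m \<ge> 1"
  shows "(\<forall>\<xi>\<in>qE n (m + 1). \<forall>\<eta>\<in>qE n (m - 1).
            \<forall>\<xi>'\<in>qE n (m + 1). \<forall>\<eta>'\<in>qE n (m - 1).
              qinner (n * (m + 1)) (qPhi n m (\<xi>, \<eta>)) (qPhi n m (\<xi>', \<eta>'))
              = qinner (n * (m + 1)) \<xi> \<xi>' + qinner (n * (m - 1)) \<eta> \<eta>')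
       \<and> bij_betw (qPhi n m) (qE n (m + 1) \<times> qE n (m - 1)) (qtens (n * m) (qE n m) (qE n 1))
       \<and> (\<forall>g\<in>SU2. \<forall>\<xi>\<in>qE n (m + 1). \<forall>\<eta>\<in>qE n (m - 1).
              qPhi n m (qact (n * (m + 1)) g \<xi>, qact (n * (m - 1)) g \<eta>)
              = qact (n * (m + 1)) g (qPhi n m (\<xi>, \<eta>)))"
proof -
  obtain k where m: "m = Suc k" using assms(2) by (cases m) auto
  have n: "n \<ge> 1" by (rule assms(1))
  have E1: "qE n (m + 1) = ES n (Suc (Suc k))" using m by (simp add: E_char)
  have E2: "qE n (m - 1) = ES n k" using m by (simp add: E_char)
  have T: "qtens (n * m) (qE n m) (qE n 1) = TS n (Suc k)"
    using tens_char[of m n] m by (simp add: qE_def)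
  have N1: "n * (m + 1) = n * (Suc k + 1)" and N2: "n * (m - 1) = n * k" using m by simp_all
  have P1: "\<forall>\<xi>\<in>qE n (m + 1). \<forall>\<eta>\<in>qE n (m - 1).
            \<forall>\<xi>'\<in>qE n (m + 1). \<forall>\<eta>'\<in>qE n (m - 1).
              qinner (n * (m + 1)) (qPhi n m (\<xi>, \<eta>)) (qPhi n m (\<xi>', \<eta>'))
              = qinner (n * (m + 1)) \<xi> \<xi>' + qinner (n * (m - 1)) \<eta> \<eta>'"
  proof (intro ballI)
    fix \<xi> \<eta> \<xi>' \<eta>' assume a: "\<xi> \<in> qE n (m + 1)" "\<eta> \<in> qE n (m - 1)" "\<xi>' \<in> qE n (m + 1)" "\<eta>' \<in> qE n (m - 1)"
    have a': "\<xi> \<in> ES n (Suc (Suc k))" "\<eta> \<in> ES n k" "\<xi>' \<in> ES n (Suc (Suc k))" "\<eta>' \<in> ES n k"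
      using a E1 E2 by simp_all
    show "qinner (n * (m + 1)) (qPhi n m (\<xi>, \<eta>)) (qPhi n m (\<xi>', \<eta>'))
              = qinner (n * (m + 1)) \<xi> \<xi>' + qinner (n * (m - 1)) \<eta> \<eta>'"
      using main_iso[OF n a'(1) a'(3) a'(2) a'(4)] N1 N2 m by simp
  qed
  have P2: "bij_betw (qPhi n m) (qE n (m + 1) \<times> qE n (m - 1)) (qtens (n * m) (qE n m) (qE n 1))"
    unfolding E1 E2 T bij_betw_def using main_inj[OF n] main_image[OF n] m by simp
  have P3: "\<forall>g\<in>SU2. \<forall>\<xi>\<in>qE n (m + 1). \<forall>\<eta>\<in>qE n (m - 1).
              qPhi n m (qact (n * (m + 1)) g \<xi>, qact (n * (m - 1)) g \<eta>)
              = qact (n * (m + 1)) g (qPhi n m (\<xi>, \<eta>))"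
  proof (intro ballI)
    fix g \<xi> \<eta> assume g: "g \<in> SU2" and "\<xi> \<in> qE n (m + 1)" and eta: "\<eta> \<in> qE n (m - 1)"
    have eS: "\<eta> \<in> qspace (n*k)" using BS_qspace[OF ES_BS] eta E2 by simp
    show "qPhi n m (qact (n * (m + 1)) g \<xi>, qact (n * (m - 1)) g \<eta>) = qact (n * (m + 1)) g (qPhi n m (\<xi>, \<eta>))"
      using main_equiv[OF n g eS, of \<xi>] N1 N2 m by simp
  qed
  show ?thesis using P1 P2 P3 by blast
qed

end
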